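(* For each $\lambda\in K^*$, the algebras $T(\lambda^{-2})$ and $\Sigma(\lambda)$ are isomorphic.
   Context: $K$ is an algebraically closed field; paths composed left to right. For a triangulation quiver $(Q,f)$ (finite connected quiver, $\ge2$ vertices, exactly two arrows start and two end at each vertex, $f$ a permutation of arrows with $s(f(\alpha))=t(\alpha)$, $f^3=\mathrm{id}$), $\bar\alpha$ is the other arrow with source $s(\alpha)$, $g(\alpha)=\overline{f(\alpha)}$, $n_\alpha$ the $g$-orbit length; with weights $m_\alpha$ and parameters $c_\alpha\in K^*$ constant on $g$-orbits, $A_\alpha=\alpha g(\alpha)\cdots g^{m_\alpha n_\alpha-2}(\alpha)$; $\alpha$ virtual if $m_\alpha n_\alpha=2$. The weighted surface algebra is $KQ/I$, $I$ generated by $\alpha f(\alpha)-c_{\bar\alpha}A_{\bar\alpha}$ (all $\alpha$), $\alpha f(\alpha)g(f(\alpha))$ ($f^2(\alpha)$ not virtual), $\alpha g(\alpha)f(g(\alpha))$ ($f(\alpha)$ not virtual). $T(\mu)$ ($\mu\in K^*$): vertices $1,2,3$; arrows $\alpha_1:1\to2,\alpha_2:2\to3,\alpha_3:3\to1,\beta_1:2\to1,\beta_2:3\to2,\beta_3:1\to3$; $f=(\alpha_1\,\alpha_2\,\alpha_3)(\beta_1\,\beta_3\,\beta_2)$; weights $2,2,1$ and parameters $\mu,1,1$ on the $g$-orbits $(\alpha_1\,\beta_1),(\alpha_2\,\beta_2),(\alpha_3\,\beta_3)$. $\Sigma(\lambda)$: vertices $1,2,3$; arrows $\alpha:1\to1$,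 $\beta:1\to2$, $\gamma:2\to1$, $\sigma:2\to3$, $\delta:3\to2$, $\eta:3\to3$; $f=(\alpha\,\beta\,\gamma)(\eta\,\delta\,\sigma)$ (so $g$-orbits $(\alpha),(\beta\,\sigma\,\delta\,\gamma),(\eta)$); weights $2,1,2$ and parameters $1,\lambda,1$ on these orbits respectively. *)

theory Defs
  imports "HOL-Algebra.QuotRing" "HOL-Computational_Algebra.Polynomial"
begin

definition alg_closed :: "'k::field itself \<Rightarrow> bool" where
  "alg_closed _ \<longleftrightarrow> (\<forall>p::'k poly. 0 < degree p \<longrightarrow> (\<exists>x. poly p x = 0))"

section \<open>Path algebras (paths composed left to right)\<close>

text \<open>A quiver is given by a set of arrows Ar with source and target maps s, t;
  its vertices are those that occur as sources (every vertex of a triangulation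
  quiver is the source of two arrows).  A path is a pair (v, as): a start vertex v
  and a composable list of arrows starting at v; (v, []) is the trivial path e_v.
  The path algebra KQ is the algebra of finitely supported K-valued functions on
  paths, with multiplication given by concatenation (the product is zero when the
  end of the first path is not the start of the second).\<close>

definition qverts :: "'a set \<Rightarrow> ('a \<Rightarrow> 'v) \<Rightarrow> 'v set" where
  "qverts Ar s = s ` Ar"

definition valid_path :: "'a set \<Rightarrow> ('a \<Rightarrow> 'v) \<Rightarrow> ('a \<Rightarrow> 'v) \<Rightarrow> 'v \<times> 'a list \<Rightarrow> bool" where
  "valid_path Ar s t p \<longleftrightarrow> fst p \<in> qverts Ar s \<and> set (snd p) \<subseteq> Ar \<and>
     (snd p \<noteq> [] \<longrightarrow> s (hd (snd p)) = fst p) \<and>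
     successively (\<lambda>a b. t a = s b) (snd p)"

definition pend :: "('a \<Rightarrow> 'v) \<Rightarrow> 'v \<times> 'a list \<Rightarrow> 'v" where
  "pend t p = (if snd p = [] then fst p else t (last (snd p)))"

definition path_ring ::
  "'a set \<Rightarrow> ('a \<Rightarrow> 'v) \<Rightarrow> ('a \<Rightarrow> 'v) \<Rightarrow> (('v \<times> 'a list) \<Rightarrow> 'k::field) ring" where
  "path_ring Ar s t =
    \<lparr> carrier = {x. finite {p. x p \<noteq> 0} \<and> (\<forall>p. x p \<noteq> 0 \<longrightarrow> valid_path Ar s t p)},
      Group.monoid.mult = (\<lambda>x y p. \<Sum>i = 0..length (snd p).
                 x (fst p, take i (snd p)) * y (pend t (fst p, take i (snd p)), drop i (snd p))),
      one = (\<lambda>p. if snd p = [] \<and> fst p \<in> qverts Ar s then 1 else 0),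
      zero = (\<lambda>p. 0),
      add = (\<lambda>x y p. x p + y p) \<rparr>"

definition pe :: "'v \<times> 'a list \<Rightarrow> ('v \<times> 'a list) \<Rightarrow> 'k::field" where
  "pe p = (\<lambda>q. if q = p then 1 else 0)"

definition apath :: "('a \<Rightarrow> 'v) \<Rightarrow> 'a list \<Rightarrow> 'v \<times> 'a list" where
  "apath s as = (s (hd as), as)"

definition qbar :: "'a set \<Rightarrow> ('a \<Rightarrow> 'v) \<Rightarrow> 'a \<Rightarrow> 'a" where
  "qbar Ar s a = (THE b. b \<in> Ar \<and> s b = s a \<and> b \<noteq> a)"

definition gperm :: "'a set \<Rightarrow> ('a \<Rightarrow> 'v) \<Rightarrow> ('a \<Rightarrow> 'a) \<Rightarrow> 'a \<Rightarrow> 'a" where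
  "gperm Ar s f a = qbar Ar s (f a)"

definition gorb_len :: "'a set \<Rightarrow> ('a \<Rightarrow> 'v) \<Rightarrow> ('a \<Rightarrow> 'a) \<Rightarrow> 'a \<Rightarrow> nat" where
  "gorb_len Ar s f a = (LEAST k. 0 < k \<and> (gperm Ar s f ^^ k) a = a)"

definition Apath_list :: "'a set \<Rightarrow> ('a \<Rightarrow> 'v) \<Rightarrow> ('a \<Rightarrow> 'a) \<Rightarrow> ('a \<Rightarrow> nat) \<Rightarrow> 'a \<Rightarrow> 'a list" where
  "Apath_list Ar s f m a =
     map (\<lambda>i. (gperm Ar s f ^^ i) a) [0..<m a * gorb_len Ar s f a - 1]"

definition virtual_arrow :: "'a set \<Rightarrow> ('a \<Rightarrow> 'v) \<Rightarrow> ('a \<Rightarrow> 'a) \<Rightarrow> ('a \<Rightarrow> nat) \<Rightarrow> 'a \<Rightarrow> bool" where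
  "virtual_arrow Ar s f m a \<longleftrightarrow> m a * gorb_len Ar s f a = 2"

text \<open>Generators of the ideal I of the weighted surface algebra; weights m and
  parameters c are given as functions on arrows (constant on g-orbits).\<close>
definition WSA_rels ::
  "'a set \<Rightarrow> ('a \<Rightarrow> 'v) \<Rightarrow> ('a \<Rightarrow> 'a) \<Rightarrow> ('a \<Rightarrow> nat) \<Rightarrow> ('a \<Rightarrow> 'k::field)
     \<Rightarrow> (('v \<times> 'a list) \<Rightarrow> 'k) set" where
  "WSA_rels Ar s f m c =
     {(\<lambda>q. pe (apath s [a, f a]) q
            - c (qbar Ar s a) * pe (apath s (Apath_list Ar s f m (qbar Ar s a))) q) | a. a \<in> Ar}
   \<union> {pe (apath s [a, f a, gperm Ar s f (f a)]) | a. a \<in> Ar \<and> \<not> virtual_arrow Ar s f m (f (f a))}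
   \<union> {pe (apath s [a, gperm Ar s f a, f (gperm Ar s f a)]) | a. a \<in> Ar \<and> \<not> virtual_arrow Ar s f m (f a)}"

definition WSA_ideal ::
  "'a set \<Rightarrow> ('a \<Rightarrow> 'v) \<Rightarrow> ('a \<Rightarrow> 'v) \<Rightarrow> ('a \<Rightarrow> 'a) \<Rightarrow> ('a \<Rightarrow> nat) \<Rightarrow> ('a \<Rightarrow> 'k::field)
     \<Rightarrow> (('v \<times> 'a list) \<Rightarrow> 'k) set" where
  "WSA_ideal Ar s t f m c = genideal (path_ring Ar s t) (WSA_rels Ar s f m c)"

definition kalg_quot_iso ::
  "('p \<Rightarrow> 'k::field) ring \<Rightarrow> ('p \<Rightarrow> 'k) set \<Rightarrow> ('q \<Rightarrow> 'k) ring \<Rightarrow> ('q \<Rightarrow> 'k) set \<Rightarrow> bool" where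
  "kalg_quot_iso R I S J \<longleftrightarrow>
     (\<exists>h \<in> ring_iso (R Quot I) (S Quot J).
        \<forall>c::'k. h (I +>\<^bsub>R\<^esub> (\<lambda>p. c * one R p)) = J +>\<^bsub>S\<^esub> (\<lambda>q. c * one S q))"

datatype arrT = al1 | al2 | al3 | be1 | be2 | be3

fun sT :: "arrT \<Rightarrow> nat" where
  "sT al1 = 1" | "sT al2 = 2" | "sT al3 = 3" | "sT be1 = 2" | "sT be2 = 3" | "sT be3 = 1"
fun tT :: "arrT \<Rightarrow> nat" where
  "tT al1 = 2" | "tT al2 = 3" | "tT al3 = 1" | "tT be1 = 1" | "tT be2 = 2" | "tT be3 = 3"
fun fT :: "arrT \<Rightarrow> arrT" where
  "fT al1 = al2" | "fT al2 = al3" | "fT al3 = al1" | "fT be1 = be3" | "fT be3 = be2" | "fT be2 = be1"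
text \<open>g-orbits (al1 be1), (al2 be2), (al3 be3): weights 2,2,1, parameters mu,1,1\<close>
fun mT :: "arrT \<Rightarrow> nat" where
  "mT al1 = 2" | "mT be1 = 2" | "mT al2 = 2" | "mT be2 = 2" | "mT al3 = 1" | "mT be3 = 1"
fun cT :: "'k::field \<Rightarrow> arrT \<Rightarrow> 'k" where
  "cT mu al1 = mu" | "cT mu be1 = mu" | "cT mu al2 = 1" | "cT mu be2 = 1" | "cT mu al3 = 1" | "cT mu be3 = 1"

datatype arrS = alS | beS | gaS | siS | deS | etS

fun sS :: "arrS \<Rightarrow> nat" where
  "sS alS = 1" | "sS beS = 1" | "sS gaS = 2" | "sS siS = 2" | "sS deS = 3" | "sS etS = 3"
fun tS :: "arrS \<Rightarrow> nat" where
  "tS alS = 1" | "tS beS = 2" | "tS gaS = 1" | "tS siS = 3" | "tS deS = 2" | "tS etS = 3"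
fun fS :: "arrS \<Rightarrow> arrS" where
  "fS alS = beS" | "fS beS = gaS" | "fS gaS = alS" | "fS etS = deS" | "fS deS = siS" | "fS siS = etS"
text \<open>g-orbits (al), (be si de ga), (et): weights 2,1,2, parameters 1,lambda,1\<close>
fun mS :: "arrS \<Rightarrow> nat" where
  "mS alS = 2" | "mS beS = 1" | "mS siS = 1" | "mS deS = 1" | "mS gaS = 1" | "mS etS = 2"
fun cS :: "'k::field \<Rightarrow> arrS \<Rightarrow> 'k" where
  "cS lam alS = 1" | "cS lam beS = lam" | "cS lam siS = lam" | "cS lam deS = lam"
| "cS lam gaS = lam" | "cS lam etS = 1"

end

theory Submission
  imports Defs
begin

definition pmul :: "('a \<Rightarrow> 'v) \<Rightarrow> (('v \<times> 'a list) \<Rightarrow> 'k::field) \<Rightarrow> (('v \<times> 'a list) \<Rightarrow> 'k) \<Rightarrow> ('v \<times> 'a list) \<Rightarrow> 'k" where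
 "pmul t x y = (\<lambda>p. \<Sum>i = 0..length (snd p). x (fst p, take i (snd p)) * y (pend t (fst p, take i (snd p)), drop i (snd p)))"

lemma pend_take:
  assumes "i + k \<le> length as"
  shows "pend t (pend t (v, take i as), take k (drop i as)) = pend t (v, take (i+k) as)"
proof (cases "k = 0")
  case True then show ?thesis by (simp add: pend_def)
next
  case False
  then have ne1: "take k (drop i as) \<noteq> []" and ne2: "take (i+k) as \<noteq> []" using assms by auto
  have "last (take (i+k) as) = last (take k (drop i as))"
    using ne1 by (simp add: take_add)
  then show ?thesis using ne1 ne2 by (simp add: pend_def)
qed

lemma pmul_assoc:
  fixes x y z :: "('v \<times> 'a list) \<Rightarrow> 'k::field"
  shows "pmul t (pmul t x y) z = pmul t x (pmul t y z)"
proof (rule ext)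
  fix p :: "'v \<times> 'a list"
  obtain v as where p: "p = (v, as)" by (cases p)
  define n where "n = length as"
  define g where "g i k = x (v, take i as) * y (pend t (v, take i as), take k (drop i as))
      * z (pend t (v, take (i+k) as), drop (i+k) as)" for i k
  have L: "pmul t (pmul t x y) z p = (\<Sum>j\<le>n. \<Sum>i\<le>j. g i (j - i))"
    unfolding p pmul_def g_def n_def atLeast0AtMost
    by (auto simp: sum_distrib_right min_def take_take drop_take intro!: sum.cong)
  have R: "pmul t x (pmul t y z) p = (\<Sum>i\<le>n. \<Sum>k\<le>n - i. g i k)"
    unfolding p pmul_def g_def n_def atLeast0AtMost
    by (auto simp: sum_distrib_left pend_take mult.assoc add.commute intro!: sum.cong)
  have "(\<Sum>i\<le>n. \<Sum>k\<le>n - i. g i k) = (\<Sum>(i,k)\<in>(SIGMA i:{..n}. {..n-i}). g i k)"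
    by (rule sum.Sigma) auto
  also have "(SIGMA i:{..n}. {..n-i}) = {(i,k). i + k \<le> n}" by auto
  also have "(\<Sum>(i,k)\<in>{(i,k). i + k \<le> n}. g i k) = (\<Sum>j\<le>n. \<Sum>i\<le>j. g i (j - i))"
    by (rule sum.triangle_reindex_eq)
  finally show "pmul t (pmul t x y) z p = pmul t x (pmul t y z) p" using L R by simp
qed

lemma pr_carrier: "carrier (path_ring Ar s t) = {x. finite {p. x p \<noteq> 0} \<and> (\<forall>p. x p \<noteq> 0 \<longrightarrow> valid_path Ar s t p)}"
  by (simp add: path_ring_def)
lemma pr_mult: "Group.monoid.mult (path_ring Ar s t) = pmul t"
  by (intro ext) (simp add: path_ring_def pmul_def)
lemma pr_one: "Group.monoid.one (path_ring Ar s t) = (\<lambda>p. if snd p = [] \<and> fst p \<in> qverts Ar s then 1 else 0)"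
  by (simp add: path_ring_def)
lemma pr_zero: "ring.zero (path_ring Ar s t) = (\<lambda>p. 0)"
  by (simp add: path_ring_def)
lemma pr_add: "ring.add (path_ring Ar s t) = (\<lambda>x y p. x p + y p)"
  by (simp add: path_ring_def)
lemmas pr_simps = pr_carrier pr_mult pr_one pr_zero pr_add

lemma valid_split:
  assumes "valid_path Ar s t (v, take i as)" "valid_path Ar s t (pend t (v, take i as), drop i as)"
  shows "valid_path Ar s t (v, as)"
proof -
  have as: "as = take i as @ drop i as" by simp
  have set: "set as \<subseteq> Ar" using assms as unfolding valid_path_def
    by (metis Un_subset_iff fst_conv set_append snd_conv)
  have hd: "as \<noteq> [] \<longrightarrow> s (hd as) = v"
  proof (cases "take i as = []")
    case True
    then have "drop i as = as" by (metis append_Nil as)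
    then show ?thesis using assms(2) True unfolding valid_path_def pend_def by auto
  next
    case False
    then show ?thesis using assms(1) unfolding valid_path_def by (auto simp: hd_take)
  qed
  have succ: "successively (\<lambda>a b. t a = s b) as"
  proof -
    have "successively (\<lambda>a b. t a = s b) (take i as @ drop i as)"
      unfolding successively_append_iff using assms unfolding valid_path_def pend_def
      by (auto split: if_splits)
    then show ?thesis by simp
  qed
  show ?thesis using assms(1) set hd succ unfolding valid_path_def by auto
qed

lemma pmul_nz:
  assumes "pmul t x y (v, as) \<noteq> 0"
  shows "\<exists>i\<le>length as. x (v, take i as) \<noteq> 0 \<and> y (pend t (v, take i as), drop i as) \<noteq> 0"
proof -
  have "(\<Sum>i = 0..length as. x (v, take i as) * y (pend t (v, take i as), drop i as)) \<noteq> 0"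
    using assms by (simp add: pmul_def)
  then obtain i where "i \<in> {0..length as}"
    "x (v, take i as) * y (pend t (v, take i as), drop i as) \<noteq> 0"
    by (rule sum.not_neutral_contains_not_neutral)
  then show ?thesis by auto
qed

lemma pmul_closed:
  assumes "x \<in> carrier (path_ring Ar s t)" "y \<in> carrier (path_ring Ar s t)"
  shows "pmul t x y \<in> carrier (path_ring Ar s t)"
proof -
  let ?f = "\<lambda>(p, q). (fst p, snd p @ snd q)"
  have sub: "{p. pmul t x y p \<noteq> 0} \<subseteq> ?f ` ({p. x p \<noteq> 0} \<times> {p. y p \<noteq> 0})"
  proof
    fix r assume "r \<in> {p. pmul t x y p \<noteq> 0}"
    then obtain v as where r: "r = (v, as)" and nz: "pmul t x y (v, as) \<noteq> 0" by (cases r) auto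
    from pmul_nz[OF nz] obtain i where "x (v, take i as) \<noteq> 0" "y (pend t (v, take i as), drop i as) \<noteq> 0"
      by blast
    then have mem: "((v, take i as), (pend t (v, take i as), drop i as)) \<in> {p. x p \<noteq> 0} \<times> {p. y p \<noteq> 0}"
      by simp
    have "r = ?f ((v, take i as), (pend t (v, take i as), drop i as))" unfolding r by simp
    then show "r \<in> ?f ` ({p. x p \<noteq> 0} \<times> {p. y p \<noteq> 0})" using mem by (rule image_eqI)
  qed
  have "finite {p. x p \<noteq> 0}" "finite {p. y p \<noteq> 0}" using assms by (simp_all add: pr_carrier)
  then have "finite (?f ` ({p. x p \<noteq> 0} \<times> {p. y p \<noteq> 0}))" by simp
  then have fin: "finite {p. pmul t x y p \<noteq> 0}" using sub by (rule finite_subset[rotated])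
  have val: "valid_path Ar s t p" if "pmul t x y p \<noteq> 0" for p
  proof -
    obtain v as where p: "p = (v, as)" by (cases p)
    from pmul_nz[of t x y v as] that obtain i where "x (v, take i as) \<noteq> 0" "y (pend t (v, take i as), drop i as) \<noteq> 0"
      unfolding p by blast
    then have "valid_path Ar s t (v, take i as)" "valid_path Ar s t (pend t (v, take i as), drop i as)"
      using assms by (simp_all add: pr_carrier)
    then show ?thesis unfolding p by (rule valid_split)
  qed
  show ?thesis using fin val by (simp add: pr_carrier)
qed

lemma pmul_one_left:
  "pmul t (\<lambda>p. if snd p = [] \<and> fst p \<in> V then 1 else 0) x (v, as) = (if v \<in> V then x (v, as) else 0)"
proof -
  have "pmul t (\<lambda>p. if snd p = [] \<and> fst p \<in> V then 1 else 0) x (v, as)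
      = (\<Sum>i\<in>{0..length as}. if i = 0 then (if v \<in> V then x (v, as) else 0) else 0)"
    unfolding pmul_def by (intro sum.cong) (auto simp: pend_def)
  then show ?thesis by simp
qed

lemma pmul_one_right:
  "pmul t x (\<lambda>p. if snd p = [] \<and> fst p \<in> V then 1 else 0) (v, as) = (if pend t (v, as) \<in> V then x (v, as) else 0)"
proof -
  have "pmul t x (\<lambda>p. if snd p = [] \<and> fst p \<in> V then 1 else 0) (v, as)
      = (\<Sum>i\<in>{0..length as}. if i = length as then (if pend t (v, as) \<in> V then x (v, as) else 0) else 0)"
    unfolding pmul_def by (intro sum.cong) auto
  then show ?thesis by simp
qed

lemma valid_pend:
  assumes "valid_path Ar s t p" "t ` Ar \<subseteq> s ` Ar"
  shows "pend t p \<in> qverts Ar s"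
  using assms unfolding valid_path_def pend_def qverts_def
  by (auto split: if_splits) (meson image_subset_iff in_mono last_in_set)

lemma path_ring_ring:
  fixes Ar :: "'a set" and s t :: "'a \<Rightarrow> 'v"
  assumes "t ` Ar \<subseteq> s ` Ar" "finite Ar"
  shows "ring (path_ring Ar s t :: ('v \<times> 'a list \<Rightarrow> 'k::field) ring)"
proof -
  let ?R = "path_ring Ar s t :: ('v \<times> 'a list \<Rightarrow> 'k) ring"
  show ?thesis
proof (rule ringI)
  show "abelian_group (?R)"
  proof (rule abelian_groupI)
    fix x y :: "'v \<times> 'a list \<Rightarrow> 'k" assume xy: "x \<in> carrier (?R)" "y \<in> carrier (?R)"
    have "{p. x p + y p \<noteq> 0} \<subseteq> {p. x p \<noteq> 0} \<union> {p. y p \<noteq> 0}" by auto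
    moreover have "finite ({p. x p \<noteq> 0} \<union> {p. y p \<noteq> 0})" using xy by (simp add: pr_carrier)
    ultimately have "finite {p. x p + y p \<noteq> 0}" by (rule finite_subset)
    moreover have "\<forall>p. x p + y p \<noteq> 0 \<longrightarrow> valid_path Ar s t p"
      using xy by (metis (mono_tags, lifting) add_0 mem_Collect_eq pr_carrier)
    ultimately show "x \<oplus>\<^bsub>?R\<^esub> y \<in> carrier (?R)"
      by (simp add: pr_simps)
  next
    show "\<zero>\<^bsub>?R\<^esub> \<in> carrier (?R)" by (simp add: pr_simps)
  next
    fix x y z show "x \<oplus>\<^bsub>?R\<^esub> y \<oplus>\<^bsub>?R\<^esub> z = x \<oplus>\<^bsub>?R\<^esub> (y \<oplus>\<^bsub>?R\<^esub> z)"
      by (simp add: pr_simps add.assoc)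
  next
    fix x y show "x \<oplus>\<^bsub>?R\<^esub> y = y \<oplus>\<^bsub>?R\<^esub> x"
      by (simp add: pr_simps add.commute)
  next
    fix x show "\<zero>\<^bsub>?R\<^esub> \<oplus>\<^bsub>?R\<^esub> x = x" by (simp add: pr_simps)
  next
    fix x assume x: "x \<in> carrier (?R)"
    show "\<exists>y\<in>carrier (?R). y \<oplus>\<^bsub>?R\<^esub> x = \<zero>\<^bsub>?R\<^esub>"
      using x by (intro bexI[of _ "\<lambda>p. - x p"]) (auto simp: pr_simps)
  qed
next
  show "monoid (?R)"
  proof (rule monoidI)
    fix x y assume "x \<in> carrier (?R)" "y \<in> carrier (?R)"
    then show "x \<otimes>\<^bsub>?R\<^esub> y \<in> carrier (?R)"
      by (simp add: pr_mult pmul_closed)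
  next
    have e: "{p. snd p = [] \<and> fst p \<in> qverts Ar s} = (\<lambda>v. (v, [])) ` qverts Ar s"
      by force
    moreover have "finite (qverts Ar s)"
    proof -
      have "finite (s ` Ar)" using assms(2) by simp
      then show ?thesis by (simp add: qverts_def)
    qed
    ultimately show "\<one>\<^bsub>?R\<^esub> \<in> carrier (?R)"
      by (simp add: pr_simps valid_path_def e)
  next
    fix x y z show "x \<otimes>\<^bsub>?R\<^esub> y \<otimes>\<^bsub>?R\<^esub> z = x \<otimes>\<^bsub>?R\<^esub> (y \<otimes>\<^bsub>?R\<^esub> z)"
      by (simp add: pr_mult pmul_assoc)
  next
    fix x assume x: "x \<in> carrier (?R)"
    show "\<one>\<^bsub>?R\<^esub> \<otimes>\<^bsub>?R\<^esub> x = x"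
    proof (rule ext)
      fix p :: "'v \<times> 'a list" obtain v as where p: "p = (v, as)" by (cases p)
      show "(\<one>\<^bsub>?R\<^esub> \<otimes>\<^bsub>?R\<^esub> x) p = x p"
        using x unfolding p by (auto simp: pr_simps pmul_one_left valid_path_def)
    qed
  next
    fix x assume x: "x \<in> carrier (?R)"
    show "x \<otimes>\<^bsub>?R\<^esub> \<one>\<^bsub>?R\<^esub> = x"
    proof (rule ext)
      fix p :: "'v \<times> 'a list" obtain v as where p: "p = (v, as)" by (cases p)
      show "(x \<otimes>\<^bsub>?R\<^esub> \<one>\<^bsub>?R\<^esub>) p = x p"
        using x valid_pend[OF _ assms(1)] unfolding p by (auto simp: pr_simps pmul_one_right)
    qed
  qed
next
  fix x y z show "(x \<oplus>\<^bsub>?R\<^esub> y) \<otimes>\<^bsub>?R\<^esub> z = x \<otimes>\<^bsub>?R\<^esub> z \<oplus>\<^bsub>?R\<^esub> y \<otimes>\<^bsub>?R\<^esub> z"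
    by (simp add: pr_simps pmul_def fun_eq_iff distrib_right sum.distrib)
next
  fix x y z show "z \<otimes>\<^bsub>?R\<^esub> (x \<oplus>\<^bsub>?R\<^esub> y) = z \<otimes>\<^bsub>?R\<^esub> x \<oplus>\<^bsub>?R\<^esub> z \<otimes>\<^bsub>?R\<^esub> y"
    by (simp add: pr_simps pmul_def fun_eq_iff distrib_left sum.distrib)
qed
qed

lemma pe_mul:
  fixes t :: "'a \<Rightarrow> 'v"
  shows "pmul t (pe (v, as) :: 'v \<times> 'a list \<Rightarrow> 'k::field) (pe (w, bs)) = (if pend t (v, as) = w then pe (v, as @ bs) else (\<lambda>_. 0))"
proof (rule ext)
  fix r :: "'v \<times> 'a list" obtain u cs where r: "r = (u, cs)" by (cases r)
  have "pmul t (pe (v, as)) (pe (w, bs)) (u, cs)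
     = (\<Sum>i\<in>{0..length cs}. if i = length as then
          (if u = v \<and> take i cs = as \<and> pend t (v, as) = w \<and> drop i cs = bs then 1 else 0) else (0::'k))"
    unfolding pmul_def pe_def by (intro sum.cong) auto
  also have "\<dots> = (if length as \<le> length cs \<and> u = v \<and> take (length as) cs = as \<and> pend t (v, as) = w
        \<and> drop (length as) cs = bs then 1 else 0)"
    by (simp add: sum.delta)
  also have "\<dots> = (if pend t (v, as) = w then pe (v, as @ bs) else (\<lambda>_. 0)) (u, cs)"
    unfolding pe_def by (auto simp: append_eq_conv_conj) (metis append_take_drop_id)
  finally show "pmul t (pe (v, as) :: 'v \<times> 'a list \<Rightarrow> 'k) (pe (w, bs)) r = (if pend t (v, as) = w then pe (v, as @ bs) else (\<lambda>_. 0)) r"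
    unfolding r .
qed

definition lsupp :: "'v \<Rightarrow> ('v \<times> 'a list \<Rightarrow> 'k::zero) \<Rightarrow> bool" where
  "lsupp v z \<longleftrightarrow> (\<forall>q. z q \<noteq> 0 \<longrightarrow> fst q = v)"
definition rsupp :: "('a \<Rightarrow> 'v) \<Rightarrow> 'v \<Rightarrow> ('v \<times> 'a list \<Rightarrow> 'k::zero) \<Rightarrow> bool" where
  "rsupp t w z \<longleftrightarrow> (\<forall>q. z q \<noteq> 0 \<longrightarrow> pend t q = w)"

lemma pmul_pe0_left:
  fixes t :: "'a \<Rightarrow> 'v" and z :: "'v \<times> 'a list \<Rightarrow> 'k::field"
  assumes "lsupp v z" shows "pmul t (pe (v, [])) z = z"
proof (rule ext)
  fix r :: "'v \<times> 'a list" obtain u cs where r: "r = (u, cs)" by (cases r)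
  have "pmul t (pe (v, [])) z (u, cs) = (\<Sum>i\<in>{0..length cs}. if i = 0 then (if u = v then z (u, cs) else 0) else 0)"
    unfolding pmul_def pe_def by (intro sum.cong) (auto simp: pend_def)
  also have "\<dots> = z (u, cs)" using assms unfolding lsupp_def by auto
  finally show "pmul t (pe (v, [])) z r = z r" unfolding r .
qed

lemma pmul_pe0_right:
  fixes t :: "'a \<Rightarrow> 'v" and z :: "'v \<times> 'a list \<Rightarrow> 'k::field"
  assumes "rsupp t w z" shows "pmul t z (pe (w, [])) = z"
proof (rule ext)
  fix r :: "'v \<times> 'a list" obtain u cs where r: "r = (u, cs)" by (cases r)
  have "pmul t z (pe (w, [])) (u, cs) = (\<Sum>i\<in>{0..length cs}. if i = length cs then (if pend t (u, cs) = w then z (u, cs) else 0) else 0)"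
    unfolding pmul_def pe_def by (intro sum.cong) auto
  also have "\<dots> = z (u, cs)" using assms unfolding rsupp_def by auto
  finally show "pmul t z (pe (w, [])) r = z r" unfolding r .
qed

lemma pmul_supp_zero:
  fixes t :: "'a \<Rightarrow> 'v" and x y :: "'v \<times> 'a list \<Rightarrow> 'k::field"
  assumes "rsupp t w x" "lsupp w' y" "w \<noteq> w'"
  shows "pmul t x y = (\<lambda>_. 0)"
proof (rule ext)
  fix r :: "'v \<times> 'a list" obtain u cs where r: "r = (u, cs)" by (cases r)
  show "pmul t x y r = 0" unfolding r
    using pmul_nz[of t x y u cs] assms unfolding rsupp_def lsupp_def by fastforce
qed

lemma pend_drop:
  assumes "i \<le> length cs"
  shows "pend t (pend t (u, take i cs), drop i cs) = pend t (u, cs)"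
  using pend_take[of i "length cs - i" cs t u] assms by simp

lemma lsupp_pmul: "lsupp v x \<Longrightarrow> lsupp v (pmul t x y)"
  unfolding lsupp_def using pmul_nz by fastforce

lemma rsupp_pmul: "rsupp t w y \<Longrightarrow> rsupp t w (pmul t x y)"
  unfolding rsupp_def
proof (intro allI impI)
  fix q assume y: "\<forall>q. y q \<noteq> 0 \<longrightarrow> pend t q = w" and nz: "pmul t x y q \<noteq> 0"
  obtain u cs where q: "q = (u, cs)" by (cases q)
  from pmul_nz[of t x y u cs] nz obtain i where "i \<le> length cs" "y (pend t (u, take i cs), drop i cs) \<noteq> 0"
    unfolding q by blast
  then show "pend t q = w" using y pend_drop[of i cs t u] unfolding q by auto
qed

lemma valid_tail:
  assumes "valid_path Ar s t (v, a # as)" "t ` Ar \<subseteq> s ` Ar"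
  shows "valid_path Ar s t (t a, as) \<and> a \<in> Ar \<and> s a = v"
  using assms unfolding valid_path_def qverts_def
  by (cases as) auto

lemma valid_nil: "v \<in> qverts Ar s \<Longrightarrow> valid_path Ar s t (v, [])"
  by (simp add: valid_path_def)

lemma valid_cons:
  assumes "valid_path Ar s t (t a, as)" "a \<in> Ar"
  shows "valid_path Ar s t (s a, a # as)"
  using assms unfolding valid_path_def qverts_def
  by (cases as) auto

lemma pend_cons: "pend t (v, a # as) = pend t (t a, as)"
  by (simp add: pend_def)

lemma valid_prefix:
  assumes "valid_path Ar s t (v, as @ bs)" "t ` Ar \<subseteq> s ` Ar"
  shows "valid_path Ar s t (v, as) \<and> valid_path Ar s t (pend t (v, as), bs)"
  using assms(1)
proof (induction as arbitrary: v)
  case Nil then show ?case by (simp add: valid_path_def pend_def)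
next
  case (Cons a as)
  then have "valid_path Ar s t (t a, as @ bs)" "a \<in> Ar" "s a = v"
    using valid_tail[OF _ assms(2), of v a "as @ bs"] by auto
  then show ?case using Cons.IH valid_cons[of Ar s t a as] by (auto simp: pend_cons)
qed

lemma pe_carrier: "valid_path Ar s t p \<Longrightarrow> pe p \<in> carrier (path_ring Ar s t)"
  by (simp add: pr_carrier pe_def)

primrec Fl :: "('b \<Rightarrow> 'v) \<Rightarrow> ('a \<Rightarrow> 'v) \<Rightarrow> ('a \<Rightarrow> ('v \<times> 'b list \<Rightarrow> 'k::field)) \<Rightarrow> 'v \<Rightarrow> 'a list \<Rightarrow> ('v \<times> 'b list \<Rightarrow> 'k)" where
  "Fl t2 t1 \<phi> v [] = pe (v, [])"
| "Fl t2 t1 \<phi> v (a # as) = pmul t2 (\<phi> a) (Fl t2 t1 \<phi> (t1 a) as)"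

definition ext_hom :: "('b \<Rightarrow> 'v) \<Rightarrow> ('a \<Rightarrow> 'v) \<Rightarrow> ('a \<Rightarrow> ('v \<times> 'b list \<Rightarrow> 'k::field)) \<Rightarrow> ('v \<times> 'a list \<Rightarrow> 'k) \<Rightarrow> ('v \<times> 'b list \<Rightarrow> 'k)" where
  "ext_hom t2 t1 \<phi> x = (\<lambda>q. \<Sum>p\<in>{p. x p \<noteq> 0}. x p * Fl t2 t1 \<phi> (fst p) (snd p) q)"

locale qhom =
  fixes Ar1 :: "'a set" and s1 t1 :: "'a \<Rightarrow> 'v"
    and Ar2 :: "'b set" and s2 t2 :: "'b \<Rightarrow> 'v"
    and \<phi> :: "'a \<Rightarrow> ('v \<times> 'b list \<Rightarrow> 'k::field)"
  assumes q1: "t1 ` Ar1 \<subseteq> s1 ` Ar1" "finite Ar1"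
    and q2: "t2 ` Ar2 \<subseteq> s2 ` Ar2" "finite Ar2"
    and V: "qverts Ar1 s1 = qverts Ar2 s2"
    and phi_carr: "\<And>a. a \<in> Ar1 \<Longrightarrow> \<phi> a \<in> carrier (path_ring Ar2 s2 t2)"
    and phi_l: "\<And>a. a \<in> Ar1 \<Longrightarrow> lsupp (s1 a) (\<phi> a)"
    and phi_r: "\<And>a. a \<in> Ar1 \<Longrightarrow> rsupp t2 (t1 a) (\<phi> a)"
begin

abbreviation "F \<equiv> Fl t2 t1 \<phi>"
abbreviation "R1 \<equiv> (path_ring Ar1 s1 t1 :: ('v \<times> 'a list \<Rightarrow> 'k) ring)"
abbreviation "R2 \<equiv> (path_ring Ar2 s2 t2 :: ('v \<times> 'b list \<Rightarrow> 'k) ring)"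

lemma F_props:
  "valid_path Ar1 s1 t1 (v, as) \<Longrightarrow>
     F v as \<in> carrier R2 \<and> lsupp v (F v as) \<and> rsupp t2 (pend t1 (v, as)) (F v as)"
proof (induction as arbitrary: v)
  case Nil
  then have "v \<in> qverts Ar2 s2" using V by (simp add: valid_path_def)
  then have "pe (v, []) \<in> carrier R2" by (intro pe_carrier valid_nil)
  then show ?case by (auto simp: lsupp_def rsupp_def pe_def pend_def)
next
  case (Cons a as)
  from valid_tail[OF Cons.prems q1(1)] have h: "valid_path Ar1 s1 t1 (t1 a, as)" "a \<in> Ar1" "s1 a = v" by auto
  from Cons.IH[OF h(1)] have ih: "F (t1 a) as \<in> carrier R2" "rsupp t2 (pend t1 (t1 a, as)) (F (t1 a) as)" by auto
  have "F v (a # as) \<in> carrier R2"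
    using pmul_closed[OF phi_carr[OF h(2)] ih(1)] by simp
  moreover have "lsupp v (F v (a # as))" using lsupp_pmul[OF phi_l[OF h(2)]] h(3) by simp
  moreover have "rsupp t2 (pend t1 (v, a # as)) (F v (a # as))"
    using rsupp_pmul[OF ih(2)] by (simp add: pend_cons)
  ultimately show ?case by blast
qed

lemma F_append:
  "valid_path Ar1 s1 t1 (v, as @ bs) \<Longrightarrow> F v (as @ bs) = pmul t2 (F v as) (F (pend t1 (v, as)) bs)"
proof (induction as arbitrary: v)
  case Nil
  then have "lsupp v (F v bs)" using F_props by auto
  then show ?case by (simp add: pmul_pe0_left pend_def)
next
  case (Cons a as)
  from valid_tail[OF _ q1(1), of v a "as @ bs"] Cons.prems
  have h: "valid_path Ar1 s1 t1 (t1 a, as @ bs)" by auto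
  show ?case using Cons.IH[OF h] by (simp add: pmul_assoc pend_cons)
qed

lemma F_mul:
  assumes "valid_path Ar1 s1 t1 p" "valid_path Ar1 s1 t1 q"
  shows "pmul t2 (F (fst p) (snd p)) (F (fst q) (snd q)) =
     (if pend t1 p = fst q then F (fst p) (snd p @ snd q) else (\<lambda>_. 0))"
proof (cases "pend t1 p = fst q")
  case True
  obtain v as where p: "p = (v, as)" by (cases p)
  obtain w bs where q: "q = (w, bs)" by (cases q)
  have "valid_path Ar1 s1 t1 (v, as @ bs)"
    using valid_split[of Ar1 s1 t1 v "length as" "as @ bs"] assms True unfolding p q by simp
  then show ?thesis using True F_append unfolding p q by simp
next
  case False
  have "rsupp t2 (pend t1 p) (F (fst p) (snd p))" "lsupp (fst q) (F (fst q) (snd q))"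
    using F_props assms by (metis prod.collapse)+
  then show ?thesis using False pmul_supp_zero by simp
qed

end

lemma decomp:
  fixes x :: "'v \<times> 'a list \<Rightarrow> 'k::field"
  assumes "finite {p. x p \<noteq> 0}"
  shows "x = (\<lambda>r. \<Sum>p\<in>{p. x p \<noteq> 0}. x p * pe p r)"
proof (rule ext)
  fix r
  have "(\<Sum>p\<in>{p. x p \<noteq> 0}. x p * pe p r) = (\<Sum>p\<in>{p. x p \<noteq> 0}. if p = r then x p else 0)"
    by (intro sum.cong) (auto simp: pe_def)
  also have "\<dots> = x r" using assms by (simp add: sum.delta')
  finally show "x r = (\<Sum>p\<in>{p. x p \<noteq> 0}. x p * pe p r)" by simp
qed

lemma bilin:
  fixes t :: "'a \<Rightarrow> 'v" and f :: "'i \<Rightarrow> 'v \<times> 'a list \<Rightarrow> 'k::field" and g :: "'j \<Rightarrow> 'v \<times> 'a list \<Rightarrow> 'k"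
  shows "pmul t (\<lambda>r. \<Sum>i\<in>A. c i * f i r) (\<lambda>r. \<Sum>j\<in>B. d j * g j r)
     = (\<lambda>q. \<Sum>i\<in>A. \<Sum>j\<in>B. c i * d j * pmul t (f i) (g j) q)"
proof (rule ext)
  fix q :: "'v \<times> 'a list"
  have "pmul t (\<lambda>r. \<Sum>i\<in>A. c i * f i r) (\<lambda>r. \<Sum>j\<in>B. d j * g j r) q
    = (\<Sum>k = 0..length (snd q). \<Sum>i\<in>A. \<Sum>j\<in>B. c i * d j * (f i (fst q, take k (snd q)) * g j (pend t (fst q, take k (snd q)), drop k (snd q))))"
    unfolding pmul_def sum_product by (intro sum.cong refl) (simp add: ac_simps)
  also have "\<dots> = (\<Sum>i\<in>A. \<Sum>k = 0..length (snd q). \<Sum>j\<in>B. c i * d j * (f i (fst q, take k (snd q)) * g j (pend t (fst q, take k (snd q)), drop k (snd q))))"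
    by (rule sum.swap)
  also have "\<dots> = (\<Sum>i\<in>A. \<Sum>j\<in>B. \<Sum>k = 0..length (snd q). c i * d j * (f i (fst q, take k (snd q)) * g j (pend t (fst q, take k (snd q)), drop k (snd q))))"
    by (intro sum.cong refl sum.swap)
  also have "\<dots> = (\<Sum>i\<in>A. \<Sum>j\<in>B. c i * d j * pmul t (f i) (g j) q)"
    unfolding pmul_def by (simp add: sum_distrib_left)
  finally show "pmul t (\<lambda>r. \<Sum>i\<in>A. c i * f i r) (\<lambda>r. \<Sum>j\<in>B. d j * g j r) q = (\<Sum>i\<in>A. \<Sum>j\<in>B. c i * d j * pmul t (f i) (g j) q)" .
qed

context qhom begin

abbreviation "E \<equiv> ext_hom t2 t1 \<phi>"

lemma E_sum:
  assumes "finite P" "{p. x p \<noteq> 0} \<subseteq> P"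
  shows "E x q = (\<Sum>p\<in>P. x p * F (fst p) (snd p) q)"
  unfolding ext_hom_def using assms by (intro sum.mono_neutral_left) auto

lemma carr1_fin: "x \<in> carrier R1 \<Longrightarrow> finite {p. x p \<noteq> 0}"
  by (simp add: pr_carrier)
lemma carr1_valid: "x \<in> carrier R1 \<Longrightarrow> x p \<noteq> 0 \<Longrightarrow> valid_path Ar1 s1 t1 p"
  unfolding pr_carrier mem_Collect_eq by blast

lemma E_lin:
  assumes "finite A" "\<And>j. j \<in> A \<Longrightarrow> z j \<in> carrier R1"
  shows "E (\<lambda>r. \<Sum>j\<in>A. c j * z j r) = (\<lambda>q. \<Sum>j\<in>A. c j * E (z j) q)"
proof (rule ext)
  fix q
  define P where "P = (\<Union>j\<in>A. {p. z j p \<noteq> 0})"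
  have finP: "finite P" unfolding P_def using assms carr1_fin by blast
  have sub: "{p. (\<Sum>j\<in>A. c j * z j p) \<noteq> 0} \<subseteq> P"
  proof
    fix p assume "p \<in> {p. (\<Sum>j\<in>A. c j * z j p) \<noteq> 0}"
    then have "(\<Sum>j\<in>A. c j * z j p) \<noteq> 0" by simp
    then obtain j where "j \<in> A" "c j * z j p \<noteq> 0" by (rule sum.not_neutral_contains_not_neutral)
    then show "p \<in> P" unfolding P_def by auto
  qed
  have "E (\<lambda>r. \<Sum>j\<in>A. c j * z j r) q = (\<Sum>p\<in>P. (\<Sum>j\<in>A. c j * z j p) * F (fst p) (snd p) q)"
    using E_sum[OF finP sub] by simp
  also have "\<dots> = (\<Sum>j\<in>A. c j * (\<Sum>p\<in>P. z j p * F (fst p) (snd p) q))"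
    by (simp add: sum_distrib_right sum_distrib_left mult.assoc sum.swap[of _ P A])
  also have "\<dots> = (\<Sum>j\<in>A. c j * E (z j) q)"
  proof (intro sum.cong refl)
    fix j assume "j \<in> A"
    then have "{p. z j p \<noteq> 0} \<subseteq> P" unfolding P_def by auto
    then show "c j * (\<Sum>p\<in>P. z j p * F (fst p) (snd p) q) = c j * E (z j) q"
      using E_sum[OF finP] by simp
  qed
  finally show "E (\<lambda>r. \<Sum>j\<in>A. c j * z j r) q = (\<Sum>j\<in>A. c j * E (z j) q)" .
qed

lemma E_pe: "E (pe p) = F (fst p) (snd p)"
proof -
  have "{q. pe p q \<noteq> (0::'k)} = {p}" by (auto simp: pe_def)
  then show ?thesis unfolding ext_hom_def by (auto simp: pe_def)
qed

lemma E_zero: "E (\<lambda>_. 0) = (\<lambda>_. 0)"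
  unfolding ext_hom_def by simp

lemma E_pe_mul:
  assumes "valid_path Ar1 s1 t1 p" "valid_path Ar1 s1 t1 q"
  shows "E (pmul t1 (pe p) (pe q)) = pmul t2 (F (fst p) (snd p)) (F (fst q) (snd q))"
proof -
  obtain v as where p: "p = (v, as)" by (cases p)
  obtain w bs where q: "q = (w, bs)" by (cases q)
  show ?thesis using F_mul[OF assms] unfolding p q by (simp add: pe_mul E_pe E_zero)
qed

lemma E_mult:
  assumes x: "x \<in> carrier R1" and y: "y \<in> carrier R1"
  shows "E (pmul t1 x y) = pmul t2 (E x) (E y)"
proof -
  define X where "X = {p. x p \<noteq> 0}"
  define Y where "Y = {p. y p \<noteq> 0}"
  have fX: "finite X" and fY: "finite Y" using x y carr1_fin unfolding X_def Y_def by auto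
  have vX: "\<And>p. p \<in> X \<Longrightarrow> valid_path Ar1 s1 t1 p" using x carr1_valid unfolding X_def by auto
  have vY: "\<And>p. p \<in> Y \<Longrightarrow> valid_path Ar1 s1 t1 p" using y carr1_valid unfolding Y_def by auto
  have "pmul t1 x y = pmul t1 (\<lambda>r. \<Sum>p\<in>X. x p * pe p r) (\<lambda>r. \<Sum>q\<in>Y. y q * pe q r)"
    using decomp[of x] decomp[of y] fX fY unfolding X_def Y_def by simp
  also have "\<dots> = (\<lambda>r. \<Sum>p\<in>X. \<Sum>q\<in>Y. x p * y q * pmul t1 (pe p) (pe q) r)"
    by (rule bilin)
  also have "\<dots> = (\<lambda>r. \<Sum>pq\<in>X \<times> Y. (x (fst pq) * y (snd pq)) * pmul t1 (pe (fst pq)) (pe (snd pq)) r)"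
    by (simp add: sum.cartesian_product case_prod_beta)
  finally have xy: "pmul t1 x y = \<dots>" .
  have carr: "pmul t1 (pe (fst pq)) (pe (snd pq)) \<in> carrier R1" if "pq \<in> X \<times> Y" for pq
    using that vX vY by (auto intro!: pmul_closed pe_carrier)
  have "E (pmul t1 x y) = (\<lambda>q. \<Sum>pq\<in>X \<times> Y. (x (fst pq) * y (snd pq)) * E (pmul t1 (pe (fst pq)) (pe (snd pq))) q)"
    unfolding xy using fX fY carr by (intro E_lin) auto
  also have "\<dots> = (\<lambda>q. \<Sum>pq\<in>X \<times> Y. (x (fst pq) * y (snd pq)) * pmul t2 (F (fst (fst pq)) (snd (fst pq))) (F (fst (snd pq)) (snd (snd pq))) q)"
    using vX vY by (intro ext sum.cong refl) (auto simp: E_pe_mul)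
  also have "\<dots> = (\<lambda>q. \<Sum>p\<in>X. \<Sum>q'\<in>Y. x p * y q' * pmul t2 (F (fst p) (snd p)) (F (fst q') (snd q')) q)"
    by (simp add: sum.cartesian_product case_prod_beta)
  also have "\<dots> = pmul t2 (\<lambda>r. \<Sum>p\<in>X. x p * F (fst p) (snd p) r) (\<lambda>r. \<Sum>q\<in>Y. y q * F (fst q) (snd q) r)"
    by (rule bilin[symmetric])
  also have "\<dots> = pmul t2 (E x) (E y)"
    unfolding ext_hom_def X_def Y_def ..
  finally show ?thesis .
qed

lemma E_add:
  assumes x: "x \<in> carrier R1" and y: "y \<in> carrier R1"
  shows "E (\<lambda>p. x p + y p) = (\<lambda>q. E x q + E y q)"
proof (rule ext)
  fix q
  define P where "P = {p. x p \<noteq> 0} \<union> {p. y p \<noteq> 0}"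
  have fP: "finite P" using x y carr1_fin unfolding P_def by auto
  have "E (\<lambda>p. x p + y p) q = (\<Sum>p\<in>P. (x p + y p) * F (fst p) (snd p) q)"
    using fP by (intro E_sum) (auto simp: P_def)
  also have "\<dots> = (\<Sum>p\<in>P. x p * F (fst p) (snd p) q) + (\<Sum>p\<in>P. y p * F (fst p) (snd p) q)"
    by (simp add: distrib_right sum.distrib)
  also have "\<dots> = E x q + E y q"
    using E_sum[OF fP, of x q] E_sum[OF fP, of y q] by (simp add: P_def subset_iff)
  finally show "E (\<lambda>p. x p + y p) q = E x q + E y q" .
qed

lemma E_carrier:
  assumes x: "x \<in> carrier R1"
  shows "E x \<in> carrier R2"
proof -
  define X where "X = {p. x p \<noteq> 0}"
  have fX: "finite X" using x carr1_fin unfolding X_def by auto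
  have Fc: "F (fst p) (snd p) \<in> carrier R2" if "p \<in> X" for p
    using F_props[of "fst p" "snd p"] carr1_valid[OF x, of p] that unfolding X_def by auto
  have sub: "{q. E x q \<noteq> 0} \<subseteq> (\<Union>p\<in>X. {q. F (fst p) (snd p) q \<noteq> 0})"
  proof
    fix q assume "q \<in> {q. E x q \<noteq> 0}"
    then have "(\<Sum>p\<in>X. x p * F (fst p) (snd p) q) \<noteq> 0" by (simp add: ext_hom_def X_def)
    then obtain p where "p \<in> X" "x p * F (fst p) (snd p) q \<noteq> 0" by (rule sum.not_neutral_contains_not_neutral)
    then show "q \<in> (\<Union>p\<in>X. {q. F (fst p) (snd p) q \<noteq> 0})" by auto
  qed
  have "finite (\<Union>p\<in>X. {q. F (fst p) (snd p) q \<noteq> 0})"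
    using fX Fc by (auto simp: pr_carrier)
  then have "finite {q. E x q \<noteq> 0}" using sub by (rule finite_subset[rotated])
  moreover have "valid_path Ar2 s2 t2 q" if "E x q \<noteq> 0" for q
  proof -
    from that sub obtain p where "p \<in> X" "F (fst p) (snd p) q \<noteq> 0" by blast
    then show ?thesis using Fc[of p] unfolding pr_carrier mem_Collect_eq by blast
  qed
  ultimately show ?thesis by (simp add: pr_carrier)
qed

lemma E_one_scal: "E (\<lambda>p. c * (if snd p = [] \<and> fst p \<in> qverts Ar1 s1 then 1 else 0)) =
    (\<lambda>q. c * (if snd q = [] \<and> fst q \<in> qverts Ar2 s2 then 1 else 0))"
proof (rule ext)
  fix q :: "'v \<times> 'b list"
  define P where "P = (\<lambda>v. (v, [] :: 'a list)) ` qverts Ar1 s1"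
  have fV: "finite (qverts Ar1 s1)" using q1(2) by (simp add: qverts_def)
  then have fP: "finite P" unfolding P_def by simp
  have "E (\<lambda>p. c * (if snd p = [] \<and> fst p \<in> qverts Ar1 s1 then 1 else 0)) q
      = (\<Sum>p\<in>P. c * (if snd p = [] \<and> fst p \<in> qverts Ar1 s1 then 1 else 0) * F (fst p) (snd p) q)"
    using fP by (intro E_sum) (auto simp: P_def)
  also have "\<dots> = (\<Sum>v\<in>qverts Ar1 s1. c * pe (v, []) q)"
    unfolding P_def by (subst sum.reindex) (auto simp: inj_on_def)
  also have "\<dots> = (\<Sum>v\<in>qverts Ar1 s1. if v = fst q then c * (if snd q = [] then 1 else 0) else 0)"
    by (intro sum.cong refl) (cases q, auto simp: pe_def)
  also have "\<dots> = c * (if snd q = [] \<and> fst q \<in> qverts Ar2 s2 then 1 else 0)"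
    using fV V by (simp add: sum.delta')
  finally show "E (\<lambda>p. c * (if snd p = [] \<and> fst p \<in> qverts Ar1 s1 then 1 else 0)) q =
    c * (if snd q = [] \<and> fst q \<in> qverts Ar2 s2 then 1 else 0)" .
qed

lemma E_one: "E (\<one>\<^bsub>R1\<^esub>) = \<one>\<^bsub>R2\<^esub>"
  using E_one_scal[of 1] by (simp add: pr_one)

lemma E_hom: "E \<in> ring_hom R1 R2"
  by (rule ring_hom_memI) (auto simp: E_carrier E_one pr_mult E_mult pr_add E_add)

end

lemma quot_iso_abstract:
  fixes R :: "('a, 'c) ring_scheme" and S :: "('b, 'd) ring_scheme"
  assumes R: "ring R" and S: "ring S"
    and GR: "GR \<subseteq> carrier R" and GS: "GS \<subseteq> carrier S"
    and Phi: "\<Phi> \<in> ring_hom R S" and Psi: "\<Psi> \<in> ring_hom S R"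
    and PhiG: "\<And>g. g \<in> GR \<Longrightarrow> \<Phi> g \<in> genideal S GS"
    and PsiG: "\<And>g. g \<in> GS \<Longrightarrow> \<Psi> g \<in> genideal R GR"
    and PP: "\<And>x. x \<in> carrier R \<Longrightarrow> genideal R GR +>\<^bsub>R\<^esub> \<Psi> (\<Phi> x) = genideal R GR +>\<^bsub>R\<^esub> x"
    and QQ: "\<And>y. y \<in> carrier S \<Longrightarrow> genideal S GS +>\<^bsub>S\<^esub> \<Phi> (\<Psi> y) = genideal S GS +>\<^bsub>S\<^esub> y"
  shows "\<exists>h \<in> ring_iso (R Quot genideal R GR) (S Quot genideal S GS).
           \<forall>x\<in>carrier R. h (genideal R GR +>\<^bsub>R\<^esub> x) = genideal S GS +>\<^bsub>S\<^esub> \<Phi> x"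
proof -
  interpret R: ring R by fact
  interpret S: ring S by fact
  define I where "I = genideal R GR"
  define J where "J = genideal S GS"
  have IR: "ideal I R" unfolding I_def by (rule R.genideal_ideal[OF GR])
  have JS: "ideal J S" unfolding J_def by (rule S.genideal_ideal[OF GS])
  interpret I: ideal I R by fact
  interpret J: ideal J S by fact
  have RSh: "ring_hom_ring R S \<Phi>" by (rule ring_hom_ringI2[OF R S Phi])
  have SRh: "ring_hom_ring S R \<Psi>" by (rule ring_hom_ringI2[OF S R Psi])
  have "GS \<subseteq> {y \<in> carrier S. \<Psi> y \<in> I}" using GS PsiG unfolding I_def by blast
  then have vimJ: "J \<subseteq> {y \<in> carrier S. \<Psi> y \<in> I}"
    unfolding J_def by (rule S.genideal_minimal[OF ring_hom_ring.ideal_vimage[OF SRh IR]])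
  have "GR \<subseteq> {x \<in> carrier R. \<Phi> x \<in> J}" using GR PhiG unfolding J_def by blast
  then have vimI: "I \<subseteq> {x \<in> carrier R. \<Phi> x \<in> J}"
    unfolding I_def by (rule R.genideal_minimal[OF ring_hom_ring.ideal_vimage[OF RSh JS]])
  define \<rho> where "\<rho> = (\<lambda>x. J +>\<^bsub>S\<^esub> \<Phi> x)"
  have \<rho>hom: "\<rho> \<in> ring_hom R (S Quot J)"
  proof -
    have "((+>\<^bsub>S\<^esub>) J) \<circ> \<Phi> \<in> ring_hom R (S Quot J)"
      by (rule ring_hom_trans[OF Phi J.rcos_ring_hom])
    then show ?thesis unfolding \<rho>_def comp_def .
  qed
  have \<rho>ring: "ring_hom_ring R (S Quot J) \<rho>"
    by (rule ring_hom_ringI2[OF R J.quotient_is_ring \<rho>hom])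
  have Phic: "\<Phi> x \<in> carrier S" if "x \<in> carrier R" for x
    using Phi that by (rule ring_hom_closed)
  have Psic: "\<Psi> y \<in> carrier R" if "y \<in> carrier S" for y
    using Psi that by (rule ring_hom_closed)
  have rhoJ: "\<rho> x = J \<longleftrightarrow> \<Phi> x \<in> J" if x: "x \<in> carrier R" for x
  proof
    assume "\<rho> x = J"
    then show "\<Phi> x \<in> J" using J.a_rcos_self[OF Phic[OF x]] unfolding \<rho>_def by simp
  next
    assume "\<Phi> x \<in> J"
    then show "\<rho> x = J" unfolding \<rho>_def by (rule J.a_rcos_const)
  qed
  have ker: "a_kernel R (S Quot J) \<rho> = I"
  proof
    show "a_kernel R (S Quot J) \<rho> \<subseteq> I"
    proof
      fix x assume "x \<in> a_kernel R (S Quot J) \<rho>"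
      then have x: "x \<in> carrier R" and "\<rho> x = J" unfolding a_kernel_def' by (auto simp: FactRing_def)
      then have "\<Phi> x \<in> J" using rhoJ by simp
      then have "\<Psi> (\<Phi> x) \<in> I" using vimJ by auto
      then have "I +>\<^bsub>R\<^esub> \<Psi> (\<Phi> x) = I" by (rule I.a_rcos_const)
      then have "I +>\<^bsub>R\<^esub> x = I" using PP[OF x] unfolding I_def by simp
      then show "x \<in> I" using I.a_rcos_self[OF x] by simp
    qed
  next
    show "I \<subseteq> a_kernel R (S Quot J) \<rho>"
    proof
      fix x assume "x \<in> I"
      then have "x \<in> carrier R" "\<Phi> x \<in> J" using vimI by auto
      then show "x \<in> a_kernel R (S Quot J) \<rho>" using rhoJ unfolding a_kernel_def' by (auto simp: FactRing_def)
    qed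
  qed
  have surj: "\<rho> ` carrier R = carrier (S Quot J)"
  proof
    show "\<rho> ` carrier R \<subseteq> carrier (S Quot J)" using \<rho>hom by (auto simp: ring_hom_def)
  next
    show "carrier (S Quot J) \<subseteq> \<rho> ` carrier R"
    proof
      fix Y assume "Y \<in> carrier (S Quot J)"
      then obtain y where y: "y \<in> carrier S" "Y = J +>\<^bsub>S\<^esub> y"
        unfolding FactRing_def A_RCOSETS_def' by auto
      then have "Y = \<rho> (\<Psi> y)" unfolding \<rho>_def using QQ[OF y(1)] J_def by simp
      then show "Y \<in> \<rho> ` carrier R" using Psic[OF y(1)] by blast
    qed
  qed
  have iso: "(\<lambda>X. the_elem (\<rho> ` X)) \<in> ring_iso (R Quot I) (S Quot J)"
    using ring_hom_ring.FactRing_iso_set[OF \<rho>ring surj] unfolding ker .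
  have val: "the_elem (\<rho> ` (I +>\<^bsub>R\<^esub> x)) = J +>\<^bsub>S\<^esub> \<Phi> x" if "x \<in> carrier R" for x
  proof -
    have "the_elem (\<rho> ` (a_kernel R (S Quot J) \<rho> +>\<^bsub>R\<^esub> x)) = \<rho> x"
      by (rule ring_hom_ring.the_elem_simp[OF \<rho>ring that])
    then have "the_elem (\<rho> ` (I +>\<^bsub>R\<^esub> x)) = \<rho> x" unfolding ker .
    also have "\<rho> x = J +>\<^bsub>S\<^esub> \<Phi> x" unfolding \<rho>_def ..
    finally show ?thesis .
  qed
  have "\<exists>h \<in> ring_iso (R Quot I) (S Quot J). \<forall>x\<in>carrier R. h (I +>\<^bsub>R\<^esub> x) = J +>\<^bsub>S\<^esub> \<Phi> x"
    using iso val by (intro bexI[of _ "\<lambda>X. the_elem (\<rho> ` X)"]) auto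
  then show ?thesis unfolding I_def J_def .
qed

lemma pmul_scal_left: "pmul t (\<lambda>q. c * x q) y = (\<lambda>q. c * pmul t x y q)"
  unfolding pmul_def by (simp add: sum_distrib_left mult.assoc)
lemma pmul_scal_right: "pmul t x (\<lambda>q. c * y q) = (\<lambda>q. c * pmul t x y q)"
  unfolding pmul_def by (simp add: sum_distrib_left ac_simps)
lemma pmul_add_left: "pmul t (\<lambda>q. x q + z q) y = (\<lambda>q. pmul t x y q + pmul t z y q)"
  unfolding pmul_def by (simp add: sum.distrib distrib_right)
lemma pmul_add_right: "pmul t x (\<lambda>q. y q + z q) = (\<lambda>q. pmul t x y q + pmul t x z q)"
  unfolding pmul_def by (simp add: sum.distrib distrib_left)
lemma pmul_diff_left: "pmul t (\<lambda>q. x q - z q) y = (\<lambda>q. pmul t x y q - pmul t z y q)"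
  unfolding pmul_def by (simp add: sum_subtractf left_diff_distrib)
lemma pmul_diff_right: "pmul t x (\<lambda>q. y q - z q) = (\<lambda>q. pmul t x y q - pmul t x z q)"
  unfolding pmul_def by (simp add: sum_subtractf right_diff_distrib)
lemma pmul_zero_left: "pmul t (\<lambda>q. 0) y = (\<lambda>q. 0)"
  unfolding pmul_def by simp
lemma pmul_zero_right: "pmul t x (\<lambda>q. 0) = (\<lambda>q. 0)"
  unfolding pmul_def by simp
lemmas pmul_lin = pmul_scal_left pmul_scal_right pmul_add_left pmul_add_right
  pmul_diff_left pmul_diff_right pmul_zero_left pmul_zero_right

lemma lin_carrier:
  assumes "finite S" "\<And>p. p \<in> S \<Longrightarrow> valid_path Ar s t p"
  shows "(\<lambda>r. \<Sum>p\<in>S. c p * pe p r) \<in> carrier (path_ring Ar s t)"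
proof -
  have sub: "{r. (\<Sum>p\<in>S. c p * pe p r) \<noteq> 0} \<subseteq> S"
  proof
    fix r assume "r \<in> {r. (\<Sum>p\<in>S. c p * pe p r) \<noteq> 0}"
    then have "(\<Sum>p\<in>S. c p * pe p r) \<noteq> 0" by simp
    then obtain p where "p \<in> S" "c p * pe p r \<noteq> 0" by (rule sum.not_neutral_contains_not_neutral)
    then show "r \<in> S" by (auto simp: pe_def split: if_splits)
  qed
  then have "finite {r. (\<Sum>p\<in>S. c p * pe p r) \<noteq> 0}" using assms(1) by (rule finite_subset)
  then show ?thesis using sub assms(2) unfolding pr_carrier mem_Collect_eq by blast
qed

lemma scal_one_carrier:
  fixes Ar :: "'a set" and s t :: "'a \<Rightarrow> 'v" and c :: "'k::field"
  assumes "finite Ar"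
  shows "(\<lambda>p. c * (if snd p = [] \<and> fst p \<in> qverts Ar s then 1 else 0)) \<in> carrier (path_ring Ar s t)"
proof -
  have fV: "finite (qverts Ar s)" using assms by (simp add: qverts_def)
  have "(\<lambda>p. c * (if snd p = [] \<and> fst p \<in> qverts Ar s then 1 else 0)) = (\<lambda>r. \<Sum>p\<in>(\<lambda>v. (v, [] :: 'a list)) ` qverts Ar s. c * pe p r)"
  proof (rule ext)
    fix r :: "'v \<times> 'a list"
    have "(\<Sum>p\<in>(\<lambda>v. (v, [] :: 'a list)) ` qverts Ar s. c * pe p r) = (\<Sum>v\<in>qverts Ar s. c * pe (v, []) r)"
      by (subst sum.reindex) (auto simp: inj_on_def)
    also have "\<dots> = (\<Sum>v\<in>qverts Ar s. if v = fst r then c * (if snd r = [] then 1 else 0) else 0)"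
      by (intro sum.cong refl) (cases r, auto simp: pe_def)
    also have "\<dots> = c * (if snd r = [] \<and> fst r \<in> qverts Ar s then 1 else 0)"
      using fV by (simp add: sum.delta')
    finally show "c * (if snd r = [] \<and> fst r \<in> qverts Ar s then 1 else 0) = (\<Sum>p\<in>(\<lambda>v. (v, [] :: 'a list)) ` qverts Ar s. c * pe p r)" by simp
  qed
  also have "\<dots> \<in> carrier (path_ring Ar s t)"
    using fV by (intro lin_carrier) (auto simp: valid_nil)
  finally show ?thesis .
qed

lemma scal_one_mul:
  fixes Ar :: "'a set" and s t :: "'a \<Rightarrow> 'v"
  assumes "t ` Ar \<subseteq> s ` Ar" "finite Ar" "z \<in> carrier (path_ring Ar s t)"
  shows "pmul t (\<lambda>p. c * (if snd p = [] \<and> fst p \<in> qverts Ar s then 1 else 0)) z = (\<lambda>q. c * z q)"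
proof -
  interpret R: ring "path_ring Ar s t :: ('v \<times> 'a list \<Rightarrow> 'k::field) ring"
    by (rule path_ring_ring[OF assms(1,2)])
  have "pmul t (\<lambda>p. if snd p = [] \<and> fst p \<in> qverts Ar s then 1 else 0) z = z"
    using R.l_one[OF assms(3)] by (simp add: pr_mult pr_one)
  then show ?thesis by (simp add: pmul_scal_left)
qed

lemma gen_induct:
  fixes Ar :: "'a set" and s t :: "'a \<Rightarrow> 'v" and P :: "('v \<times> 'a list \<Rightarrow> 'k::field) \<Rightarrow> bool"
  assumes q: "t ` Ar \<subseteq> s ` Ar" "finite Ar"
    and add: "\<And>x y. x \<in> carrier (path_ring Ar s t) \<Longrightarrow> y \<in> carrier (path_ring Ar s t) \<Longrightarrow> P x \<Longrightarrow> P y \<Longrightarrow> P (\<lambda>p. x p + y p)"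
    and mul: "\<And>x y. x \<in> carrier (path_ring Ar s t) \<Longrightarrow> y \<in> carrier (path_ring Ar s t) \<Longrightarrow> P x \<Longrightarrow> P y \<Longrightarrow> P (pmul t x y)"
    and scal: "\<And>c. P (\<lambda>p. c * (if snd p = [] \<and> fst p \<in> qverts Ar s then 1 else 0))"
    and vert: "\<And>v. v \<in> qverts Ar s \<Longrightarrow> P (pe (v, []))"
    and arr: "\<And>a. a \<in> Ar \<Longrightarrow> P (pe (s a, [a]))"
    and x: "x \<in> carrier (path_ring Ar s t)"
  shows "P x"
proof -
  have pth: "valid_path Ar s t (v, as) \<Longrightarrow> P (pe (v, as))" for v as
  proof (induction as arbitrary: v)
    case Nil then show ?case using vert by (simp add: valid_path_def)
  next
    case (Cons a as)
    from valid_tail[OF Cons.prems q(1)] have h: "valid_path Ar s t (t a, as)" "a \<in> Ar" "s a = v" by auto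
    have ta: "t a \<in> qverts Ar s" using h(1) by (simp add: valid_path_def)
    have v1: "valid_path Ar s t (s a, [a])" using valid_cons[where t=t, OF valid_nil[OF ta] h(2)] .
    have "(pe (v, a # as) :: 'v \<times> 'a list \<Rightarrow> 'k) = pmul t (pe (s a, [a])) (pe (t a, as))"
      using h(3) by (simp add: pe_mul pend_def)
    moreover have "P (pmul t (pe (s a, [a])) (pe (t a, as)))"
      using mul[OF pe_carrier[OF v1] pe_carrier[OF h(1)] arr[OF h(2)] Cons.IH[OF h(1)]] .
    ultimately show ?case by simp
  qed
  have sc: "P (\<lambda>r. c * pe p r)" if "valid_path Ar s t p" for c p
  proof -
    have "pmul t (\<lambda>p. c * (if snd p = [] \<and> fst p \<in> qverts Ar s then 1 else 0)) (pe p) = (\<lambda>r. c * pe p r)"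
      by (rule scal_one_mul[OF q pe_carrier[OF that]])
    moreover have "P (pe p)" using pth[of "fst p" "snd p"] that by simp
    then have "P (pmul t (\<lambda>p. c * (if snd p = [] \<and> fst p \<in> qverts Ar s then 1 else 0)) (pe p))"
      by (rule mul[OF scal_one_carrier[where c=c and s=s and t=t, OF q(2)] pe_carrier[OF that] scal[of c]])
    ultimately show ?thesis by simp
  qed
  have zero: "P (\<lambda>r. 0)" using scal[of 0] by simp
  have xfin: "finite {p. x p \<noteq> 0}" and xval: "\<And>p. x p \<noteq> 0 \<Longrightarrow> valid_path Ar s t p"
    using x unfolding pr_carrier mem_Collect_eq by blast+
  have fin: "S \<subseteq> {p. x p \<noteq> 0} \<Longrightarrow> P (\<lambda>r. \<Sum>p\<in>S. x p * pe p r)" if "finite S" for S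
    using that
  proof (induction S rule: finite_induct)
    case empty then show ?case using zero by simp
  next
    case (insert p S)
    have eq: "(\<lambda>r. \<Sum>p\<in>insert p S. x p * pe p r) = (\<lambda>r. x p * pe p r + (\<Sum>p\<in>S. x p * pe p r))"
      using insert.hyps by simp
    have vp: "valid_path Ar s t p" using insert.prems xval by auto
    have "(\<lambda>r. \<Sum>q\<in>{p}. x q * pe q r) \<in> carrier (path_ring Ar s t)"
      by (rule lin_carrier) (use vp in auto)
    then have c1: "(\<lambda>r. x p * pe p r) \<in> carrier (path_ring Ar s t)" by simp
    have c2: "(\<lambda>r. \<Sum>p\<in>S. x p * pe p r) \<in> carrier (path_ring Ar s t)"
      by (rule lin_carrier) (use insert.hyps insert.prems xval in blast)+
    have ih: "P (\<lambda>r. \<Sum>p\<in>S. x p * pe p r)" using insert.IH insert.prems by blast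
    show ?case unfolding eq by (rule add[OF c1 c2 sc[OF vp] ih])
  qed
  have "P (\<lambda>r. \<Sum>p\<in>{p. x p \<noteq> 0}. x p * pe p r)" using fin[OF xfin] by simp
  then show ?thesis by (subst decomp[OF xfin])
qed

context qhom begin

lemma E_diff:
  assumes x: "x \<in> carrier R1" and y: "y \<in> carrier R1"
  shows "E (\<lambda>p. x p - y p) = (\<lambda>q. E x q - E y q)"
proof (rule ext)
  fix q
  define P where "P = {p. x p \<noteq> 0} \<union> {p. y p \<noteq> 0}"
  have fP: "finite P" using x y carr1_fin unfolding P_def by auto
  have "E (\<lambda>p. x p - y p) q = (\<Sum>p\<in>P. (x p - y p) * F (fst p) (snd p) q)"
    using fP by (intro E_sum) (auto simp: P_def)
  also have "\<dots> = (\<Sum>p\<in>P. x p * F (fst p) (snd p) q) - (\<Sum>p\<in>P. y p * F (fst p) (snd p) q)"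
    by (simp add: left_diff_distrib sum_subtractf)
  also have "\<dots> = E x q - E y q"
    using E_sum[OF fP, of x q] E_sum[OF fP, of y q] by (simp add: P_def subset_iff)
  finally show "E (\<lambda>p. x p - y p) q = E x q - E y q" .
qed

lemma E_scal:
  assumes x: "x \<in> carrier R1"
  shows "E (\<lambda>p. c * x p) = (\<lambda>q. c * E x q)"
proof (rule ext)
  fix q
  define P where "P = {p. x p \<noteq> 0}"
  have fP: "finite P" using x carr1_fin unfolding P_def by auto
  have "E (\<lambda>p. c * x p) q = (\<Sum>p\<in>P. (c * x p) * F (fst p) (snd p) q)"
    using fP by (intro E_sum) (auto simp: P_def)
  also have "\<dots> = c * (\<Sum>p\<in>P. x p * F (fst p) (snd p) q)"
    by (simp add: sum_distrib_left mult.assoc)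
  also have "\<dots> = c * E x q"
    using E_sum[OF fP, of x q] by (simp add: P_def)
  finally show "E (\<lambda>p. c * x p) q = c * E x q" .
qed

lemma phi_end: "a \<in> Ar1 \<Longrightarrow> pmul t2 (\<phi> a) (pe (t1 a, [])) = \<phi> a"
  using pmul_pe0_right[OF phi_r] by simp

end

lemma UNIV_arrT: "(UNIV :: arrT set) = {al1, al2, al3, be1, be2, be3}"
proof (rule Set.set_eqI)
  fix x :: arrT show "x \<in> UNIV \<longleftrightarrow> x \<in> {al1, al2, al3, be1, be2, be3}" by (cases x) auto
qed
lemma UNIV_arrS: "(UNIV :: arrS set) = {alS, beS, gaS, siS, deS, etS}"
proof (rule Set.set_eqI)
  fix x :: arrS show "x \<in> UNIV \<longleftrightarrow> x \<in> {alS, beS, gaS, siS, deS, etS}" by (cases x) auto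
qed
lemma fin_arrT: "finite (UNIV :: arrT set)" by (simp add: UNIV_arrT)
lemma fin_arrS: "finite (UNIV :: arrS set)" by (simp add: UNIV_arrS)
lemma qvT: "qverts UNIV sT = {1, 2, 3}"
  unfolding qverts_def UNIV_arrT by auto
lemma qvS: "qverts UNIV sS = {1, 2, 3}"
  unfolding qverts_def UNIV_arrS by auto
lemma tsT: "tT ` UNIV \<subseteq> sT ` UNIV" unfolding UNIV_arrT by auto
lemma tsS: "tS ` UNIV \<subseteq> sS ` UNIV" unfolding UNIV_arrS by auto

lemma qbar_eq:
  assumes "b \<in> Ar" "s b = s a" "b \<noteq> a" "\<And>c. c \<in> Ar \<Longrightarrow> s c = s a \<Longrightarrow> c \<noteq> a \<Longrightarrow> c = b"
  shows "qbar Ar s a = b"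
  unfolding qbar_def
proof (rule the_equality)
  show "b \<in> Ar \<and> s b = s a \<and> b \<noteq> a" using assms(1-3) by blast
next
  fix c assume "c \<in> Ar \<and> s c = s a \<and> c \<noteq> a" then show "c = b" using assms(4) by blast
qed

lemma least_eq:
  assumes "0 < n" "(g ^^ n) a = a" "\<And>k. 0 < k \<Longrightarrow> k < n \<Longrightarrow> (g ^^ k) a \<noteq> a"
  shows "(LEAST k. 0 < k \<and> (g ^^ k) a = a) = n"
proof (rule Least_equality)
  show "0 < n \<and> (g ^^ n) a = a" using assms(1,2) by blast
next
  fix k assume "0 < k \<and> (g ^^ k) a = a" then show "n \<le> k" using assms(3) not_less by blast
qed


lemma qbar_al1: "qbar UNIV sT al1 = be3"
proof (rule qbar_eq)
  fix c :: arrT show "c \<in> UNIV \<Longrightarrow> sT c = sT al1 \<Longrightarrow> c \<noteq> al1 \<Longrightarrow> c = be3" by (cases c) auto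
qed auto

lemma qbar_al2: "qbar UNIV sT al2 = be1"
proof (rule qbar_eq)
  fix c :: arrT show "c \<in> UNIV \<Longrightarrow> sT c = sT al2 \<Longrightarrow> c \<noteq> al2 \<Longrightarrow> c = be1" by (cases c) auto
qed auto

lemma qbar_al3: "qbar UNIV sT al3 = be2"
proof (rule qbar_eq)
  fix c :: arrT show "c \<in> UNIV \<Longrightarrow> sT c = sT al3 \<Longrightarrow> c \<noteq> al3 \<Longrightarrow> c = be2" by (cases c) auto
qed auto

lemma qbar_be1: "qbar UNIV sT be1 = al2"
proof (rule qbar_eq)
  fix c :: arrT show "c \<in> UNIV \<Longrightarrow> sT c = sT be1 \<Longrightarrow> c \<noteq> be1 \<Longrightarrow> c = al2" by (cases c) auto
qed auto

lemma qbar_be2: "qbar UNIV sT be2 = al3"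
proof (rule qbar_eq)
  fix c :: arrT show "c \<in> UNIV \<Longrightarrow> sT c = sT be2 \<Longrightarrow> c \<noteq> be2 \<Longrightarrow> c = al3" by (cases c) auto
qed auto

lemma qbar_be3: "qbar UNIV sT be3 = al1"
proof (rule qbar_eq)
  fix c :: arrT show "c \<in> UNIV \<Longrightarrow> sT c = sT be3 \<Longrightarrow> c \<noteq> be3 \<Longrightarrow> c = al1" by (cases c) auto
qed auto

lemma gp_al1: "gperm UNIV sT fT al1 = be1" by (simp add: gperm_def qbar_al2)

lemma gp_al2: "gperm UNIV sT fT al2 = be2" by (simp add: gperm_def qbar_al3)

lemma gp_al3: "gperm UNIV sT fT al3 = be3" by (simp add: gperm_def qbar_al1)

lemma gp_be1: "gperm UNIV sT fT be1 = al1" by (simp add: gperm_def qbar_be3)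

lemma gp_be2: "gperm UNIV sT fT be2 = al2" by (simp add: gperm_def qbar_be1)

lemma gp_be3: "gperm UNIV sT fT be3 = al3" by (simp add: gperm_def qbar_be2)

lemmas gp_T = gp_al1 gp_al2 gp_al3 gp_be1 gp_be2 gp_be3

lemma gl_al1: "gorb_len UNIV sT fT al1 = 2"
  unfolding gorb_len_def
proof (rule least_eq)
  show "(gperm UNIV sT fT ^^ 2) al1 = al1" by (simp add: gp_T eval_nat_numeral)
next
  fix k :: nat assume "0 < k" "k < 2" then have "k = 1" by arith then show "(gperm UNIV sT fT ^^ k) al1 \<noteq> al1" by (simp add: gp_T)
qed simp

lemma gl_al2: "gorb_len UNIV sT fT al2 = 2"
  unfolding gorb_len_def
proof (rule least_eq)
  show "(gperm UNIV sT fT ^^ 2) al2 = al2" by (simp add: gp_T eval_nat_numeral)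
next
  fix k :: nat assume "0 < k" "k < 2" then have "k = 1" by arith then show "(gperm UNIV sT fT ^^ k) al2 \<noteq> al2" by (simp add: gp_T)
qed simp

lemma gl_al3: "gorb_len UNIV sT fT al3 = 2"
  unfolding gorb_len_def
proof (rule least_eq)
  show "(gperm UNIV sT fT ^^ 2) al3 = al3" by (simp add: gp_T eval_nat_numeral)
next
  fix k :: nat assume "0 < k" "k < 2" then have "k = 1" by arith then show "(gperm UNIV sT fT ^^ k) al3 \<noteq> al3" by (simp add: gp_T)
qed simp

lemma gl_be1: "gorb_len UNIV sT fT be1 = 2"
  unfolding gorb_len_def
proof (rule least_eq)
  show "(gperm UNIV sT fT ^^ 2) be1 = be1" by (simp add: gp_T eval_nat_numeral)
next
  fix k :: nat assume "0 < k" "k < 2" then have "k = 1" by arith then show "(gperm UNIV sT fT ^^ k) be1 \<noteq> be1" by (simp add: gp_T)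
qed simp

lemma gl_be2: "gorb_len UNIV sT fT be2 = 2"
  unfolding gorb_len_def
proof (rule least_eq)
  show "(gperm UNIV sT fT ^^ 2) be2 = be2" by (simp add: gp_T eval_nat_numeral)
next
  fix k :: nat assume "0 < k" "k < 2" then have "k = 1" by arith then show "(gperm UNIV sT fT ^^ k) be2 \<noteq> be2" by (simp add: gp_T)
qed simp

lemma gl_be3: "gorb_len UNIV sT fT be3 = 2"
  unfolding gorb_len_def
proof (rule least_eq)
  show "(gperm UNIV sT fT ^^ 2) be3 = be3" by (simp add: gp_T eval_nat_numeral)
next
  fix k :: nat assume "0 < k" "k < 2" then have "k = 1" by arith then show "(gperm UNIV sT fT ^^ k) be3 \<noteq> be3" by (simp add: gp_T)
qed simp

lemmas gl_T = gl_al1 gl_al2 gl_al3 gl_be1 gl_be2 gl_be3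

lemmas qbar_T = qbar_al1 qbar_al2 qbar_al3 qbar_be1 qbar_be2 qbar_be3

lemma qbar_alS: "qbar UNIV sS alS = beS"
proof (rule qbar_eq)
  fix c :: arrS show "c \<in> UNIV \<Longrightarrow> sS c = sS alS \<Longrightarrow> c \<noteq> alS \<Longrightarrow> c = beS" by (cases c) auto
qed auto

lemma qbar_beS: "qbar UNIV sS beS = alS"
proof (rule qbar_eq)
  fix c :: arrS show "c \<in> UNIV \<Longrightarrow> sS c = sS beS \<Longrightarrow> c \<noteq> beS \<Longrightarrow> c = alS" by (cases c) auto
qed auto

lemma qbar_gaS: "qbar UNIV sS gaS = siS"
proof (rule qbar_eq)
  fix c :: arrS show "c \<in> UNIV \<Longrightarrow> sS c = sS gaS \<Longrightarrow> c \<noteq> gaS \<Longrightarrow> c = siS" by (cases c) auto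
qed auto

lemma qbar_siS: "qbar UNIV sS siS = gaS"
proof (rule qbar_eq)
  fix c :: arrS show "c \<in> UNIV \<Longrightarrow> sS c = sS siS \<Longrightarrow> c \<noteq> siS \<Longrightarrow> c = gaS" by (cases c) auto
qed auto

lemma qbar_deS: "qbar UNIV sS deS = etS"
proof (rule qbar_eq)
  fix c :: arrS show "c \<in> UNIV \<Longrightarrow> sS c = sS deS \<Longrightarrow> c \<noteq> deS \<Longrightarrow> c = etS" by (cases c) auto
qed auto

lemma qbar_etS: "qbar UNIV sS etS = deS"
proof (rule qbar_eq)
  fix c :: arrS show "c \<in> UNIV \<Longrightarrow> sS c = sS etS \<Longrightarrow> c \<noteq> etS \<Longrightarrow> c = deS" by (cases c) auto
qed auto

lemma gp_alS: "gperm UNIV sS fS alS = alS" by (simp add: gperm_def qbar_beS)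

lemma gp_beS: "gperm UNIV sS fS beS = siS" by (simp add: gperm_def qbar_gaS)

lemma gp_gaS: "gperm UNIV sS fS gaS = beS" by (simp add: gperm_def qbar_alS)

lemma gp_siS: "gperm UNIV sS fS siS = deS" by (simp add: gperm_def qbar_etS)

lemma gp_deS: "gperm UNIV sS fS deS = gaS" by (simp add: gperm_def qbar_siS)

lemma gp_etS: "gperm UNIV sS fS etS = etS" by (simp add: gperm_def qbar_deS)

lemmas gp_S = gp_alS gp_beS gp_gaS gp_siS gp_deS gp_etS

lemma gl_alS: "gorb_len UNIV sS fS alS = 1"
  unfolding gorb_len_def
proof (rule least_eq)
  show "(gperm UNIV sS fS ^^ 1) alS = alS" by (simp add: gp_S eval_nat_numeral)
next
  fix k :: nat assume "0 < k" "k < 1" then show "(gperm UNIV sS fS ^^ k) alS \<noteq> alS" by arith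
qed simp

lemma gl_beS: "gorb_len UNIV sS fS beS = 4"
  unfolding gorb_len_def
proof (rule least_eq)
  show "(gperm UNIV sS fS ^^ 4) beS = beS" by (simp add: gp_S eval_nat_numeral)
next
  fix k :: nat assume "0 < k" "k < 4" then have "k = 1 \<or> k = 2 \<or> k = 3" by arith then show "(gperm UNIV sS fS ^^ k) beS \<noteq> beS" by (auto simp: gp_S eval_nat_numeral)
qed simp

lemma gl_gaS: "gorb_len UNIV sS fS gaS = 4"
  unfolding gorb_len_def
proof (rule least_eq)
  show "(gperm UNIV sS fS ^^ 4) gaS = gaS" by (simp add: gp_S eval_nat_numeral)
next
  fix k :: nat assume "0 < k" "k < 4" then have "k = 1 \<or> k = 2 \<or> k = 3" by arith then show "(gperm UNIV sS fS ^^ k) gaS \<noteq> gaS" by (auto simp: gp_S eval_nat_numeral)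
qed simp

lemma gl_siS: "gorb_len UNIV sS fS siS = 4"
  unfolding gorb_len_def
proof (rule least_eq)
  show "(gperm UNIV sS fS ^^ 4) siS = siS" by (simp add: gp_S eval_nat_numeral)
next
  fix k :: nat assume "0 < k" "k < 4" then have "k = 1 \<or> k = 2 \<or> k = 3" by arith then show "(gperm UNIV sS fS ^^ k) siS \<noteq> siS" by (auto simp: gp_S eval_nat_numeral)
qed simp

lemma gl_deS: "gorb_len UNIV sS fS deS = 4"
  unfolding gorb_len_def
proof (rule least_eq)
  show "(gperm UNIV sS fS ^^ 4) deS = deS" by (simp add: gp_S eval_nat_numeral)
next
  fix k :: nat assume "0 < k" "k < 4" then have "k = 1 \<or> k = 2 \<or> k = 3" by arith then show "(gperm UNIV sS fS ^^ k) deS \<noteq> deS" by (auto simp: gp_S eval_nat_numeral)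
qed simp

lemma gl_etS: "gorb_len UNIV sS fS etS = 1"
  unfolding gorb_len_def
proof (rule least_eq)
  show "(gperm UNIV sS fS ^^ 1) etS = etS" by (simp add: gp_S eval_nat_numeral)
next
  fix k :: nat assume "0 < k" "k < 1" then show "(gperm UNIV sS fS ^^ k) etS \<noteq> etS" by arith
qed simp

lemmas gl_S = gl_alS gl_beS gl_gaS gl_siS gl_deS gl_etS

lemmas qbar_S = qbar_alS qbar_beS qbar_gaS qbar_siS qbar_deS qbar_etS

lemma ap_al1: "Apath_list UNIV sT fT mT al1 = [al1, be1, al1]"
  by (simp add: Apath_list_def gl_T upt_rec gp_T)

lemma vi_al1: "\<not> virtual_arrow UNIV sT fT mT al1"
  by (simp add: virtual_arrow_def gl_T)

lemma ap_al2: "Apath_list UNIV sT fT mT al2 = [al2, be2, al2]"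
  by (simp add: Apath_list_def gl_T upt_rec gp_T)

lemma vi_al2: "\<not> virtual_arrow UNIV sT fT mT al2"
  by (simp add: virtual_arrow_def gl_T)

lemma ap_al3: "Apath_list UNIV sT fT mT al3 = [al3]"
  by (simp add: Apath_list_def gl_T upt_rec gp_T)

lemma vi_al3: "virtual_arrow UNIV sT fT mT al3"
  by (simp add: virtual_arrow_def gl_T)

lemma ap_be1: "Apath_list UNIV sT fT mT be1 = [be1, al1, be1]"
  by (simp add: Apath_list_def gl_T upt_rec gp_T)

lemma vi_be1: "\<not> virtual_arrow UNIV sT fT mT be1"
  by (simp add: virtual_arrow_def gl_T)

lemma ap_be2: "Apath_list UNIV sT fT mT be2 = [be2, al2, be2]"
  by (simp add: Apath_list_def gl_T upt_rec gp_T)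

lemma vi_be2: "\<not> virtual_arrow UNIV sT fT mT be2"
  by (simp add: virtual_arrow_def gl_T)

lemma ap_be3: "Apath_list UNIV sT fT mT be3 = [be3]"
  by (simp add: Apath_list_def gl_T upt_rec gp_T)

lemma vi_be3: "virtual_arrow UNIV sT fT mT be3"
  by (simp add: virtual_arrow_def gl_T)

lemmas ap_T = ap_al1 ap_al2 ap_al3 ap_be1 ap_be2 ap_be3

lemmas vi_T = vi_al1 vi_al2 vi_al3 vi_be1 vi_be2 vi_be3

definition relsT where "relsT mu = {(\<lambda>q. pe (1, [al1, al2]) q - pe (1, [be3]) q), (\<lambda>q. pe (2, [al2, al3]) q - mu * pe (2, [be1, al1, be1]) q), (\<lambda>q. pe (3, [al3, al1]) q - pe (3, [be2, al2, be2]) q), (\<lambda>q. pe (2, [be1, be3]) q - pe (2, [al2, be2, al2]) q), (\<lambda>q. pe (3, [be2, be1]) q - pe (3, [al3]) q), (\<lambda>q. pe (1, [be3, be2]) q - mu * pe (1, [al1, be1, al1]) q), pe (2, [al2, al3, be3]), pe (3, [al3, al1, be1]), pe (2, [be1, be3, al3]), pe (1, [be3, be2, al2]), pe (1, [al1, be1, be3]), pe (3, [al3, be3, be2]), pe (3, [be2, al2, al3]), pe (1, [be3, al3, al1])}"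

lemma relsT_sub:
  fixes mu :: "'k::field"
  shows "WSA_rels UNIV sT fT mT (cT mu) \<subseteq> relsT mu"
  unfolding WSA_rels_def
proof (intro Un_least subsetI)
  fix x :: "nat \<times> arrT list \<Rightarrow> 'k" assume "x \<in> {\<lambda>q. pe (apath sT [a, fT a]) q - cT mu (qbar UNIV sT a) * pe (apath sT (Apath_list UNIV sT fT mT (qbar UNIV sT a))) q | a. a \<in> UNIV}"
  then obtain a where x: "x = (\<lambda>q. pe (apath sT [a, fT a]) q - cT mu (qbar UNIV sT a) * pe (apath sT (Apath_list UNIV sT fT mT (qbar UNIV sT a))) q)" by blast
  show "x \<in> relsT mu" unfolding x relsT_def by (cases a) (simp_all add: apath_def qbar_T ap_T)
next
  fix x :: "nat \<times> arrT list \<Rightarrow> 'k" assume "x \<in> {pe (apath sT [a, fT a, gperm UNIV sT fT (fT a)]) | a. a \<in> UNIV \<and> \<not> virtual_arrow UNIV sT fT mT (fT (fT a))}"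
  then obtain a where x: "x = pe (apath sT [a, fT a, gperm UNIV sT fT (fT a)])" "\<not> virtual_arrow UNIV sT fT mT (fT (fT a))" by blast
  show "x \<in> relsT mu" using x(2) unfolding x(1) relsT_def by (cases a) (simp_all add: apath_def gp_T vi_T)
next
  fix x :: "nat \<times> arrT list \<Rightarrow> 'k" assume "x \<in> {pe (apath sT [a, gperm UNIV sT fT a, fT (gperm UNIV sT fT a)]) | a. a \<in> UNIV \<and> \<not> virtual_arrow UNIV sT fT mT (fT a)}"
  then obtain a where x: "x = pe (apath sT [a, gperm UNIV sT fT a, fT (gperm UNIV sT fT a)])" "\<not> virtual_arrow UNIV sT fT mT (fT a)" by blast
  show "x \<in> relsT mu" using x(2) unfolding x(1) relsT_def by (cases a) (simp_all add: apath_def gp_T vi_T)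
qed

lemma ap_alS: "Apath_list UNIV sS fS mS alS = [alS]"
  by (simp add: Apath_list_def gl_S upt_rec gp_S)

lemma vi_alS: "virtual_arrow UNIV sS fS mS alS"
  by (simp add: virtual_arrow_def gl_S)

lemma ap_beS: "Apath_list UNIV sS fS mS beS = [beS, siS, deS]"
  by (simp add: Apath_list_def gl_S upt_rec gp_S)

lemma vi_beS: "\<not> virtual_arrow UNIV sS fS mS beS"
  by (simp add: virtual_arrow_def gl_S)

lemma ap_gaS: "Apath_list UNIV sS fS mS gaS = [gaS, beS, siS]"
  by (simp add: Apath_list_def gl_S upt_rec gp_S)

lemma vi_gaS: "\<not> virtual_arrow UNIV sS fS mS gaS"
  by (simp add: virtual_arrow_def gl_S)

lemma ap_siS: "Apath_list UNIV sS fS mS siS = [siS, deS, gaS]"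
  by (simp add: Apath_list_def gl_S upt_rec gp_S)

lemma vi_siS: "\<not> virtual_arrow UNIV sS fS mS siS"
  by (simp add: virtual_arrow_def gl_S)

lemma ap_deS: "Apath_list UNIV sS fS mS deS = [deS, gaS, beS]"
  by (simp add: Apath_list_def gl_S upt_rec gp_S)

lemma vi_deS: "\<not> virtual_arrow UNIV sS fS mS deS"
  by (simp add: virtual_arrow_def gl_S)

lemma ap_etS: "Apath_list UNIV sS fS mS etS = [etS]"
  by (simp add: Apath_list_def gl_S upt_rec gp_S)

lemma vi_etS: "virtual_arrow UNIV sS fS mS etS"
  by (simp add: virtual_arrow_def gl_S)

lemmas ap_S = ap_alS ap_beS ap_gaS ap_siS ap_deS ap_etS

lemmas vi_S = vi_alS vi_beS vi_gaS vi_siS vi_deS vi_etS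

definition relsS where "relsS lam = {(\<lambda>q. pe (1, [alS, beS]) q - lam * pe (1, [beS, siS, deS]) q), (\<lambda>q. pe (1, [beS, gaS]) q - pe (1, [alS]) q), (\<lambda>q. pe (2, [gaS, alS]) q - lam * pe (2, [siS, deS, gaS]) q), (\<lambda>q. pe (2, [siS, etS]) q - lam * pe (2, [gaS, beS, siS]) q), (\<lambda>q. pe (3, [deS, siS]) q - pe (3, [etS]) q), (\<lambda>q. pe (3, [etS, deS]) q - lam * pe (3, [deS, gaS, beS]) q), pe (1, [alS, beS, siS]), pe (2, [gaS, alS, alS]), pe (2, [siS, etS, etS]), pe (3, [etS, deS, gaS]), pe (1, [alS, alS, beS]), pe (1, [beS, siS, etS]), pe (3, [deS, gaS, alS]), pe (3, [etS, etS, deS])}"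

lemma relsS_sub:
  fixes lam :: "'k::field"
  shows "WSA_rels UNIV sS fS mS (cS lam) \<subseteq> relsS lam"
  unfolding WSA_rels_def
proof (intro Un_least subsetI)
  fix x :: "nat \<times> arrS list \<Rightarrow> 'k" assume "x \<in> {\<lambda>q. pe (apath sS [a, fS a]) q - cS lam (qbar UNIV sS a) * pe (apath sS (Apath_list UNIV sS fS mS (qbar UNIV sS a))) q | a. a \<in> UNIV}"
  then obtain a where x: "x = (\<lambda>q. pe (apath sS [a, fS a]) q - cS lam (qbar UNIV sS a) * pe (apath sS (Apath_list UNIV sS fS mS (qbar UNIV sS a))) q)" by blast
  show "x \<in> relsS lam" unfolding x relsS_def by (cases a) (simp_all add: apath_def qbar_S ap_S)
next
  fix x :: "nat \<times> arrS list \<Rightarrow> 'k" assume "x \<in> {pe (apath sS [a, fS a, gperm UNIV sS fS (fS a)]) | a. a \<in> UNIV \<and> \<not> virtual_arrow UNIV sS fS mS (fS (fS a))}"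
  then obtain a where x: "x = pe (apath sS [a, fS a, gperm UNIV sS fS (fS a)])" "\<not> virtual_arrow UNIV sS fS mS (fS (fS a))" by blast
  show "x \<in> relsS lam" using x(2) unfolding x(1) relsS_def by (cases a) (simp_all add: apath_def gp_S vi_S)
next
  fix x :: "nat \<times> arrS list \<Rightarrow> 'k" assume "x \<in> {pe (apath sS [a, gperm UNIV sS fS a, fS (gperm UNIV sS fS a)]) | a. a \<in> UNIV \<and> \<not> virtual_arrow UNIV sS fS mS (fS a)}"
  then obtain a where x: "x = pe (apath sS [a, gperm UNIV sS fS a, fS (gperm UNIV sS fS a)])" "\<not> virtual_arrow UNIV sS fS mS (fS a)" by blast
  show "x \<in> relsS lam" using x(2) unfolding x(1) relsS_def by (cases a) (simp_all add: apath_def gp_S vi_S)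
qed

fun phiT :: "'k::field \<Rightarrow> arrT \<Rightarrow> (nat \<times> arrS list \<Rightarrow> 'k)" where
  "phiT lam al1 = pe (1, [beS])"
| "phiT lam be1 = pe (2, [gaS])"
| "phiT lam al2 = pe (2, [siS])"
| "phiT lam be2 = (\<lambda>q. inverse lam * pe (3, [deS]) q)"
| "phiT lam al3 = (\<lambda>q. inverse lam * pe (3, [deS, gaS]) q)"
| "phiT lam be3 = pe (1, [beS, siS])"

fun psiS :: "'k::field \<Rightarrow> arrS \<Rightarrow> (nat \<times> arrT list \<Rightarrow> 'k)" where
  "psiS lam alS = pe (1, [al1, be1])"
| "psiS lam beS = pe (1, [al1])"
| "psiS lam gaS = pe (2, [be1])"
| "psiS lam siS = pe (2, [al2])"
| "psiS lam deS = (\<lambda>q. lam * pe (3, [be2]) q)"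
| "psiS lam etS = (\<lambda>q. lam * pe (3, [be2, al2]) q)"

lemma pe_lsupp: "lsupp v (pe (v, as))"
  by (simp add: lsupp_def pe_def)
lemma pe_rsupp: "rsupp t (pend t (v, as)) (pe (v, as))"
  by (simp add: rsupp_def pe_def)
lemma sc_lsupp: fixes x :: "'v \<times> 'a list \<Rightarrow> 'k::field" shows "lsupp v x \<Longrightarrow> lsupp v (\<lambda>q. c * x q)"
  unfolding lsupp_def by (metis mult_zero_right)
lemma sc_rsupp: fixes x :: "'v \<times> 'a list \<Rightarrow> 'k::field" shows "rsupp t w x \<Longrightarrow> rsupp t w (\<lambda>q. c * x q)"
  unfolding rsupp_def by (metis mult_zero_right)
lemma pe_rsupp': "pend t (v, as) = w \<Longrightarrow> rsupp t w (pe (v, as))"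
  using pe_rsupp by metis
lemma sc_carrier: fixes x :: "'v \<times> 'a list \<Rightarrow> 'k::field" shows "x \<in> carrier (path_ring Ar s t) \<Longrightarrow> (\<lambda>q. c * x q) \<in> carrier (path_ring Ar s t)"
  unfolding pr_carrier mem_Collect_eq
  by (auto intro: finite_subset[of "{q. c * x q \<noteq> 0}" "{q. x q \<noteq> 0}"])

lemma qhomT: "qhom UNIV sT tT UNIV sS tS (phiT lam)"
proof
  show "tT ` UNIV \<subseteq> sT ` UNIV" by (rule tsT)
  show "finite (UNIV :: arrT set)" by (rule fin_arrT)
  show "tS ` UNIV \<subseteq> sS ` UNIV" by (rule tsS)
  show "finite (UNIV :: arrS set)" by (rule fin_arrS)
  show "qverts UNIV sT = qverts UNIV sS" by (simp add: qvT qvS)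
next
  fix a :: arrT
  show "phiT lam a \<in> carrier (path_ring UNIV sS tS)"
    by (cases a) (auto intro!: sc_carrier pe_carrier simp: valid_path_def qvS)
  show "lsupp (sT a) (phiT lam a)"
    by (cases a) (auto intro!: sc_lsupp pe_lsupp)
  show "rsupp tS (tT a) (phiT lam a)"
    by (cases a) (auto intro!: sc_rsupp pe_rsupp' simp: pend_def)
qed

lemma qhomS: "qhom UNIV sS tS UNIV sT tT (psiS lam)"
proof
  show "tT ` UNIV \<subseteq> sT ` UNIV" by (rule tsT)
  show "finite (UNIV :: arrT set)" by (rule fin_arrT)
  show "tS ` UNIV \<subseteq> sS ` UNIV" by (rule tsS)
  show "finite (UNIV :: arrS set)" by (rule fin_arrS)
  show "qverts UNIV sS = qverts UNIV sT" by (simp add: qvT qvS)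
next
  fix a :: arrS
  show "psiS lam a \<in> carrier (path_ring UNIV sT tT)"
    by (cases a) (auto intro!: sc_carrier pe_carrier simp: valid_path_def qvT)
  show "lsupp (sS a) (psiS lam a)"
    by (cases a) (auto intro!: sc_lsupp pe_lsupp)
  show "rsupp tT (tS a) (psiS lam a)"
    by (cases a) (auto intro!: sc_rsupp pe_rsupp' simp: pend_def)
qed

lemma idl_lmul:
  assumes "ideal I (path_ring Ar s t)" "x \<in> I" "valid_path Ar s t p"
  shows "pmul t (pe p) x \<in> I"
  using ideal.I_l_closed[OF assms(1,2) pe_carrier[OF assms(3)]] by (simp add: pr_mult)

lemma idl_rmul:
  assumes "ideal I (path_ring Ar s t)" "x \<in> I" "valid_path Ar s t p"
  shows "pmul t x (pe p) \<in> I"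
  using ideal.I_r_closed[OF assms(1,2) pe_carrier[OF assms(3)]] by (simp add: pr_mult)

lemma idl_scal:
  fixes Ar :: "'a set" and s t :: "'a \<Rightarrow> 'v" and x :: "'v \<times> 'a list \<Rightarrow> 'k::field"
  assumes I: "ideal I (path_ring Ar s t)" and q: "t ` Ar \<subseteq> s ` Ar" "finite Ar" and x: "x \<in> I"
  shows "(\<lambda>q. a * x q) \<in> I"
proof -
  have xc: "x \<in> carrier (path_ring Ar s t)" using ideal.Icarr[OF I x] .
  have "pmul t (\<lambda>p. a * (if snd p = [] \<and> fst p \<in> qverts Ar s then 1 else 0)) x \<in> I"
    using ideal.I_l_closed[OF I x scal_one_carrier[where c=a and s=s and t=t, OF q(2)]] by (simp add: pr_mult)
  then show ?thesis using scal_one_mul[OF q xc] by simp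
qed

lemma idl_comb:
  fixes Ar :: "'a set" and s t :: "'a \<Rightarrow> 'v" and x y :: "'v \<times> 'a list \<Rightarrow> 'k::field"
  assumes I: "ideal I (path_ring Ar s t)" and q: "t ` Ar \<subseteq> s ` Ar" "finite Ar" and x: "x \<in> I" and y: "y \<in> I"
  shows "(\<lambda>q. a * x q + b * y q) \<in> I"
proof -
  have "(\<lambda>q. a * x q) \<in> I" "(\<lambda>q. b * y q) \<in> I" using idl_scal[OF I q] x y by blast+
  then have "(\<lambda>q. a * x q) \<oplus>\<^bsub>path_ring Ar s t\<^esub> (\<lambda>q. b * y q) \<in> I"
    by (rule additive_subgroup.a_closed[OF ideal.axioms(1)[OF I]])
  then show ?thesis by (simp add: pr_add)
qed

lemma idl_zero:
  assumes I: "ideal I (path_ring Ar s t)"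
  shows "(\<lambda>q. 0) \<in> I"
  using additive_subgroup.zero_closed[OF ideal.axioms(1)[OF I]] by (simp add: pr_zero)

context qhom begin
lemma E_rel:
  assumes "valid_path Ar1 s1 t1 P" "valid_path Ar1 s1 t1 P'"
  shows "E (\<lambda>q. pe P q - c * pe P' q) = (\<lambda>q. F (fst P) (snd P) q - c * F (fst P') (snd P') q)"
proof -
  have "E (\<lambda>q. pe P q - c * pe P' q) = (\<lambda>q. E (pe P) q - E (\<lambda>q. c * pe P' q) q)"
    using assms by (intro E_diff pe_carrier sc_carrier)
  also have "\<dots> = (\<lambda>q. F (fst P) (snd P) q - c * F (fst P') (snd P') q)"
    using assms by (simp add: E_scal pe_carrier E_pe)
  finally show ?thesis .
qed
end

lemma cert_TC:
  fixes lam :: "'k::field"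
  assumes lam: "lam \<noteq> 0" and J: "ideal J (path_ring UNIV sS tS)" and gens: "relsS lam \<subseteq> J"
  shows "ext_hom tS tT (phiT lam) (\<lambda>q. pe (2, [al2, al3]) q - inverse (lam ^ 2) * pe (2, [be1, al1, be1]) q) \<in> J"
proof -
  have Sb: "(\<lambda>q. pe (1, [beS, gaS]) q - pe (1, [alS]) q) \<in> J" using gens by (simp add: relsS_def)
  have Sg: "(\<lambda>q. pe (2, [gaS, alS]) q - lam * pe (2, [siS, deS, gaS]) q) \<in> J" using gens by (simp add: relsS_def)
  have h1: "pmul tS (pe (2, [gaS])) (\<lambda>q. pe (1, [beS, gaS]) q - pe (1, [alS]) q) \<in> J"
    by (rule idl_lmul[OF J Sb]) (simp add: valid_path_def qvS)
  have c: "(\<lambda>q. (- inverse (lam ^ 2)) * pmul tS (pe (2, [gaS])) (\<lambda>q. pe (1, [beS, gaS]) q - pe (1, [alS]) q) q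
            + (- inverse (lam ^ 2)) * (pe (2, [gaS, alS]) q - lam * pe (2, [siS, deS, gaS]) q)) \<in> J"
    by (rule idl_comb[OF J tsS fin_arrS h1 Sg])
  have e: "ext_hom tS tT (phiT lam) (\<lambda>q. pe (2, [al2, al3]) q - inverse (lam ^ 2) * pe (2, [be1, al1, be1]) q)
     = (\<lambda>q. (- inverse (lam ^ 2)) * pmul tS (pe (2, [gaS])) (\<lambda>q. pe (1, [beS, gaS]) q - pe (1, [alS]) q) q
            + (- inverse (lam ^ 2)) * (pe (2, [gaS, alS]) q - lam * pe (2, [siS, deS, gaS]) q))"
    apply (simp add: qhom.E_rel[OF qhomT] valid_path_def qvT pmul_lin pe_mul pend_def)
    apply (rule ext)
    apply (simp add: pe_def field_simps power2_eq_square lam)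
    done
  show ?thesis using c e by simp
qed

context qhom begin
lemma E_rel1:
  assumes "valid_path Ar1 s1 t1 P" "valid_path Ar1 s1 t1 P'"
  shows "E (\<lambda>q. pe P q - pe P' q) = (\<lambda>q. F (fst P) (snd P) q - F (fst P') (snd P') q)"
  using E_rel[OF assms, of 1] by simp
end


lemma cert_phi_TA:
  fixes lam :: "'k::field"
  assumes lam: "lam \<noteq> 0" and J: "ideal J (path_ring UNIV sS tS)" and gens: "relsS lam \<subseteq> J"
  shows "ext_hom tS tT (phiT lam) (\<lambda>q. pe (1, [al1, al2]) q - pe (1, [be3]) q) \<in> J"
proof -
  have e: "ext_hom tS tT (phiT lam) (\<lambda>q. pe (1, [al1, al2]) q - pe (1, [be3]) q) = (\<lambda>q. 0)"
    by (simp add: qhom.E_rel[OF qhomT] qhom.E_rel1[OF qhomT] qhom.E_pe[OF qhomT] valid_path_def qvT pmul_lin pe_mul pend_def)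
  show ?thesis unfolding e by (rule idl_zero[OF J])
qed

lemma cert_phi_TC:
  fixes lam :: "'k::field"
  assumes lam: "lam \<noteq> 0" and J: "ideal J (path_ring UNIV sS tS)" and gens: "relsS lam \<subseteq> J"
  shows "ext_hom tS tT (phiT lam) (\<lambda>q. pe (2, [al2, al3]) q - inverse (lam ^ 2) * pe (2, [be1, al1, be1]) q) \<in> J"
proof -
  have m_Sb: "(\<lambda>q. pe (1, [beS, gaS]) q - pe (1, [alS]) q) \<in> J" using gens by (simp add: relsS_def)
  have m_Sg: "(\<lambda>q. pe (2, [gaS, alS]) q - lam * pe (2, [siS, deS, gaS]) q) \<in> J" using gens by (simp add: relsS_def)
  have t0: "(pmul tS (pe (2, [gaS])) (\<lambda>q. pe (1, [beS, gaS]) q - pe (1, [alS]) q)) \<in> J" by (rule idl_lmul[OF J m_Sb]) (simp add: valid_path_def qvS)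
  have t1: "(\<lambda>q. pe (2, [gaS, alS]) q - lam * pe (2, [siS, deS, gaS]) q) \<in> J" by (rule m_Sg)
  have c01: "(\<lambda>q. (- (inverse (lam ^ 2))) * (pmul tS (pe (2, [gaS])) (\<lambda>q. pe (1, [beS, gaS]) q - pe (1, [alS]) q)) q + (- (inverse (lam ^ 2))) * (\<lambda>q. pe (2, [gaS, alS]) q - lam * pe (2, [siS, deS, gaS]) q) q) \<in> J" by (rule idl_comb[OF J tsS fin_arrS t0 t1])
  have e: "ext_hom tS tT (phiT lam) (\<lambda>q. pe (2, [al2, al3]) q - inverse (lam ^ 2) * pe (2, [be1, al1, be1]) q) = (\<lambda>q. (- (inverse (lam ^ 2))) * (pmul tS (pe (2, [gaS])) (\<lambda>q. pe (1, [beS, gaS]) q - pe (1, [alS]) q)) q + (- (inverse (lam ^ 2))) * (\<lambda>q. pe (2, [gaS, alS]) q - lam * pe (2, [siS, deS, gaS]) q) q)"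
    apply (simp add: qhom.E_rel[OF qhomT] qhom.E_rel1[OF qhomT] qhom.E_pe[OF qhomT] valid_path_def qvT pmul_lin pe_mul pend_def)
    apply ((rule ext)?)
    apply ((simp add: pe_def field_simps power2_eq_square power3_eq_cube lam)?)
    done
  show ?thesis unfolding e by (rule c01)
qed

lemma cert_phi_TE:
  fixes lam :: "'k::field"
  assumes lam: "lam \<noteq> 0" and J: "ideal J (path_ring UNIV sS tS)" and gens: "relsS lam \<subseteq> J"
  shows "ext_hom tS tT (phiT lam) (\<lambda>q. pe (3, [al3, al1]) q - pe (3, [be2, al2, be2]) q) \<in> J"
proof -
  have m_Sd: "(\<lambda>q. pe (3, [deS, siS]) q - pe (3, [etS]) q) \<in> J" using gens by (simp add: relsS_def)
  have m_Se: "(\<lambda>q. pe (3, [etS, deS]) q - lam * pe (3, [deS, gaS, beS]) q) \<in> J" using gens by (simp add: relsS_def)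
  have t0: "(\<lambda>q. pe (3, [etS, deS]) q - lam * pe (3, [deS, gaS, beS]) q) \<in> J" by (rule m_Se)
  have t1: "(pmul tS (\<lambda>q. pe (3, [deS, siS]) q - pe (3, [etS]) q) (pe (3, [deS]))) \<in> J" by (rule idl_rmul[OF J m_Sd]) (simp add: valid_path_def qvS)
  have c01: "(\<lambda>q. (- (inverse (lam ^ 2))) * (\<lambda>q. pe (3, [etS, deS]) q - lam * pe (3, [deS, gaS, beS]) q) q + (- (inverse (lam ^ 2))) * (pmul tS (\<lambda>q. pe (3, [deS, siS]) q - pe (3, [etS]) q) (pe (3, [deS]))) q) \<in> J" by (rule idl_comb[OF J tsS fin_arrS t0 t1])
  have e: "ext_hom tS tT (phiT lam) (\<lambda>q. pe (3, [al3, al1]) q - pe (3, [be2, al2, be2]) q) = (\<lambda>q. (- (inverse (lam ^ 2))) * (\<lambda>q. pe (3, [etS, deS]) q - lam * pe (3, [deS, gaS, beS]) q) q + (- (inverse (lam ^ 2))) * (pmul tS (\<lambda>q. pe (3, [deS, siS]) q - pe (3, [etS]) q) (pe (3, [deS]))) q)"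
    apply (simp add: qhom.E_rel[OF qhomT] qhom.E_rel1[OF qhomT] qhom.E_pe[OF qhomT] valid_path_def qvT pmul_lin pe_mul pend_def)
    apply ((rule ext)?)
    apply ((simp add: pe_def field_simps power2_eq_square power3_eq_cube lam)?)
    done
  show ?thesis unfolding e by (rule c01)
qed

lemma cert_phi_TB:
  fixes lam :: "'k::field"
  assumes lam: "lam \<noteq> 0" and J: "ideal J (path_ring UNIV sS tS)" and gens: "relsS lam \<subseteq> J"
  shows "ext_hom tS tT (phiT lam) (\<lambda>q. pe (2, [be1, be3]) q - pe (2, [al2, be2, al2]) q) \<in> J"
proof -
  have m_Sd: "(\<lambda>q. pe (3, [deS, siS]) q - pe (3, [etS]) q) \<in> J" using gens by (simp add: relsS_def)
  have m_Ss: "(\<lambda>q. pe (2, [siS, etS]) q - lam * pe (2, [gaS, beS, siS]) q) \<in> J" using gens by (simp add: relsS_def)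
  have t0: "(pmul tS (pe (2, [siS])) (\<lambda>q. pe (3, [deS, siS]) q - pe (3, [etS]) q)) \<in> J" by (rule idl_lmul[OF J m_Sd]) (simp add: valid_path_def qvS)
  have t1: "(\<lambda>q. pe (2, [siS, etS]) q - lam * pe (2, [gaS, beS, siS]) q) \<in> J" by (rule m_Ss)
  have c01: "(\<lambda>q. (- (inverse lam)) * (pmul tS (pe (2, [siS])) (\<lambda>q. pe (3, [deS, siS]) q - pe (3, [etS]) q)) q + (- (inverse lam)) * (\<lambda>q. pe (2, [siS, etS]) q - lam * pe (2, [gaS, beS, siS]) q) q) \<in> J" by (rule idl_comb[OF J tsS fin_arrS t0 t1])
  have e: "ext_hom tS tT (phiT lam) (\<lambda>q. pe (2, [be1, be3]) q - pe (2, [al2, be2, al2]) q) = (\<lambda>q. (- (inverse lam)) * (pmul tS (pe (2, [siS])) (\<lambda>q. pe (3, [deS, siS]) q - pe (3, [etS]) q)) q + (- (inverse lam)) * (\<lambda>q. pe (2, [siS, etS]) q - lam * pe (2, [gaS, beS, siS]) q) q)"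
    apply (simp add: qhom.E_rel[OF qhomT] qhom.E_rel1[OF qhomT] qhom.E_pe[OF qhomT] valid_path_def qvT pmul_lin pe_mul pend_def)
    apply ((rule ext)?)
    apply ((simp add: pe_def field_simps power2_eq_square power3_eq_cube lam)?)
    done
  show ?thesis unfolding e by (rule c01)
qed

lemma cert_phi_TF:
  fixes lam :: "'k::field"
  assumes lam: "lam \<noteq> 0" and J: "ideal J (path_ring UNIV sS tS)" and gens: "relsS lam \<subseteq> J"
  shows "ext_hom tS tT (phiT lam) (\<lambda>q. pe (1, [be3, be2]) q - inverse (lam ^ 2) * pe (1, [al1, be1, al1]) q) \<in> J"
proof -
  have m_Sa: "(\<lambda>q. pe (1, [alS, beS]) q - lam * pe (1, [beS, siS, deS]) q) \<in> J" using gens by (simp add: relsS_def)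
  have m_Sb: "(\<lambda>q. pe (1, [beS, gaS]) q - pe (1, [alS]) q) \<in> J" using gens by (simp add: relsS_def)
  have t0: "(\<lambda>q. pe (1, [alS, beS]) q - lam * pe (1, [beS, siS, deS]) q) \<in> J" by (rule m_Sa)
  have t1: "(pmul tS (\<lambda>q. pe (1, [beS, gaS]) q - pe (1, [alS]) q) (pe (1, [beS]))) \<in> J" by (rule idl_rmul[OF J m_Sb]) (simp add: valid_path_def qvS)
  have c01: "(\<lambda>q. (- (inverse (lam ^ 2))) * (\<lambda>q. pe (1, [alS, beS]) q - lam * pe (1, [beS, siS, deS]) q) q + (- (inverse (lam ^ 2))) * (pmul tS (\<lambda>q. pe (1, [beS, gaS]) q - pe (1, [alS]) q) (pe (1, [beS]))) q) \<in> J" by (rule idl_comb[OF J tsS fin_arrS t0 t1])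
  have e: "ext_hom tS tT (phiT lam) (\<lambda>q. pe (1, [be3, be2]) q - inverse (lam ^ 2) * pe (1, [al1, be1, al1]) q) = (\<lambda>q. (- (inverse (lam ^ 2))) * (\<lambda>q. pe (1, [alS, beS]) q - lam * pe (1, [beS, siS, deS]) q) q + (- (inverse (lam ^ 2))) * (pmul tS (\<lambda>q. pe (1, [beS, gaS]) q - pe (1, [alS]) q) (pe (1, [beS]))) q)"
    apply (simp add: qhom.E_rel[OF qhomT] qhom.E_rel1[OF qhomT] qhom.E_pe[OF qhomT] valid_path_def qvT pmul_lin pe_mul pend_def)
    apply ((rule ext)?)
    apply ((simp add: pe_def field_simps power2_eq_square power3_eq_cube lam)?)
    done
  show ?thesis unfolding e by (rule c01)
qed

lemma cert_phi_TD:
  fixes lam :: "'k::field"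
  assumes lam: "lam \<noteq> 0" and J: "ideal J (path_ring UNIV sS tS)" and gens: "relsS lam \<subseteq> J"
  shows "ext_hom tS tT (phiT lam) (\<lambda>q. pe (3, [be2, be1]) q - pe (3, [al3]) q) \<in> J"
proof -
  have e: "ext_hom tS tT (phiT lam) (\<lambda>q. pe (3, [be2, be1]) q - pe (3, [al3]) q) = (\<lambda>q. 0)"
    by (simp add: qhom.E_rel[OF qhomT] qhom.E_rel1[OF qhomT] qhom.E_pe[OF qhomT] valid_path_def qvT pmul_lin pe_mul pend_def)
  show ?thesis unfolding e by (rule idl_zero[OF J])
qed

lemma cert_phi_Z2C:
  fixes lam :: "'k::field"
  assumes lam: "lam \<noteq> 0" and J: "ideal J (path_ring UNIV sS tS)" and gens: "relsS lam \<subseteq> J"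
  shows "ext_hom tS tT (phiT lam) (pe (2, [al2, al3, be3])) \<in> J"
proof -
  have m_Sd: "(\<lambda>q. pe (3, [deS, siS]) q - pe (3, [etS]) q) \<in> J" using gens by (simp add: relsS_def)
  have m_Se: "(\<lambda>q. pe (3, [etS, deS]) q - lam * pe (3, [deS, gaS, beS]) q) \<in> J" using gens by (simp add: relsS_def)
  have m_Z2s: "(pe (2, [siS, etS, etS])) \<in> J" using gens by (simp add: relsS_def)
  have t0: "(pmul tS (pe (2, [siS, etS])) (\<lambda>q. pe (3, [deS, siS]) q - pe (3, [etS]) q)) \<in> J" by (rule idl_lmul[OF J m_Sd]) (simp add: valid_path_def qvS)
  have t1: "(pe (2, [siS, etS, etS])) \<in> J" by (rule m_Z2s)
  have t2: "(pmul tS (pe (2, [siS])) (pmul tS (\<lambda>q. pe (3, [etS, deS]) q - lam * pe (3, [deS, gaS, beS]) q) (pe (2, [siS])))) \<in> J" by (rule idl_lmul[OF J idl_rmul[OF J m_Se]]) (simp_all add: valid_path_def qvS)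
  have c01: "(\<lambda>q. inverse (lam ^ 2) * (pmul tS (pe (2, [siS, etS])) (\<lambda>q. pe (3, [deS, siS]) q - pe (3, [etS]) q)) q + inverse (lam ^ 2) * (pe (2, [siS, etS, etS])) q) \<in> J" by (rule idl_comb[OF J tsS fin_arrS t0 t1])
  have c012: "(\<lambda>q. 1 * (\<lambda>q. inverse (lam ^ 2) * (pmul tS (pe (2, [siS, etS])) (\<lambda>q. pe (3, [deS, siS]) q - pe (3, [etS]) q)) q + inverse (lam ^ 2) * (pe (2, [siS, etS, etS])) q) q + (- (inverse (lam ^ 2))) * (pmul tS (pe (2, [siS])) (pmul tS (\<lambda>q. pe (3, [etS, deS]) q - lam * pe (3, [deS, gaS, beS]) q) (pe (2, [siS])))) q) \<in> J" by (rule idl_comb[OF J tsS fin_arrS c01 t2])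
  have e: "ext_hom tS tT (phiT lam) (pe (2, [al2, al3, be3])) = (\<lambda>q. 1 * (\<lambda>q. inverse (lam ^ 2) * (pmul tS (pe (2, [siS, etS])) (\<lambda>q. pe (3, [deS, siS]) q - pe (3, [etS]) q)) q + inverse (lam ^ 2) * (pe (2, [siS, etS, etS])) q) q + (- (inverse (lam ^ 2))) * (pmul tS (pe (2, [siS])) (pmul tS (\<lambda>q. pe (3, [etS, deS]) q - lam * pe (3, [deS, gaS, beS]) q) (pe (2, [siS])))) q)"
    apply (simp add: qhom.E_rel[OF qhomT] qhom.E_rel1[OF qhomT] qhom.E_pe[OF qhomT] valid_path_def qvT pmul_lin pe_mul pend_def)
    apply ((rule ext)?)
    apply ((simp add: pe_def field_simps power2_eq_square power3_eq_cube lam)?)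
    done
  show ?thesis unfolding e by (rule c012)
qed

lemma cert_phi_Z2E:
  fixes lam :: "'k::field"
  assumes lam: "lam \<noteq> 0" and J: "ideal J (path_ring UNIV sS tS)" and gens: "relsS lam \<subseteq> J"
  shows "ext_hom tS tT (phiT lam) (pe (3, [al3, al1, be1])) \<in> J"
proof -
  have m_Sb: "(\<lambda>q. pe (1, [beS, gaS]) q - pe (1, [alS]) q) \<in> J" using gens by (simp add: relsS_def)
  have m_Z3d: "(pe (3, [deS, gaS, alS])) \<in> J" using gens by (simp add: relsS_def)
  have t0: "(pmul tS (pe (3, [deS, gaS])) (\<lambda>q. pe (1, [beS, gaS]) q - pe (1, [alS]) q)) \<in> J" by (rule idl_lmul[OF J m_Sb]) (simp add: valid_path_def qvS)
  have t1: "(pe (3, [deS, gaS, alS])) \<in> J" by (rule m_Z3d)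
  have c01: "(\<lambda>q. inverse lam * (pmul tS (pe (3, [deS, gaS])) (\<lambda>q. pe (1, [beS, gaS]) q - pe (1, [alS]) q)) q + inverse lam * (pe (3, [deS, gaS, alS])) q) \<in> J" by (rule idl_comb[OF J tsS fin_arrS t0 t1])
  have e: "ext_hom tS tT (phiT lam) (pe (3, [al3, al1, be1])) = (\<lambda>q. inverse lam * (pmul tS (pe (3, [deS, gaS])) (\<lambda>q. pe (1, [beS, gaS]) q - pe (1, [alS]) q)) q + inverse lam * (pe (3, [deS, gaS, alS])) q)"
    apply (simp add: qhom.E_rel[OF qhomT] qhom.E_rel1[OF qhomT] qhom.E_pe[OF qhomT] valid_path_def qvT pmul_lin pe_mul pend_def)
    apply ((rule ext)?)
    apply ((simp add: pe_def field_simps power2_eq_square power3_eq_cube lam)?)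
    done
  show ?thesis unfolding e by (rule c01)
qed

lemma cert_phi_Z2B:
  fixes lam :: "'k::field"
  assumes lam: "lam \<noteq> 0" and J: "ideal J (path_ring UNIV sS tS)" and gens: "relsS lam \<subseteq> J"
  shows "ext_hom tS tT (phiT lam) (pe (2, [be1, be3, al3])) \<in> J"
proof -
  have m_Ss: "(\<lambda>q. pe (2, [siS, etS]) q - lam * pe (2, [gaS, beS, siS]) q) \<in> J" using gens by (simp add: relsS_def)
  have m_Z2e: "(pe (3, [etS, deS, gaS])) \<in> J" using gens by (simp add: relsS_def)
  have t0: "(pmul tS (pe (2, [siS])) (pe (3, [etS, deS, gaS]))) \<in> J" by (rule idl_lmul[OF J m_Z2e]) (simp add: valid_path_def qvS)
  have t1: "(pmul tS (\<lambda>q. pe (2, [siS, etS]) q - lam * pe (2, [gaS, beS, siS]) q) (pe (3, [deS, gaS]))) \<in> J" by (rule idl_rmul[OF J m_Ss]) (simp add: valid_path_def qvS)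
  have c01: "(\<lambda>q. inverse (lam ^ 2) * (pmul tS (pe (2, [siS])) (pe (3, [etS, deS, gaS]))) q + (- (inverse (lam ^ 2))) * (pmul tS (\<lambda>q. pe (2, [siS, etS]) q - lam * pe (2, [gaS, beS, siS]) q) (pe (3, [deS, gaS]))) q) \<in> J" by (rule idl_comb[OF J tsS fin_arrS t0 t1])
  have e: "ext_hom tS tT (phiT lam) (pe (2, [be1, be3, al3])) = (\<lambda>q. inverse (lam ^ 2) * (pmul tS (pe (2, [siS])) (pe (3, [etS, deS, gaS]))) q + (- (inverse (lam ^ 2))) * (pmul tS (\<lambda>q. pe (2, [siS, etS]) q - lam * pe (2, [gaS, beS, siS]) q) (pe (3, [deS, gaS]))) q)"
    apply (simp add: qhom.E_rel[OF qhomT] qhom.E_rel1[OF qhomT] qhom.E_pe[OF qhomT] valid_path_def qvT pmul_lin pe_mul pend_def)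
    apply ((rule ext)?)
    apply ((simp add: pe_def field_simps power2_eq_square power3_eq_cube lam)?)
    done
  show ?thesis unfolding e by (rule c01)
qed

lemma cert_phi_Z2F:
  fixes lam :: "'k::field"
  assumes lam: "lam \<noteq> 0" and J: "ideal J (path_ring UNIV sS tS)" and gens: "relsS lam \<subseteq> J"
  shows "ext_hom tS tT (phiT lam) (pe (1, [be3, be2, al2])) \<in> J"
proof -
  have m_Sd: "(\<lambda>q. pe (3, [deS, siS]) q - pe (3, [etS]) q) \<in> J" using gens by (simp add: relsS_def)
  have m_Z3b: "(pe (1, [beS, siS, etS])) \<in> J" using gens by (simp add: relsS_def)
  have t0: "(pmul tS (pe (1, [beS, siS])) (\<lambda>q. pe (3, [deS, siS]) q - pe (3, [etS]) q)) \<in> J" by (rule idl_lmul[OF J m_Sd]) (simp add: valid_path_def qvS)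
  have t1: "(pe (1, [beS, siS, etS])) \<in> J" by (rule m_Z3b)
  have c01: "(\<lambda>q. inverse lam * (pmul tS (pe (1, [beS, siS])) (\<lambda>q. pe (3, [deS, siS]) q - pe (3, [etS]) q)) q + inverse lam * (pe (1, [beS, siS, etS])) q) \<in> J" by (rule idl_comb[OF J tsS fin_arrS t0 t1])
  have e: "ext_hom tS tT (phiT lam) (pe (1, [be3, be2, al2])) = (\<lambda>q. inverse lam * (pmul tS (pe (1, [beS, siS])) (\<lambda>q. pe (3, [deS, siS]) q - pe (3, [etS]) q)) q + inverse lam * (pe (1, [beS, siS, etS])) q)"
    apply (simp add: qhom.E_rel[OF qhomT] qhom.E_rel1[OF qhomT] qhom.E_pe[OF qhomT] valid_path_def qvT pmul_lin pe_mul pend_def)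
    apply ((rule ext)?)
    apply ((simp add: pe_def field_simps power2_eq_square power3_eq_cube lam)?)
    done
  show ?thesis unfolding e by (rule c01)
qed

lemma cert_phi_Z3A:
  fixes lam :: "'k::field"
  assumes lam: "lam \<noteq> 0" and J: "ideal J (path_ring UNIV sS tS)" and gens: "relsS lam \<subseteq> J"
  shows "ext_hom tS tT (phiT lam) (pe (1, [al1, be1, be3])) \<in> J"
proof -
  have m_Sb: "(\<lambda>q. pe (1, [beS, gaS]) q - pe (1, [alS]) q) \<in> J" using gens by (simp add: relsS_def)
  have m_Z2a: "(pe (1, [alS, beS, siS])) \<in> J" using gens by (simp add: relsS_def)
  have t0: "(pmul tS (\<lambda>q. pe (1, [beS, gaS]) q - pe (1, [alS]) q) (pe (1, [beS, siS]))) \<in> J" by (rule idl_rmul[OF J m_Sb]) (simp add: valid_path_def qvS)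
  have t1: "(pe (1, [alS, beS, siS])) \<in> J" by (rule m_Z2a)
  have c01: "(\<lambda>q. 1 * (pmul tS (\<lambda>q. pe (1, [beS, gaS]) q - pe (1, [alS]) q) (pe (1, [beS, siS]))) q + 1 * (pe (1, [alS, beS, siS])) q) \<in> J" by (rule idl_comb[OF J tsS fin_arrS t0 t1])
  have e: "ext_hom tS tT (phiT lam) (pe (1, [al1, be1, be3])) = (\<lambda>q. 1 * (pmul tS (\<lambda>q. pe (1, [beS, gaS]) q - pe (1, [alS]) q) (pe (1, [beS, siS]))) q + 1 * (pe (1, [alS, beS, siS])) q)"
    apply (simp add: qhom.E_rel[OF qhomT] qhom.E_rel1[OF qhomT] qhom.E_pe[OF qhomT] valid_path_def qvT pmul_lin pe_mul pend_def)
    apply ((rule ext)?)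
    apply ((simp add: pe_def field_simps power2_eq_square power3_eq_cube lam)?)
    done
  show ?thesis unfolding e by (rule c01)
qed

lemma cert_phi_Z3E:
  fixes lam :: "'k::field"
  assumes lam: "lam \<noteq> 0" and J: "ideal J (path_ring UNIV sS tS)" and gens: "relsS lam \<subseteq> J"
  shows "ext_hom tS tT (phiT lam) (pe (3, [al3, be3, be2])) \<in> J"
proof -
  have m_Sd: "(\<lambda>q. pe (3, [deS, siS]) q - pe (3, [etS]) q) \<in> J" using gens by (simp add: relsS_def)
  have m_Se: "(\<lambda>q. pe (3, [etS, deS]) q - lam * pe (3, [deS, gaS, beS]) q) \<in> J" using gens by (simp add: relsS_def)
  have m_Z3e: "(pe (3, [etS, etS, deS])) \<in> J" using gens by (simp add: relsS_def)
  have t0: "(pmul tS (pe (3, [etS])) (pmul tS (\<lambda>q. pe (3, [deS, siS]) q - pe (3, [etS]) q) (pe (3, [deS])))) \<in> J" by (rule idl_lmul[OF J idl_rmul[OF J m_Sd]]) (simp_all add: valid_path_def qvS)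
  have t1: "(pe (3, [etS, etS, deS])) \<in> J" by (rule m_Z3e)
  have t2: "(pmul tS (\<lambda>q. pe (3, [etS, deS]) q - lam * pe (3, [deS, gaS, beS]) q) (pe (2, [siS, deS]))) \<in> J" by (rule idl_rmul[OF J m_Se]) (simp add: valid_path_def qvS)
  have c01: "(\<lambda>q. inverse (lam ^ 3) * (pmul tS (pe (3, [etS])) (pmul tS (\<lambda>q. pe (3, [deS, siS]) q - pe (3, [etS]) q) (pe (3, [deS])))) q + inverse (lam ^ 3) * (pe (3, [etS, etS, deS])) q) \<in> J" by (rule idl_comb[OF J tsS fin_arrS t0 t1])
  have c012: "(\<lambda>q. 1 * (\<lambda>q. inverse (lam ^ 3) * (pmul tS (pe (3, [etS])) (pmul tS (\<lambda>q. pe (3, [deS, siS]) q - pe (3, [etS]) q) (pe (3, [deS])))) q + inverse (lam ^ 3) * (pe (3, [etS, etS, deS])) q) q + (- (inverse (lam ^ 3))) * (pmul tS (\<lambda>q. pe (3, [etS, deS]) q - lam * pe (3, [deS, gaS, beS]) q) (pe (2, [siS, deS]))) q) \<in> J" by (rule idl_comb[OF J tsS fin_arrS c01 t2])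
  have e: "ext_hom tS tT (phiT lam) (pe (3, [al3, be3, be2])) = (\<lambda>q. 1 * (\<lambda>q. inverse (lam ^ 3) * (pmul tS (pe (3, [etS])) (pmul tS (\<lambda>q. pe (3, [deS, siS]) q - pe (3, [etS]) q) (pe (3, [deS])))) q + inverse (lam ^ 3) * (pe (3, [etS, etS, deS])) q) q + (- (inverse (lam ^ 3))) * (pmul tS (\<lambda>q. pe (3, [etS, deS]) q - lam * pe (3, [deS, gaS, beS]) q) (pe (2, [siS, deS]))) q)"
    apply (simp add: qhom.E_rel[OF qhomT] qhom.E_rel1[OF qhomT] qhom.E_pe[OF qhomT] valid_path_def qvT pmul_lin pe_mul pend_def)
    apply ((rule ext)?)
    apply ((simp add: pe_def field_simps power2_eq_square power3_eq_cube lam)?)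
    done
  show ?thesis unfolding e by (rule c012)
qed

lemma cert_phi_Z3D:
  fixes lam :: "'k::field"
  assumes lam: "lam \<noteq> 0" and J: "ideal J (path_ring UNIV sS tS)" and gens: "relsS lam \<subseteq> J"
  shows "ext_hom tS tT (phiT lam) (pe (3, [be2, al2, al3])) \<in> J"
proof -
  have m_Sd: "(\<lambda>q. pe (3, [deS, siS]) q - pe (3, [etS]) q) \<in> J" using gens by (simp add: relsS_def)
  have m_Z2e: "(pe (3, [etS, deS, gaS])) \<in> J" using gens by (simp add: relsS_def)
  have t0: "(pmul tS (\<lambda>q. pe (3, [deS, siS]) q - pe (3, [etS]) q) (pe (3, [deS, gaS]))) \<in> J" by (rule idl_rmul[OF J m_Sd]) (simp add: valid_path_def qvS)
  have t1: "(pe (3, [etS, deS, gaS])) \<in> J" by (rule m_Z2e)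
  have c01: "(\<lambda>q. inverse (lam ^ 2) * (pmul tS (\<lambda>q. pe (3, [deS, siS]) q - pe (3, [etS]) q) (pe (3, [deS, gaS]))) q + inverse (lam ^ 2) * (pe (3, [etS, deS, gaS])) q) \<in> J" by (rule idl_comb[OF J tsS fin_arrS t0 t1])
  have e: "ext_hom tS tT (phiT lam) (pe (3, [be2, al2, al3])) = (\<lambda>q. inverse (lam ^ 2) * (pmul tS (\<lambda>q. pe (3, [deS, siS]) q - pe (3, [etS]) q) (pe (3, [deS, gaS]))) q + inverse (lam ^ 2) * (pe (3, [etS, deS, gaS])) q)"
    apply (simp add: qhom.E_rel[OF qhomT] qhom.E_rel1[OF qhomT] qhom.E_pe[OF qhomT] valid_path_def qvT pmul_lin pe_mul pend_def)
    apply ((rule ext)?)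
    apply ((simp add: pe_def field_simps power2_eq_square power3_eq_cube lam)?)
    done
  show ?thesis unfolding e by (rule c01)
qed

lemma cert_phi_Z3F:
  fixes lam :: "'k::field"
  assumes lam: "lam \<noteq> 0" and J: "ideal J (path_ring UNIV sS tS)" and gens: "relsS lam \<subseteq> J"
  shows "ext_hom tS tT (phiT lam) (pe (1, [be3, al3, al1])) \<in> J"
proof -
  have m_Sa: "(\<lambda>q. pe (1, [alS, beS]) q - lam * pe (1, [beS, siS, deS]) q) \<in> J" using gens by (simp add: relsS_def)
  have m_Sb: "(\<lambda>q. pe (1, [beS, gaS]) q - pe (1, [alS]) q) \<in> J" using gens by (simp add: relsS_def)
  have m_Z3a: "(pe (1, [alS, alS, beS])) \<in> J" using gens by (simp add: relsS_def)
  have t0: "(pmul tS (pe (1, [alS])) (pmul tS (\<lambda>q. pe (1, [beS, gaS]) q - pe (1, [alS]) q) (pe (1, [beS])))) \<in> J" by (rule idl_lmul[OF J idl_rmul[OF J m_Sb]]) (simp_all add: valid_path_def qvS)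
  have t1: "(pe (1, [alS, alS, beS])) \<in> J" by (rule m_Z3a)
  have t2: "(pmul tS (\<lambda>q. pe (1, [alS, beS]) q - lam * pe (1, [beS, siS, deS]) q) (pe (2, [gaS, beS]))) \<in> J" by (rule idl_rmul[OF J m_Sa]) (simp add: valid_path_def qvS)
  have c01: "(\<lambda>q. inverse (lam ^ 2) * (pmul tS (pe (1, [alS])) (pmul tS (\<lambda>q. pe (1, [beS, gaS]) q - pe (1, [alS]) q) (pe (1, [beS])))) q + inverse (lam ^ 2) * (pe (1, [alS, alS, beS])) q) \<in> J" by (rule idl_comb[OF J tsS fin_arrS t0 t1])
  have c012: "(\<lambda>q. 1 * (\<lambda>q. inverse (lam ^ 2) * (pmul tS (pe (1, [alS])) (pmul tS (\<lambda>q. pe (1, [beS, gaS]) q - pe (1, [alS]) q) (pe (1, [beS])))) q + inverse (lam ^ 2) * (pe (1, [alS, alS, beS])) q) q + (- (inverse (lam ^ 2))) * (pmul tS (\<lambda>q. pe (1, [alS, beS]) q - lam * pe (1, [beS, siS, deS]) q) (pe (2, [gaS, beS]))) q) \<in> J" by (rule idl_comb[OF J tsS fin_arrS c01 t2])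
  have e: "ext_hom tS tT (phiT lam) (pe (1, [be3, al3, al1])) = (\<lambda>q. 1 * (\<lambda>q. inverse (lam ^ 2) * (pmul tS (pe (1, [alS])) (pmul tS (\<lambda>q. pe (1, [beS, gaS]) q - pe (1, [alS]) q) (pe (1, [beS])))) q + inverse (lam ^ 2) * (pe (1, [alS, alS, beS])) q) q + (- (inverse (lam ^ 2))) * (pmul tS (\<lambda>q. pe (1, [alS, beS]) q - lam * pe (1, [beS, siS, deS]) q) (pe (2, [gaS, beS]))) q)"
    apply (simp add: qhom.E_rel[OF qhomT] qhom.E_rel1[OF qhomT] qhom.E_pe[OF qhomT] valid_path_def qvT pmul_lin pe_mul pend_def)
    apply ((rule ext)?)
    apply ((simp add: pe_def field_simps power2_eq_square power3_eq_cube lam)?)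
    done
  show ?thesis unfolding e by (rule c012)
qed

lemma cert_psi_Sa:
  fixes lam :: "'k::field"
  assumes lam: "lam \<noteq> 0" and I: "ideal I (path_ring UNIV sT tT)" and gens: "relsT (inverse (lam ^ 2)) \<subseteq> I"
  shows "ext_hom tT tS (psiS lam) (\<lambda>q. pe (1, [alS, beS]) q - lam * pe (1, [beS, siS, deS]) q) \<in> I"
proof -
  have m_TA: "(\<lambda>q. pe (1, [al1, al2]) q - pe (1, [be3]) q) \<in> I" using gens by (simp add: relsT_def)
  have m_TF: "(\<lambda>q. pe (1, [be3, be2]) q - inverse (lam ^ 2) * pe (1, [al1, be1, al1]) q) \<in> I" using gens by (simp add: relsT_def)
  have t0: "(pmul tT (\<lambda>q. pe (1, [al1, al2]) q - pe (1, [be3]) q) (pe (3, [be2]))) \<in> I" by (rule idl_rmul[OF I m_TA]) (simp add: valid_path_def qvT)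
  have t1: "(\<lambda>q. pe (1, [be3, be2]) q - inverse (lam ^ 2) * pe (1, [al1, be1, al1]) q) \<in> I" by (rule m_TF)
  have c01: "(\<lambda>q. (- (lam ^ 2)) * (pmul tT (\<lambda>q. pe (1, [al1, al2]) q - pe (1, [be3]) q) (pe (3, [be2]))) q + (- (lam ^ 2)) * (\<lambda>q. pe (1, [be3, be2]) q - inverse (lam ^ 2) * pe (1, [al1, be1, al1]) q) q) \<in> I" by (rule idl_comb[OF I tsT fin_arrT t0 t1])
  have e: "ext_hom tT tS (psiS lam) (\<lambda>q. pe (1, [alS, beS]) q - lam * pe (1, [beS, siS, deS]) q) = (\<lambda>q. (- (lam ^ 2)) * (pmul tT (\<lambda>q. pe (1, [al1, al2]) q - pe (1, [be3]) q) (pe (3, [be2]))) q + (- (lam ^ 2)) * (\<lambda>q. pe (1, [be3, be2]) q - inverse (lam ^ 2) * pe (1, [al1, be1, al1]) q) q)"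
    apply (simp add: qhom.E_rel[OF qhomS] qhom.E_rel1[OF qhomS] qhom.E_pe[OF qhomS] valid_path_def qvS pmul_lin pe_mul pend_def)
    apply ((rule ext)?)
    apply ((simp add: pe_def field_simps power2_eq_square power3_eq_cube lam)?)
    done
  show ?thesis unfolding e by (rule c01)
qed

lemma cert_psi_Sb:
  fixes lam :: "'k::field"
  assumes lam: "lam \<noteq> 0" and I: "ideal I (path_ring UNIV sT tT)" and gens: "relsT (inverse (lam ^ 2)) \<subseteq> I"
  shows "ext_hom tT tS (psiS lam) (\<lambda>q. pe (1, [beS, gaS]) q - pe (1, [alS]) q) \<in> I"
proof -
  have e: "ext_hom tT tS (psiS lam) (\<lambda>q. pe (1, [beS, gaS]) q - pe (1, [alS]) q) = (\<lambda>q. 0)"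
    by (simp add: qhom.E_rel[OF qhomS] qhom.E_rel1[OF qhomS] qhom.E_pe[OF qhomS] valid_path_def qvS pmul_lin pe_mul pend_def)
  show ?thesis unfolding e by (rule idl_zero[OF I])
qed

lemma cert_psi_Sg:
  fixes lam :: "'k::field"
  assumes lam: "lam \<noteq> 0" and I: "ideal I (path_ring UNIV sT tT)" and gens: "relsT (inverse (lam ^ 2)) \<subseteq> I"
  shows "ext_hom tT tS (psiS lam) (\<lambda>q. pe (2, [gaS, alS]) q - lam * pe (2, [siS, deS, gaS]) q) \<in> I"
proof -
  have m_TC: "(\<lambda>q. pe (2, [al2, al3]) q - inverse (lam ^ 2) * pe (2, [be1, al1, be1]) q) \<in> I" using gens by (simp add: relsT_def)
  have m_TD: "(\<lambda>q. pe (3, [be2, be1]) q - pe (3, [al3]) q) \<in> I" using gens by (simp add: relsT_def)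
  have t0: "(\<lambda>q. pe (2, [al2, al3]) q - inverse (lam ^ 2) * pe (2, [be1, al1, be1]) q) \<in> I" by (rule m_TC)
  have t1: "(pmul tT (pe (2, [al2])) (\<lambda>q. pe (3, [be2, be1]) q - pe (3, [al3]) q)) \<in> I" by (rule idl_lmul[OF I m_TD]) (simp add: valid_path_def qvT)
  have c01: "(\<lambda>q. (- (lam ^ 2)) * (\<lambda>q. pe (2, [al2, al3]) q - inverse (lam ^ 2) * pe (2, [be1, al1, be1]) q) q + (- (lam ^ 2)) * (pmul tT (pe (2, [al2])) (\<lambda>q. pe (3, [be2, be1]) q - pe (3, [al3]) q)) q) \<in> I" by (rule idl_comb[OF I tsT fin_arrT t0 t1])
  have e: "ext_hom tT tS (psiS lam) (\<lambda>q. pe (2, [gaS, alS]) q - lam * pe (2, [siS, deS, gaS]) q) = (\<lambda>q. (- (lam ^ 2)) * (\<lambda>q. pe (2, [al2, al3]) q - inverse (lam ^ 2) * pe (2, [be1, al1, be1]) q) q + (- (lam ^ 2)) * (pmul tT (pe (2, [al2])) (\<lambda>q. pe (3, [be2, be1]) q - pe (3, [al3]) q)) q)"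
    apply (simp add: qhom.E_rel[OF qhomS] qhom.E_rel1[OF qhomS] qhom.E_pe[OF qhomS] valid_path_def qvS pmul_lin pe_mul pend_def)
    apply ((rule ext)?)
    apply ((simp add: pe_def field_simps power2_eq_square power3_eq_cube lam)?)
    done
  show ?thesis unfolding e by (rule c01)
qed

lemma cert_psi_Se:
  fixes lam :: "'k::field"
  assumes lam: "lam \<noteq> 0" and I: "ideal I (path_ring UNIV sT tT)" and gens: "relsT (inverse (lam ^ 2)) \<subseteq> I"
  shows "ext_hom tT tS (psiS lam) (\<lambda>q. pe (3, [etS, deS]) q - lam * pe (3, [deS, gaS, beS]) q) \<in> I"
proof -
  have m_TD: "(\<lambda>q. pe (3, [be2, be1]) q - pe (3, [al3]) q) \<in> I" using gens by (simp add: relsT_def)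
  have m_TE: "(\<lambda>q. pe (3, [al3, al1]) q - pe (3, [be2, al2, be2]) q) \<in> I" using gens by (simp add: relsT_def)
  have t0: "(\<lambda>q. pe (3, [al3, al1]) q - pe (3, [be2, al2, be2]) q) \<in> I" by (rule m_TE)
  have t1: "(pmul tT (\<lambda>q. pe (3, [be2, be1]) q - pe (3, [al3]) q) (pe (1, [al1]))) \<in> I" by (rule idl_rmul[OF I m_TD]) (simp add: valid_path_def qvT)
  have c01: "(\<lambda>q. (- (lam ^ 2)) * (\<lambda>q. pe (3, [al3, al1]) q - pe (3, [be2, al2, be2]) q) q + (- (lam ^ 2)) * (pmul tT (\<lambda>q. pe (3, [be2, be1]) q - pe (3, [al3]) q) (pe (1, [al1]))) q) \<in> I" by (rule idl_comb[OF I tsT fin_arrT t0 t1])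
  have e: "ext_hom tT tS (psiS lam) (\<lambda>q. pe (3, [etS, deS]) q - lam * pe (3, [deS, gaS, beS]) q) = (\<lambda>q. (- (lam ^ 2)) * (\<lambda>q. pe (3, [al3, al1]) q - pe (3, [be2, al2, be2]) q) q + (- (lam ^ 2)) * (pmul tT (\<lambda>q. pe (3, [be2, be1]) q - pe (3, [al3]) q) (pe (1, [al1]))) q)"
    apply (simp add: qhom.E_rel[OF qhomS] qhom.E_rel1[OF qhomS] qhom.E_pe[OF qhomS] valid_path_def qvS pmul_lin pe_mul pend_def)
    apply ((rule ext)?)
    apply ((simp add: pe_def field_simps power2_eq_square power3_eq_cube lam)?)
    done
  show ?thesis unfolding e by (rule c01)
qed

lemma cert_psi_Sd:
  fixes lam :: "'k::field"
  assumes lam: "lam \<noteq> 0" and I: "ideal I (path_ring UNIV sT tT)" and gens: "relsT (inverse (lam ^ 2)) \<subseteq> I"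
  shows "ext_hom tT tS (psiS lam) (\<lambda>q. pe (3, [deS, siS]) q - pe (3, [etS]) q) \<in> I"
proof -
  have e: "ext_hom tT tS (psiS lam) (\<lambda>q. pe (3, [deS, siS]) q - pe (3, [etS]) q) = (\<lambda>q. 0)"
    by (simp add: qhom.E_rel[OF qhomS] qhom.E_rel1[OF qhomS] qhom.E_pe[OF qhomS] valid_path_def qvS pmul_lin pe_mul pend_def)
  show ?thesis unfolding e by (rule idl_zero[OF I])
qed

lemma cert_psi_Ss:
  fixes lam :: "'k::field"
  assumes lam: "lam \<noteq> 0" and I: "ideal I (path_ring UNIV sT tT)" and gens: "relsT (inverse (lam ^ 2)) \<subseteq> I"
  shows "ext_hom tT tS (psiS lam) (\<lambda>q. pe (2, [siS, etS]) q - lam * pe (2, [gaS, beS, siS]) q) \<in> I"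
proof -
  have m_TA: "(\<lambda>q. pe (1, [al1, al2]) q - pe (1, [be3]) q) \<in> I" using gens by (simp add: relsT_def)
  have m_TB: "(\<lambda>q. pe (2, [be1, be3]) q - pe (2, [al2, be2, al2]) q) \<in> I" using gens by (simp add: relsT_def)
  have t0: "(pmul tT (pe (2, [be1])) (\<lambda>q. pe (1, [al1, al2]) q - pe (1, [be3]) q)) \<in> I" by (rule idl_lmul[OF I m_TA]) (simp add: valid_path_def qvT)
  have t1: "(\<lambda>q. pe (2, [be1, be3]) q - pe (2, [al2, be2, al2]) q) \<in> I" by (rule m_TB)
  have c01: "(\<lambda>q. (- (lam)) * (pmul tT (pe (2, [be1])) (\<lambda>q. pe (1, [al1, al2]) q - pe (1, [be3]) q)) q + (- (lam)) * (\<lambda>q. pe (2, [be1, be3]) q - pe (2, [al2, be2, al2]) q) q) \<in> I" by (rule idl_comb[OF I tsT fin_arrT t0 t1])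
  have e: "ext_hom tT tS (psiS lam) (\<lambda>q. pe (2, [siS, etS]) q - lam * pe (2, [gaS, beS, siS]) q) = (\<lambda>q. (- (lam)) * (pmul tT (pe (2, [be1])) (\<lambda>q. pe (1, [al1, al2]) q - pe (1, [be3]) q)) q + (- (lam)) * (\<lambda>q. pe (2, [be1, be3]) q - pe (2, [al2, be2, al2]) q) q)"
    apply (simp add: qhom.E_rel[OF qhomS] qhom.E_rel1[OF qhomS] qhom.E_pe[OF qhomS] valid_path_def qvS pmul_lin pe_mul pend_def)
    apply ((rule ext)?)
    apply ((simp add: pe_def field_simps power2_eq_square power3_eq_cube lam)?)
    done
  show ?thesis unfolding e by (rule c01)
qed

lemma cert_psi_Z2a:
  fixes lam :: "'k::field"
  assumes lam: "lam \<noteq> 0" and I: "ideal I (path_ring UNIV sT tT)" and gens: "relsT (inverse (lam ^ 2)) \<subseteq> I"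
  shows "ext_hom tT tS (psiS lam) (pe (1, [alS, beS, siS])) \<in> I"
proof -
  have m_TA: "(\<lambda>q. pe (1, [al1, al2]) q - pe (1, [be3]) q) \<in> I" using gens by (simp add: relsT_def)
  have m_Z3A: "(pe (1, [al1, be1, be3])) \<in> I" using gens by (simp add: relsT_def)
  have t0: "(pmul tT (pe (1, [al1, be1])) (\<lambda>q. pe (1, [al1, al2]) q - pe (1, [be3]) q)) \<in> I" by (rule idl_lmul[OF I m_TA]) (simp add: valid_path_def qvT)
  have t1: "(pe (1, [al1, be1, be3])) \<in> I" by (rule m_Z3A)
  have c01: "(\<lambda>q. 1 * (pmul tT (pe (1, [al1, be1])) (\<lambda>q. pe (1, [al1, al2]) q - pe (1, [be3]) q)) q + 1 * (pe (1, [al1, be1, be3])) q) \<in> I" by (rule idl_comb[OF I tsT fin_arrT t0 t1])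
  have e: "ext_hom tT tS (psiS lam) (pe (1, [alS, beS, siS])) = (\<lambda>q. 1 * (pmul tT (pe (1, [al1, be1])) (\<lambda>q. pe (1, [al1, al2]) q - pe (1, [be3]) q)) q + 1 * (pe (1, [al1, be1, be3])) q)"
    apply (simp add: qhom.E_rel[OF qhomS] qhom.E_rel1[OF qhomS] qhom.E_pe[OF qhomS] valid_path_def qvS pmul_lin pe_mul pend_def)
    apply ((rule ext)?)
    apply ((simp add: pe_def field_simps power2_eq_square power3_eq_cube lam)?)
    done
  show ?thesis unfolding e by (rule c01)
qed

lemma cert_psi_Z2g:
  fixes lam :: "'k::field"
  assumes lam: "lam \<noteq> 0" and I: "ideal I (path_ring UNIV sT tT)" and gens: "relsT (inverse (lam ^ 2)) \<subseteq> I"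
  shows "ext_hom tT tS (psiS lam) (pe (2, [gaS, alS, alS])) \<in> I"
proof -
  have m_TC: "(\<lambda>q. pe (2, [al2, al3]) q - inverse (lam ^ 2) * pe (2, [be1, al1, be1]) q) \<in> I" using gens by (simp add: relsT_def)
  have m_Z2E: "(pe (3, [al3, al1, be1])) \<in> I" using gens by (simp add: relsT_def)
  have t0: "(pmul tT (pe (2, [al2])) (pe (3, [al3, al1, be1]))) \<in> I" by (rule idl_lmul[OF I m_Z2E]) (simp add: valid_path_def qvT)
  have t1: "(pmul tT (\<lambda>q. pe (2, [al2, al3]) q - inverse (lam ^ 2) * pe (2, [be1, al1, be1]) q) (pe (1, [al1, be1]))) \<in> I" by (rule idl_rmul[OF I m_TC]) (simp add: valid_path_def qvT)
  have c01: "(\<lambda>q. lam ^ 2 * (pmul tT (pe (2, [al2])) (pe (3, [al3, al1, be1]))) q + (- (lam ^ 2)) * (pmul tT (\<lambda>q. pe (2, [al2, al3]) q - inverse (lam ^ 2) * pe (2, [be1, al1, be1]) q) (pe (1, [al1, be1]))) q) \<in> I" by (rule idl_comb[OF I tsT fin_arrT t0 t1])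
  have e: "ext_hom tT tS (psiS lam) (pe (2, [gaS, alS, alS])) = (\<lambda>q. lam ^ 2 * (pmul tT (pe (2, [al2])) (pe (3, [al3, al1, be1]))) q + (- (lam ^ 2)) * (pmul tT (\<lambda>q. pe (2, [al2, al3]) q - inverse (lam ^ 2) * pe (2, [be1, al1, be1]) q) (pe (1, [al1, be1]))) q)"
    apply (simp add: qhom.E_rel[OF qhomS] qhom.E_rel1[OF qhomS] qhom.E_pe[OF qhomS] valid_path_def qvS pmul_lin pe_mul pend_def)
    apply ((rule ext)?)
    apply ((simp add: pe_def field_simps power2_eq_square power3_eq_cube lam)?)
    done
  show ?thesis unfolding e by (rule c01)
qed

lemma cert_psi_Z2e:
  fixes lam :: "'k::field"
  assumes lam: "lam \<noteq> 0" and I: "ideal I (path_ring UNIV sT tT)" and gens: "relsT (inverse (lam ^ 2)) \<subseteq> I"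
  shows "ext_hom tT tS (psiS lam) (pe (3, [etS, deS, gaS])) \<in> I"
proof -
  have m_TD: "(\<lambda>q. pe (3, [be2, be1]) q - pe (3, [al3]) q) \<in> I" using gens by (simp add: relsT_def)
  have m_Z3D: "(pe (3, [be2, al2, al3])) \<in> I" using gens by (simp add: relsT_def)
  have t0: "(pmul tT (pe (3, [be2, al2])) (\<lambda>q. pe (3, [be2, be1]) q - pe (3, [al3]) q)) \<in> I" by (rule idl_lmul[OF I m_TD]) (simp add: valid_path_def qvT)
  have t1: "(pe (3, [be2, al2, al3])) \<in> I" by (rule m_Z3D)
  have c01: "(\<lambda>q. lam ^ 2 * (pmul tT (pe (3, [be2, al2])) (\<lambda>q. pe (3, [be2, be1]) q - pe (3, [al3]) q)) q + lam ^ 2 * (pe (3, [be2, al2, al3])) q) \<in> I" by (rule idl_comb[OF I tsT fin_arrT t0 t1])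
  have e: "ext_hom tT tS (psiS lam) (pe (3, [etS, deS, gaS])) = (\<lambda>q. lam ^ 2 * (pmul tT (pe (3, [be2, al2])) (\<lambda>q. pe (3, [be2, be1]) q - pe (3, [al3]) q)) q + lam ^ 2 * (pe (3, [be2, al2, al3])) q)"
    apply (simp add: qhom.E_rel[OF qhomS] qhom.E_rel1[OF qhomS] qhom.E_pe[OF qhomS] valid_path_def qvS pmul_lin pe_mul pend_def)
    apply ((rule ext)?)
    apply ((simp add: pe_def field_simps power2_eq_square power3_eq_cube lam)?)
    done
  show ?thesis unfolding e by (rule c01)
qed

lemma cert_psi_Z2s:
  fixes lam :: "'k::field"
  assumes lam: "lam \<noteq> 0" and I: "ideal I (path_ring UNIV sT tT)" and gens: "relsT (inverse (lam ^ 2)) \<subseteq> I"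
  shows "ext_hom tT tS (psiS lam) (pe (2, [siS, etS, etS])) \<in> I"
proof -
  have m_TB: "(\<lambda>q. pe (2, [be1, be3]) q - pe (2, [al2, be2, al2]) q) \<in> I" using gens by (simp add: relsT_def)
  have m_Z2F: "(pe (1, [be3, be2, al2])) \<in> I" using gens by (simp add: relsT_def)
  have t0: "(pmul tT (pe (2, [be1])) (pe (1, [be3, be2, al2]))) \<in> I" by (rule idl_lmul[OF I m_Z2F]) (simp add: valid_path_def qvT)
  have t1: "(pmul tT (\<lambda>q. pe (2, [be1, be3]) q - pe (2, [al2, be2, al2]) q) (pe (3, [be2, al2]))) \<in> I" by (rule idl_rmul[OF I m_TB]) (simp add: valid_path_def qvT)
  have c01: "(\<lambda>q. lam ^ 2 * (pmul tT (pe (2, [be1])) (pe (1, [be3, be2, al2]))) q + (- (lam ^ 2)) * (pmul tT (\<lambda>q. pe (2, [be1, be3]) q - pe (2, [al2, be2, al2]) q) (pe (3, [be2, al2]))) q) \<in> I" by (rule idl_comb[OF I tsT fin_arrT t0 t1])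
  have e: "ext_hom tT tS (psiS lam) (pe (2, [siS, etS, etS])) = (\<lambda>q. lam ^ 2 * (pmul tT (pe (2, [be1])) (pe (1, [be3, be2, al2]))) q + (- (lam ^ 2)) * (pmul tT (\<lambda>q. pe (2, [be1, be3]) q - pe (2, [al2, be2, al2]) q) (pe (3, [be2, al2]))) q)"
    apply (simp add: qhom.E_rel[OF qhomS] qhom.E_rel1[OF qhomS] qhom.E_pe[OF qhomS] valid_path_def qvS pmul_lin pe_mul pend_def)
    apply ((rule ext)?)
    apply ((simp add: pe_def field_simps power2_eq_square power3_eq_cube lam)?)
    done
  show ?thesis unfolding e by (rule c01)
qed

lemma cert_psi_Z3a:
  fixes lam :: "'k::field"
  assumes lam: "lam \<noteq> 0" and I: "ideal I (path_ring UNIV sT tT)" and gens: "relsT (inverse (lam ^ 2)) \<subseteq> I"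
  shows "ext_hom tT tS (psiS lam) (pe (1, [alS, alS, beS])) \<in> I"
proof -
  have m_TD: "(\<lambda>q. pe (3, [be2, be1]) q - pe (3, [al3]) q) \<in> I" using gens by (simp add: relsT_def)
  have m_TF: "(\<lambda>q. pe (1, [be3, be2]) q - inverse (lam ^ 2) * pe (1, [al1, be1, al1]) q) \<in> I" using gens by (simp add: relsT_def)
  have m_Z3F: "(pe (1, [be3, al3, al1])) \<in> I" using gens by (simp add: relsT_def)
  have t0: "(pmul tT (pe (1, [be3])) (pmul tT (\<lambda>q. pe (3, [be2, be1]) q - pe (3, [al3]) q) (pe (1, [al1])))) \<in> I" by (rule idl_lmul[OF I idl_rmul[OF I m_TD]]) (simp_all add: valid_path_def qvT)
  have t1: "(pe (1, [be3, al3, al1])) \<in> I" by (rule m_Z3F)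
  have t2: "(pmul tT (\<lambda>q. pe (1, [be3, be2]) q - inverse (lam ^ 2) * pe (1, [al1, be1, al1]) q) (pe (2, [be1, al1]))) \<in> I" by (rule idl_rmul[OF I m_TF]) (simp add: valid_path_def qvT)
  have c01: "(\<lambda>q. lam ^ 2 * (pmul tT (pe (1, [be3])) (pmul tT (\<lambda>q. pe (3, [be2, be1]) q - pe (3, [al3]) q) (pe (1, [al1])))) q + lam ^ 2 * (pe (1, [be3, al3, al1])) q) \<in> I" by (rule idl_comb[OF I tsT fin_arrT t0 t1])
  have c012: "(\<lambda>q. 1 * (\<lambda>q. lam ^ 2 * (pmul tT (pe (1, [be3])) (pmul tT (\<lambda>q. pe (3, [be2, be1]) q - pe (3, [al3]) q) (pe (1, [al1])))) q + lam ^ 2 * (pe (1, [be3, al3, al1])) q) q + (- (lam ^ 2)) * (pmul tT (\<lambda>q. pe (1, [be3, be2]) q - inverse (lam ^ 2) * pe (1, [al1, be1, al1]) q) (pe (2, [be1, al1]))) q) \<in> I" by (rule idl_comb[OF I tsT fin_arrT c01 t2])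
  have e: "ext_hom tT tS (psiS lam) (pe (1, [alS, alS, beS])) = (\<lambda>q. 1 * (\<lambda>q. lam ^ 2 * (pmul tT (pe (1, [be3])) (pmul tT (\<lambda>q. pe (3, [be2, be1]) q - pe (3, [al3]) q) (pe (1, [al1])))) q + lam ^ 2 * (pe (1, [be3, al3, al1])) q) q + (- (lam ^ 2)) * (pmul tT (\<lambda>q. pe (1, [be3, be2]) q - inverse (lam ^ 2) * pe (1, [al1, be1, al1]) q) (pe (2, [be1, al1]))) q)"
    apply (simp add: qhom.E_rel[OF qhomS] qhom.E_rel1[OF qhomS] qhom.E_pe[OF qhomS] valid_path_def qvS pmul_lin pe_mul pend_def)
    apply ((rule ext)?)
    apply ((simp add: pe_def field_simps power2_eq_square power3_eq_cube lam)?)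
    done
  show ?thesis unfolding e by (rule c012)
qed

lemma cert_psi_Z3b:
  fixes lam :: "'k::field"
  assumes lam: "lam \<noteq> 0" and I: "ideal I (path_ring UNIV sT tT)" and gens: "relsT (inverse (lam ^ 2)) \<subseteq> I"
  shows "ext_hom tT tS (psiS lam) (pe (1, [beS, siS, etS])) \<in> I"
proof -
  have m_TA: "(\<lambda>q. pe (1, [al1, al2]) q - pe (1, [be3]) q) \<in> I" using gens by (simp add: relsT_def)
  have m_Z2F: "(pe (1, [be3, be2, al2])) \<in> I" using gens by (simp add: relsT_def)
  have t0: "(pmul tT (\<lambda>q. pe (1, [al1, al2]) q - pe (1, [be3]) q) (pe (3, [be2, al2]))) \<in> I" by (rule idl_rmul[OF I m_TA]) (simp add: valid_path_def qvT)
  have t1: "(pe (1, [be3, be2, al2])) \<in> I" by (rule m_Z2F)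
  have c01: "(\<lambda>q. lam * (pmul tT (\<lambda>q. pe (1, [al1, al2]) q - pe (1, [be3]) q) (pe (3, [be2, al2]))) q + lam * (pe (1, [be3, be2, al2])) q) \<in> I" by (rule idl_comb[OF I tsT fin_arrT t0 t1])
  have e: "ext_hom tT tS (psiS lam) (pe (1, [beS, siS, etS])) = (\<lambda>q. lam * (pmul tT (\<lambda>q. pe (1, [al1, al2]) q - pe (1, [be3]) q) (pe (3, [be2, al2]))) q + lam * (pe (1, [be3, be2, al2])) q)"
    apply (simp add: qhom.E_rel[OF qhomS] qhom.E_rel1[OF qhomS] qhom.E_pe[OF qhomS] valid_path_def qvS pmul_lin pe_mul pend_def)
    apply ((rule ext)?)
    apply ((simp add: pe_def field_simps power2_eq_square power3_eq_cube lam)?)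
    done
  show ?thesis unfolding e by (rule c01)
qed

lemma cert_psi_Z3e:
  fixes lam :: "'k::field"
  assumes lam: "lam \<noteq> 0" and I: "ideal I (path_ring UNIV sT tT)" and gens: "relsT (inverse (lam ^ 2)) \<subseteq> I"
  shows "ext_hom tT tS (psiS lam) (pe (3, [etS, etS, deS])) \<in> I"
proof -
  have m_TA: "(\<lambda>q. pe (1, [al1, al2]) q - pe (1, [be3]) q) \<in> I" using gens by (simp add: relsT_def)
  have m_TE: "(\<lambda>q. pe (3, [al3, al1]) q - pe (3, [be2, al2, be2]) q) \<in> I" using gens by (simp add: relsT_def)
  have m_Z3E: "(pe (3, [al3, be3, be2])) \<in> I" using gens by (simp add: relsT_def)
  have t0: "(pmul tT (pe (3, [al3])) (pmul tT (\<lambda>q. pe (1, [al1, al2]) q - pe (1, [be3]) q) (pe (3, [be2])))) \<in> I" by (rule idl_lmul[OF I idl_rmul[OF I m_TA]]) (simp_all add: valid_path_def qvT)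
  have t1: "(pe (3, [al3, be3, be2])) \<in> I" by (rule m_Z3E)
  have t2: "(pmul tT (\<lambda>q. pe (3, [al3, al1]) q - pe (3, [be2, al2, be2]) q) (pe (2, [al2, be2]))) \<in> I" by (rule idl_rmul[OF I m_TE]) (simp add: valid_path_def qvT)
  have c01: "(\<lambda>q. lam ^ 3 * (pmul tT (pe (3, [al3])) (pmul tT (\<lambda>q. pe (1, [al1, al2]) q - pe (1, [be3]) q) (pe (3, [be2])))) q + lam ^ 3 * (pe (3, [al3, be3, be2])) q) \<in> I" by (rule idl_comb[OF I tsT fin_arrT t0 t1])
  have c012: "(\<lambda>q. 1 * (\<lambda>q. lam ^ 3 * (pmul tT (pe (3, [al3])) (pmul tT (\<lambda>q. pe (1, [al1, al2]) q - pe (1, [be3]) q) (pe (3, [be2])))) q + lam ^ 3 * (pe (3, [al3, be3, be2])) q) q + (- (lam ^ 3)) * (pmul tT (\<lambda>q. pe (3, [al3, al1]) q - pe (3, [be2, al2, be2]) q) (pe (2, [al2, be2]))) q) \<in> I" by (rule idl_comb[OF I tsT fin_arrT c01 t2])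
  have e: "ext_hom tT tS (psiS lam) (pe (3, [etS, etS, deS])) = (\<lambda>q. 1 * (\<lambda>q. lam ^ 3 * (pmul tT (pe (3, [al3])) (pmul tT (\<lambda>q. pe (1, [al1, al2]) q - pe (1, [be3]) q) (pe (3, [be2])))) q + lam ^ 3 * (pe (3, [al3, be3, be2])) q) q + (- (lam ^ 3)) * (pmul tT (\<lambda>q. pe (3, [al3, al1]) q - pe (3, [be2, al2, be2]) q) (pe (2, [al2, be2]))) q)"
    apply (simp add: qhom.E_rel[OF qhomS] qhom.E_rel1[OF qhomS] qhom.E_pe[OF qhomS] valid_path_def qvS pmul_lin pe_mul pend_def)
    apply ((rule ext)?)
    apply ((simp add: pe_def field_simps power2_eq_square power3_eq_cube lam)?)
    done
  show ?thesis unfolding e by (rule c012)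
qed

lemma cert_psi_Z3d:
  fixes lam :: "'k::field"
  assumes lam: "lam \<noteq> 0" and I: "ideal I (path_ring UNIV sT tT)" and gens: "relsT (inverse (lam ^ 2)) \<subseteq> I"
  shows "ext_hom tT tS (psiS lam) (pe (3, [deS, gaS, alS])) \<in> I"
proof -
  have m_TD: "(\<lambda>q. pe (3, [be2, be1]) q - pe (3, [al3]) q) \<in> I" using gens by (simp add: relsT_def)
  have m_Z2E: "(pe (3, [al3, al1, be1])) \<in> I" using gens by (simp add: relsT_def)
  have t0: "(pmul tT (\<lambda>q. pe (3, [be2, be1]) q - pe (3, [al3]) q) (pe (1, [al1, be1]))) \<in> I" by (rule idl_rmul[OF I m_TD]) (simp add: valid_path_def qvT)
  have t1: "(pe (3, [al3, al1, be1])) \<in> I" by (rule m_Z2E)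
  have c01: "(\<lambda>q. lam * (pmul tT (\<lambda>q. pe (3, [be2, be1]) q - pe (3, [al3]) q) (pe (1, [al1, be1]))) q + lam * (pe (3, [al3, al1, be1])) q) \<in> I" by (rule idl_comb[OF I tsT fin_arrT t0 t1])
  have e: "ext_hom tT tS (psiS lam) (pe (3, [deS, gaS, alS])) = (\<lambda>q. lam * (pmul tT (\<lambda>q. pe (3, [be2, be1]) q - pe (3, [al3]) q) (pe (1, [al1, be1]))) q + lam * (pe (3, [al3, al1, be1])) q)"
    apply (simp add: qhom.E_rel[OF qhomS] qhom.E_rel1[OF qhomS] qhom.E_pe[OF qhomS] valid_path_def qvS pmul_lin pe_mul pend_def)
    apply ((rule ext)?)
    apply ((simp add: pe_def field_simps power2_eq_square power3_eq_cube lam)?)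
    done
  show ?thesis unfolding e by (rule c01)
qed

lemma diff_carrier:
  fixes x y :: "'v \<times> 'a list \<Rightarrow> 'k::field"
  assumes x: "x \<in> carrier (path_ring Ar s t)" and y: "y \<in> carrier (path_ring Ar s t)"
  shows "(\<lambda>q. x q - y q) \<in> carrier (path_ring Ar s t)"
proof -
  have "{p. x p - y p \<noteq> 0} \<subseteq> {p. x p \<noteq> 0} \<union> {p. y p \<noteq> 0}" by auto
  moreover have "finite ({p. x p \<noteq> 0} \<union> {p. y p \<noteq> 0})" using x y by (simp add: pr_carrier)
  ultimately have "finite {p. x p - y p \<noteq> 0}" by (rule finite_subset)
  moreover have "\<forall>p. x p - y p \<noteq> 0 \<longrightarrow> valid_path Ar s t p"
    using x y unfolding pr_carrier mem_Collect_eq by (metis diff_zero)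
  ultimately show ?thesis by (simp add: pr_carrier)
qed

lemma rel_carrier:
  "valid_path Ar s t P \<Longrightarrow> valid_path Ar s t P' \<Longrightarrow> (\<lambda>q. pe P q - (c::'k::field) * pe P' q) \<in> carrier (path_ring Ar s t)"
  by (intro diff_carrier pe_carrier sc_carrier)
lemma rel1_carrier:
  "valid_path Ar s t P \<Longrightarrow> valid_path Ar s t P' \<Longrightarrow> (\<lambda>q. pe P q - pe P' q :: 'k::field) \<in> carrier (path_ring Ar s t)"
  by (intro diff_carrier pe_carrier)

lemma relsT_carrier: "relsT mu \<subseteq> carrier (path_ring UNIV sT tT)"
  unfolding relsT_def by (simp add: rel_carrier rel1_carrier pe_carrier valid_path_def qvT)
lemma relsS_carrier: "relsS lam \<subseteq> carrier (path_ring UNIV sS tS)"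
  unfolding relsS_def by (simp add: rel_carrier rel1_carrier pe_carrier valid_path_def qvS)


lemma memT_1_al1: fixes mu :: "'k::field" shows "(\<lambda>q. pe (1, [al1, al2]) q - pe (1, [be3]) q) \<in> WSA_rels UNIV sT fT mT (cT mu)"
  unfolding WSA_rels_def by (rule UnI1, rule UnI1, rule CollectI, rule exI[of _ al1], simp add: apath_def qbar_T ap_T gp_T vi_T)

lemma memT_1_al2: fixes mu :: "'k::field" shows "(\<lambda>q. pe (2, [al2, al3]) q - mu * pe (2, [be1, al1, be1]) q) \<in> WSA_rels UNIV sT fT mT (cT mu)"
  unfolding WSA_rels_def by (rule UnI1, rule UnI1, rule CollectI, rule exI[of _ al2], simp add: apath_def qbar_T ap_T gp_T vi_T)

lemma memT_1_al3: fixes mu :: "'k::field" shows "(\<lambda>q. pe (3, [al3, al1]) q - pe (3, [be2, al2, be2]) q) \<in> WSA_rels UNIV sT fT mT (cT mu)"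
  unfolding WSA_rels_def by (rule UnI1, rule UnI1, rule CollectI, rule exI[of _ al3], simp add: apath_def qbar_T ap_T gp_T vi_T)

lemma memT_1_be1: fixes mu :: "'k::field" shows "(\<lambda>q. pe (2, [be1, be3]) q - pe (2, [al2, be2, al2]) q) \<in> WSA_rels UNIV sT fT mT (cT mu)"
  unfolding WSA_rels_def by (rule UnI1, rule UnI1, rule CollectI, rule exI[of _ be1], simp add: apath_def qbar_T ap_T gp_T vi_T)

lemma memT_1_be2: fixes mu :: "'k::field" shows "(\<lambda>q. pe (3, [be2, be1]) q - pe (3, [al3]) q) \<in> WSA_rels UNIV sT fT mT (cT mu)"
  unfolding WSA_rels_def by (rule UnI1, rule UnI1, rule CollectI, rule exI[of _ be2], simp add: apath_def qbar_T ap_T gp_T vi_T)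

lemma memT_1_be3: fixes mu :: "'k::field" shows "(\<lambda>q. pe (1, [be3, be2]) q - mu * pe (1, [al1, be1, al1]) q) \<in> WSA_rels UNIV sT fT mT (cT mu)"
  unfolding WSA_rels_def by (rule UnI1, rule UnI1, rule CollectI, rule exI[of _ be3], simp add: apath_def qbar_T ap_T gp_T vi_T)

lemma memT_2_al2: fixes mu :: "'k::field" shows "pe (2, [al2, al3, be3]) \<in> WSA_rels UNIV sT fT mT (cT mu)"
  unfolding WSA_rels_def by (rule UnI1, rule UnI2, rule CollectI, rule exI[of _ al2], simp add: apath_def qbar_T ap_T gp_T vi_T)

lemma memT_2_al3: fixes mu :: "'k::field" shows "pe (3, [al3, al1, be1]) \<in> WSA_rels UNIV sT fT mT (cT mu)"
  unfolding WSA_rels_def by (rule UnI1, rule UnI2, rule CollectI, rule exI[of _ al3], simp add: apath_def qbar_T ap_T gp_T vi_T)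

lemma memT_2_be1: fixes mu :: "'k::field" shows "pe (2, [be1, be3, al3]) \<in> WSA_rels UNIV sT fT mT (cT mu)"
  unfolding WSA_rels_def by (rule UnI1, rule UnI2, rule CollectI, rule exI[of _ be1], simp add: apath_def qbar_T ap_T gp_T vi_T)

lemma memT_2_be3: fixes mu :: "'k::field" shows "pe (1, [be3, be2, al2]) \<in> WSA_rels UNIV sT fT mT (cT mu)"
  unfolding WSA_rels_def by (rule UnI1, rule UnI2, rule CollectI, rule exI[of _ be3], simp add: apath_def qbar_T ap_T gp_T vi_T)

lemma memT_3_al1: fixes mu :: "'k::field" shows "pe (1, [al1, be1, be3]) \<in> WSA_rels UNIV sT fT mT (cT mu)"
  unfolding WSA_rels_def by (rule UnI2, rule CollectI, rule exI[of _ al1], simp add: apath_def qbar_T ap_T gp_T vi_T)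

lemma memT_3_al3: fixes mu :: "'k::field" shows "pe (3, [al3, be3, be2]) \<in> WSA_rels UNIV sT fT mT (cT mu)"
  unfolding WSA_rels_def by (rule UnI2, rule CollectI, rule exI[of _ al3], simp add: apath_def qbar_T ap_T gp_T vi_T)

lemma memT_3_be2: fixes mu :: "'k::field" shows "pe (3, [be2, al2, al3]) \<in> WSA_rels UNIV sT fT mT (cT mu)"
  unfolding WSA_rels_def by (rule UnI2, rule CollectI, rule exI[of _ be2], simp add: apath_def qbar_T ap_T gp_T vi_T)

lemma memT_3_be3: fixes mu :: "'k::field" shows "pe (1, [be3, al3, al1]) \<in> WSA_rels UNIV sT fT mT (cT mu)"
  unfolding WSA_rels_def by (rule UnI2, rule CollectI, rule exI[of _ be3], simp add: apath_def qbar_T ap_T gp_T vi_T)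

lemma relsT_sup: fixes mu :: "'k::field" shows "relsT mu \<subseteq> WSA_rels UNIV sT fT mT (cT mu)"
  unfolding relsT_def insert_subset by (intro conjI empty_subsetI memT_1_al1 memT_1_al2 memT_1_al3 memT_1_be1 memT_1_be2 memT_1_be3 memT_2_al2 memT_2_al3 memT_2_be1 memT_2_be3 memT_3_al1 memT_3_al3 memT_3_be2 memT_3_be3)

lemma memS_1_alS: fixes lam :: "'k::field" shows "(\<lambda>q. pe (1, [alS, beS]) q - lam * pe (1, [beS, siS, deS]) q) \<in> WSA_rels UNIV sS fS mS (cS lam)"
  unfolding WSA_rels_def by (rule UnI1, rule UnI1, rule CollectI, rule exI[of _ alS], simp add: apath_def qbar_S ap_S gp_S vi_S)

lemma memS_1_beS: fixes lam :: "'k::field" shows "(\<lambda>q. pe (1, [beS, gaS]) q - pe (1, [alS]) q) \<in> WSA_rels UNIV sS fS mS (cS lam)"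
  unfolding WSA_rels_def by (rule UnI1, rule UnI1, rule CollectI, rule exI[of _ beS], simp add: apath_def qbar_S ap_S gp_S vi_S)

lemma memS_1_gaS: fixes lam :: "'k::field" shows "(\<lambda>q. pe (2, [gaS, alS]) q - lam * pe (2, [siS, deS, gaS]) q) \<in> WSA_rels UNIV sS fS mS (cS lam)"
  unfolding WSA_rels_def by (rule UnI1, rule UnI1, rule CollectI, rule exI[of _ gaS], simp add: apath_def qbar_S ap_S gp_S vi_S)

lemma memS_1_siS: fixes lam :: "'k::field" shows "(\<lambda>q. pe (2, [siS, etS]) q - lam * pe (2, [gaS, beS, siS]) q) \<in> WSA_rels UNIV sS fS mS (cS lam)"
  unfolding WSA_rels_def by (rule UnI1, rule UnI1, rule CollectI, rule exI[of _ siS], simp add: apath_def qbar_S ap_S gp_S vi_S)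

lemma memS_1_deS: fixes lam :: "'k::field" shows "(\<lambda>q. pe (3, [deS, siS]) q - pe (3, [etS]) q) \<in> WSA_rels UNIV sS fS mS (cS lam)"
  unfolding WSA_rels_def by (rule UnI1, rule UnI1, rule CollectI, rule exI[of _ deS], simp add: apath_def qbar_S ap_S gp_S vi_S)

lemma memS_1_etS: fixes lam :: "'k::field" shows "(\<lambda>q. pe (3, [etS, deS]) q - lam * pe (3, [deS, gaS, beS]) q) \<in> WSA_rels UNIV sS fS mS (cS lam)"
  unfolding WSA_rels_def by (rule UnI1, rule UnI1, rule CollectI, rule exI[of _ etS], simp add: apath_def qbar_S ap_S gp_S vi_S)

lemma memS_2_alS: fixes lam :: "'k::field" shows "pe (1, [alS, beS, siS]) \<in> WSA_rels UNIV sS fS mS (cS lam)"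
  unfolding WSA_rels_def by (rule UnI1, rule UnI2, rule CollectI, rule exI[of _ alS], simp add: apath_def qbar_S ap_S gp_S vi_S)

lemma memS_2_gaS: fixes lam :: "'k::field" shows "pe (2, [gaS, alS, alS]) \<in> WSA_rels UNIV sS fS mS (cS lam)"
  unfolding WSA_rels_def by (rule UnI1, rule UnI2, rule CollectI, rule exI[of _ gaS], simp add: apath_def qbar_S ap_S gp_S vi_S)

lemma memS_2_siS: fixes lam :: "'k::field" shows "pe (2, [siS, etS, etS]) \<in> WSA_rels UNIV sS fS mS (cS lam)"
  unfolding WSA_rels_def by (rule UnI1, rule UnI2, rule CollectI, rule exI[of _ siS], simp add: apath_def qbar_S ap_S gp_S vi_S)

lemma memS_2_etS: fixes lam :: "'k::field" shows "pe (3, [etS, deS, gaS]) \<in> WSA_rels UNIV sS fS mS (cS lam)"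
  unfolding WSA_rels_def by (rule UnI1, rule UnI2, rule CollectI, rule exI[of _ etS], simp add: apath_def qbar_S ap_S gp_S vi_S)

lemma memS_3_alS: fixes lam :: "'k::field" shows "pe (1, [alS, alS, beS]) \<in> WSA_rels UNIV sS fS mS (cS lam)"
  unfolding WSA_rels_def by (rule UnI2, rule CollectI, rule exI[of _ alS], simp add: apath_def qbar_S ap_S gp_S vi_S)

lemma memS_3_beS: fixes lam :: "'k::field" shows "pe (1, [beS, siS, etS]) \<in> WSA_rels UNIV sS fS mS (cS lam)"
  unfolding WSA_rels_def by (rule UnI2, rule CollectI, rule exI[of _ beS], simp add: apath_def qbar_S ap_S gp_S vi_S)

lemma memS_3_deS: fixes lam :: "'k::field" shows "pe (3, [deS, gaS, alS]) \<in> WSA_rels UNIV sS fS mS (cS lam)"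
  unfolding WSA_rels_def by (rule UnI2, rule CollectI, rule exI[of _ deS], simp add: apath_def qbar_S ap_S gp_S vi_S)

lemma memS_3_etS: fixes lam :: "'k::field" shows "pe (3, [etS, etS, deS]) \<in> WSA_rels UNIV sS fS mS (cS lam)"
  unfolding WSA_rels_def by (rule UnI2, rule CollectI, rule exI[of _ etS], simp add: apath_def qbar_S ap_S gp_S vi_S)

lemma relsS_sup: fixes lam :: "'k::field" shows "relsS lam \<subseteq> WSA_rels UNIV sS fS mS (cS lam)"
  unfolding relsS_def insert_subset by (intro conjI empty_subsetI memS_1_alS memS_1_beS memS_1_gaS memS_1_siS memS_1_deS memS_1_etS memS_2_alS memS_2_gaS memS_2_siS memS_2_etS memS_3_alS memS_3_beS memS_3_deS memS_3_etS)

context qhom begin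
lemma E_sc_pe:
  assumes "valid_path Ar1 s1 t1 P"
  shows "E (\<lambda>q. c * pe P q) = (\<lambda>q. c * F (fst P) (snd P) q)"
  using assms by (simp add: E_scal pe_carrier E_pe)
end

lemma coset_eq:
  fixes Ar :: "'a set" and s t :: "'a \<Rightarrow> 'v" and x y :: "'v \<times> 'a list \<Rightarrow> 'k::field"
  assumes q: "t ` Ar \<subseteq> s ` Ar" "finite Ar" and I: "ideal I (path_ring Ar s t)"
    and x: "x \<in> carrier (path_ring Ar s t)" and y: "y \<in> carrier (path_ring Ar s t)"
    and d: "(\<lambda>q. x q - y q) \<in> I"
  shows "I +>\<^bsub>path_ring Ar s t\<^esub> x = I +>\<^bsub>path_ring Ar s t\<^esub> y"
proof -
  interpret R: ring "path_ring Ar s t :: ('v \<times> 'a list \<Rightarrow> 'k) ring" by (rule path_ring_ring[OF q])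
  interpret I: ideal I "path_ring Ar s t :: ('v \<times> 'a list \<Rightarrow> 'k) ring" by (rule I)
  have nx: "(\<lambda>q. - x q) \<in> carrier (path_ring Ar s t)" using sc_carrier[OF x, of "-1"] by simp
  have "(\<lambda>q. - x q) \<oplus>\<^bsub>path_ring Ar s t\<^esub> x = \<zero>\<^bsub>path_ring Ar s t\<^esub>" by (simp add: pr_add pr_zero)
  then have inv: "\<ominus>\<^bsub>path_ring Ar s t\<^esub> x = (\<lambda>q. - x q)" by (rule R.minus_equality[OF _ x nx])
  have mn: "y \<ominus>\<^bsub>path_ring Ar s t\<^esub> x = (\<lambda>q. y q - x q)" by (simp add: a_minus_def inv pr_add)
  have "(\<lambda>q. (-1) * (x q - y q)) \<in> I" by (rule idl_scal[OF I q d])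
  then have "(\<lambda>q. y q - x q) \<in> I" by simp
  then have "y \<in> I +>\<^bsub>path_ring Ar s t\<^esub> x" using I.a_rcos_module_minus[OF R.ring_axioms x y] mn by simp
  then show ?thesis by (rule I.a_repr_independence'[OF _ x])
qed


lemma pp_al1:
  fixes lam :: "'k::field"
  assumes lam: "lam \<noteq> 0" and I: "ideal I (path_ring UNIV sT tT)" and gens: "relsT (inverse (lam ^ 2)) \<subseteq> I"
  shows "I +>\<^bsub>path_ring UNIV sT tT\<^esub> ext_hom tT tS (psiS lam) (ext_hom tS tT (phiT lam) (pe (Suc 0, [al1]))) = I +>\<^bsub>path_ring UNIV sT tT\<^esub> pe (Suc 0, [al1])"
proof -
  have e: "ext_hom tT tS (psiS lam) (ext_hom tS tT (phiT lam) (pe (Suc 0, [al1]))) = pe (Suc 0, [al1])"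
    apply (simp add: qhom.E_pe[OF qhomT] qhom.E_pe[OF qhomS] qhom.E_sc_pe[OF qhomS] valid_path_def qvS pmul_lin pe_mul pend_def)
    apply ((rule ext)?)
    apply ((simp add: lam field_simps)?)
    done
  show ?thesis unfolding e ..
qed

lemma pp_be1:
  fixes lam :: "'k::field"
  assumes lam: "lam \<noteq> 0" and I: "ideal I (path_ring UNIV sT tT)" and gens: "relsT (inverse (lam ^ 2)) \<subseteq> I"
  shows "I +>\<^bsub>path_ring UNIV sT tT\<^esub> ext_hom tT tS (psiS lam) (ext_hom tS tT (phiT lam) (pe (2, [be1]))) = I +>\<^bsub>path_ring UNIV sT tT\<^esub> pe (2, [be1])"
proof -
  have e: "ext_hom tT tS (psiS lam) (ext_hom tS tT (phiT lam) (pe (2, [be1]))) = pe (2, [be1])"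
    apply (simp add: qhom.E_pe[OF qhomT] qhom.E_pe[OF qhomS] qhom.E_sc_pe[OF qhomS] valid_path_def qvS pmul_lin pe_mul pend_def)
    apply ((rule ext)?)
    apply ((simp add: lam field_simps)?)
    done
  show ?thesis unfolding e ..
qed

lemma pp_al2:
  fixes lam :: "'k::field"
  assumes lam: "lam \<noteq> 0" and I: "ideal I (path_ring UNIV sT tT)" and gens: "relsT (inverse (lam ^ 2)) \<subseteq> I"
  shows "I +>\<^bsub>path_ring UNIV sT tT\<^esub> ext_hom tT tS (psiS lam) (ext_hom tS tT (phiT lam) (pe (2, [al2]))) = I +>\<^bsub>path_ring UNIV sT tT\<^esub> pe (2, [al2])"
proof -
  have e: "ext_hom tT tS (psiS lam) (ext_hom tS tT (phiT lam) (pe (2, [al2]))) = pe (2, [al2])"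
    apply (simp add: qhom.E_pe[OF qhomT] qhom.E_pe[OF qhomS] qhom.E_sc_pe[OF qhomS] valid_path_def qvS pmul_lin pe_mul pend_def)
    apply ((rule ext)?)
    apply ((simp add: lam field_simps)?)
    done
  show ?thesis unfolding e ..
qed

lemma pp_be2:
  fixes lam :: "'k::field"
  assumes lam: "lam \<noteq> 0" and I: "ideal I (path_ring UNIV sT tT)" and gens: "relsT (inverse (lam ^ 2)) \<subseteq> I"
  shows "I +>\<^bsub>path_ring UNIV sT tT\<^esub> ext_hom tT tS (psiS lam) (ext_hom tS tT (phiT lam) (pe (3, [be2]))) = I +>\<^bsub>path_ring UNIV sT tT\<^esub> pe (3, [be2])"
proof -
  have e: "ext_hom tT tS (psiS lam) (ext_hom tS tT (phiT lam) (pe (3, [be2]))) = pe (3, [be2])"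
    apply (simp add: qhom.E_pe[OF qhomT] qhom.E_pe[OF qhomS] qhom.E_sc_pe[OF qhomS] valid_path_def qvS pmul_lin pe_mul pend_def)
    apply ((rule ext)?)
    apply ((simp add: lam field_simps)?)
    done
  show ?thesis unfolding e ..
qed

lemma pp_al3:
  fixes lam :: "'k::field"
  assumes lam: "lam \<noteq> 0" and I: "ideal I (path_ring UNIV sT tT)" and gens: "relsT (inverse (lam ^ 2)) \<subseteq> I"
  shows "I +>\<^bsub>path_ring UNIV sT tT\<^esub> ext_hom tT tS (psiS lam) (ext_hom tS tT (phiT lam) (pe (3, [al3]))) = I +>\<^bsub>path_ring UNIV sT tT\<^esub> pe (3, [al3])"
proof -
  have e: "ext_hom tT tS (psiS lam) (ext_hom tS tT (phiT lam) (pe (3, [al3]))) = pe (3, [be2, be1])"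
    apply (simp add: qhom.E_pe[OF qhomT] qhom.E_pe[OF qhomS] qhom.E_sc_pe[OF qhomS] valid_path_def qvS pmul_lin pe_mul pend_def)
    apply ((rule ext)?)
    apply ((simp add: lam field_simps)?)
    done
  have d: "(\<lambda>q. pe (3, [be2, be1]) q - pe (3, [al3]) q) \<in> I" using gens by (simp add: relsT_def)
  show ?thesis unfolding e by (rule coset_eq[OF tsT fin_arrT I _ _ d]) (simp_all add: pe_carrier valid_path_def qvT)
qed

lemma pp_be3:
  fixes lam :: "'k::field"
  assumes lam: "lam \<noteq> 0" and I: "ideal I (path_ring UNIV sT tT)" and gens: "relsT (inverse (lam ^ 2)) \<subseteq> I"
  shows "I +>\<^bsub>path_ring UNIV sT tT\<^esub> ext_hom tT tS (psiS lam) (ext_hom tS tT (phiT lam) (pe (Suc 0, [be3]))) = I +>\<^bsub>path_ring UNIV sT tT\<^esub> pe (Suc 0, [be3])"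
proof -
  have e: "ext_hom tT tS (psiS lam) (ext_hom tS tT (phiT lam) (pe (Suc 0, [be3]))) = pe (Suc 0, [al1, al2])"
    apply (simp add: qhom.E_pe[OF qhomT] qhom.E_pe[OF qhomS] qhom.E_sc_pe[OF qhomS] valid_path_def qvS pmul_lin pe_mul pend_def)
    apply ((rule ext)?)
    apply ((simp add: lam field_simps)?)
    done
  have d: "(\<lambda>q. pe (Suc 0, [al1, al2]) q - pe (Suc 0, [be3]) q) \<in> I" using gens by (simp add: relsT_def)
  show ?thesis unfolding e by (rule coset_eq[OF tsT fin_arrT I _ _ d]) (simp_all add: pe_carrier valid_path_def qvT)
qed

lemma qq_beS:
  fixes lam :: "'k::field"
  assumes lam: "lam \<noteq> 0" and J: "ideal J (path_ring UNIV sS tS)" and gens: "relsS lam \<subseteq> J"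
  shows "J +>\<^bsub>path_ring UNIV sS tS\<^esub> ext_hom tS tT (phiT lam) (ext_hom tT tS (psiS lam) (pe (Suc 0, [beS]))) = J +>\<^bsub>path_ring UNIV sS tS\<^esub> pe (Suc 0, [beS])"
proof -
  have e: "ext_hom tS tT (phiT lam) (ext_hom tT tS (psiS lam) (pe (Suc 0, [beS]))) = pe (Suc 0, [beS])"
    apply (simp add: qhom.E_pe[OF qhomS] qhom.E_pe[OF qhomT] qhom.E_sc_pe[OF qhomT] valid_path_def qvT pmul_lin pe_mul pend_def)
    apply ((rule ext)?)
    apply ((simp add: lam field_simps)?)
    done
  show ?thesis unfolding e ..
qed

lemma qq_gaS:
  fixes lam :: "'k::field"
  assumes lam: "lam \<noteq> 0" and J: "ideal J (path_ring UNIV sS tS)" and gens: "relsS lam \<subseteq> J"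
  shows "J +>\<^bsub>path_ring UNIV sS tS\<^esub> ext_hom tS tT (phiT lam) (ext_hom tT tS (psiS lam) (pe (2, [gaS]))) = J +>\<^bsub>path_ring UNIV sS tS\<^esub> pe (2, [gaS])"
proof -
  have e: "ext_hom tS tT (phiT lam) (ext_hom tT tS (psiS lam) (pe (2, [gaS]))) = pe (2, [gaS])"
    apply (simp add: qhom.E_pe[OF qhomS] qhom.E_pe[OF qhomT] qhom.E_sc_pe[OF qhomT] valid_path_def qvT pmul_lin pe_mul pend_def)
    apply ((rule ext)?)
    apply ((simp add: lam field_simps)?)
    done
  show ?thesis unfolding e ..
qed

lemma qq_siS:
  fixes lam :: "'k::field"
  assumes lam: "lam \<noteq> 0" and J: "ideal J (path_ring UNIV sS tS)" and gens: "relsS lam \<subseteq> J"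
  shows "J +>\<^bsub>path_ring UNIV sS tS\<^esub> ext_hom tS tT (phiT lam) (ext_hom tT tS (psiS lam) (pe (2, [siS]))) = J +>\<^bsub>path_ring UNIV sS tS\<^esub> pe (2, [siS])"
proof -
  have e: "ext_hom tS tT (phiT lam) (ext_hom tT tS (psiS lam) (pe (2, [siS]))) = pe (2, [siS])"
    apply (simp add: qhom.E_pe[OF qhomS] qhom.E_pe[OF qhomT] qhom.E_sc_pe[OF qhomT] valid_path_def qvT pmul_lin pe_mul pend_def)
    apply ((rule ext)?)
    apply ((simp add: lam field_simps)?)
    done
  show ?thesis unfolding e ..
qed

lemma qq_deS:
  fixes lam :: "'k::field"
  assumes lam: "lam \<noteq> 0" and J: "ideal J (path_ring UNIV sS tS)" and gens: "relsS lam \<subseteq> J"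
  shows "J +>\<^bsub>path_ring UNIV sS tS\<^esub> ext_hom tS tT (phiT lam) (ext_hom tT tS (psiS lam) (pe (3, [deS]))) = J +>\<^bsub>path_ring UNIV sS tS\<^esub> pe (3, [deS])"
proof -
  have e: "ext_hom tS tT (phiT lam) (ext_hom tT tS (psiS lam) (pe (3, [deS]))) = pe (3, [deS])"
    apply (simp add: qhom.E_pe[OF qhomS] qhom.E_pe[OF qhomT] qhom.E_sc_pe[OF qhomT] valid_path_def qvT pmul_lin pe_mul pend_def)
    apply ((rule ext)?)
    apply ((simp add: lam field_simps)?)
    done
  show ?thesis unfolding e ..
qed

lemma qq_alS:
  fixes lam :: "'k::field"
  assumes lam: "lam \<noteq> 0" and J: "ideal J (path_ring UNIV sS tS)" and gens: "relsS lam \<subseteq> J"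
  shows "J +>\<^bsub>path_ring UNIV sS tS\<^esub> ext_hom tS tT (phiT lam) (ext_hom tT tS (psiS lam) (pe (Suc 0, [alS]))) = J +>\<^bsub>path_ring UNIV sS tS\<^esub> pe (Suc 0, [alS])"
proof -
  have e: "ext_hom tS tT (phiT lam) (ext_hom tT tS (psiS lam) (pe (Suc 0, [alS]))) = pe (Suc 0, [beS, gaS])"
    apply (simp add: qhom.E_pe[OF qhomS] qhom.E_pe[OF qhomT] qhom.E_sc_pe[OF qhomT] valid_path_def qvT pmul_lin pe_mul pend_def)
    apply ((rule ext)?)
    apply ((simp add: lam field_simps)?)
    done
  have d: "(\<lambda>q. pe (Suc 0, [beS, gaS]) q - pe (Suc 0, [alS]) q) \<in> J" using gens by (simp add: relsS_def)
  show ?thesis unfolding e by (rule coset_eq[OF tsS fin_arrS J _ _ d]) (simp_all add: pe_carrier valid_path_def qvS)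
qed

lemma qq_etS:
  fixes lam :: "'k::field"
  assumes lam: "lam \<noteq> 0" and J: "ideal J (path_ring UNIV sS tS)" and gens: "relsS lam \<subseteq> J"
  shows "J +>\<^bsub>path_ring UNIV sS tS\<^esub> ext_hom tS tT (phiT lam) (ext_hom tT tS (psiS lam) (pe (3, [etS]))) = J +>\<^bsub>path_ring UNIV sS tS\<^esub> pe (3, [etS])"
proof -
  have e: "ext_hom tS tT (phiT lam) (ext_hom tT tS (psiS lam) (pe (3, [etS]))) = pe (3, [deS, siS])"
    apply (simp add: qhom.E_pe[OF qhomS] qhom.E_pe[OF qhomT] qhom.E_sc_pe[OF qhomT] valid_path_def qvT pmul_lin pe_mul pend_def)
    apply ((rule ext)?)
    apply ((simp add: lam field_simps)?)
    done
  have d: "(\<lambda>q. pe (3, [deS, siS]) q - pe (3, [etS]) q) \<in> J" using gens by (simp add: relsS_def)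
  show ?thesis unfolding e by (rule coset_eq[OF tsS fin_arrS J _ _ d]) (simp_all add: pe_carrier valid_path_def qvS)
qed

lemma pp_arrow:
  fixes lam :: "'k::field"
  assumes lam: "lam \<noteq> 0" and I: "ideal I (path_ring UNIV sT tT)" and gens: "relsT (inverse (lam ^ 2)) \<subseteq> I"
  shows "I +>\<^bsub>path_ring UNIV sT tT\<^esub> ext_hom tT tS (psiS lam) (ext_hom tS tT (phiT lam) (pe (sT a, [a]))) = I +>\<^bsub>path_ring UNIV sT tT\<^esub> pe (sT a, [a])"
  by (cases a) (simp_all add: pp_al1[OF lam I gens] pp_al2[OF lam I gens] pp_al3[OF lam I gens] pp_be1[OF lam I gens] pp_be2[OF lam I gens] pp_be3[OF lam I gens])

lemma qq_arrow:
  fixes lam :: "'k::field"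
  assumes lam: "lam \<noteq> 0" and J: "ideal J (path_ring UNIV sS tS)" and gens: "relsS lam \<subseteq> J"
  shows "J +>\<^bsub>path_ring UNIV sS tS\<^esub> ext_hom tS tT (phiT lam) (ext_hom tT tS (psiS lam) (pe (sS a, [a]))) = J +>\<^bsub>path_ring UNIV sS tS\<^esub> pe (sS a, [a])"
  by (cases a) (simp_all add: qq_alS[OF lam J gens] qq_beS[OF lam J gens] qq_gaS[OF lam J gens] qq_siS[OF lam J gens] qq_deS[OF lam J gens] qq_etS[OF lam J gens])

theorem lemma3p5:
  fixes lam :: "'k::field"
  assumes "alg_closed TYPE('k)"
    and "lam \<noteq> 0"
  shows "kalg_quot_iso
           (path_ring UNIV sT tT) (WSA_ideal UNIV sT tT fT mT (cT (inverse (lam ^ 2))))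
           (path_ring UNIV sS tS) (WSA_ideal UNIV sS tS fS mS (cS lam))"
proof -
  note lam = assms(2)
  let ?RT = "path_ring UNIV sT tT :: (nat \<times> arrT list \<Rightarrow> 'k) ring"
  let ?RS = "path_ring UNIV sS tS :: (nat \<times> arrS list \<Rightarrow> 'k) ring"
  define GR where "GR = (WSA_rels UNIV sT fT mT (cT (inverse (lam ^ 2))) :: (nat \<times> arrT list \<Rightarrow> 'k) set)"
  define GS where "GS = (WSA_rels UNIV sS fS mS (cS lam) :: (nat \<times> arrS list \<Rightarrow> 'k) set)"
  define \<Phi> where "\<Phi> = ext_hom tS tT (phiT lam)"
  define \<Psi> where "\<Psi> = ext_hom tT tS (psiS lam)"
  define I where "I = genideal ?RT GR"
  define J where "J = genideal ?RS GS"
  have RTr: "ring ?RT" by (rule path_ring_ring[OF tsT fin_arrT])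
  have RSr: "ring ?RS" by (rule path_ring_ring[OF tsS fin_arrS])
  have GRc: "GR \<subseteq> carrier ?RT"
    unfolding GR_def using relsT_sub relsT_carrier by blast
  have GSc: "GS \<subseteq> carrier ?RS"
    unfolding GS_def using relsS_sub relsS_carrier by blast
  have Phih: "\<Phi> \<in> ring_hom ?RT ?RS" unfolding \<Phi>_def by (rule qhom.E_hom[OF qhomT])
  have Psih: "\<Psi> \<in> ring_hom ?RS ?RT" unfolding \<Psi>_def by (rule qhom.E_hom[OF qhomS])
  have IR: "ideal I ?RT" unfolding I_def by (rule ring.genideal_ideal[OF RTr GRc])
  have JS: "ideal J ?RS" unfolding J_def by (rule ring.genideal_ideal[OF RSr GSc])
  have relsT_I: "relsT (inverse (lam ^ 2)) \<subseteq> I"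
    using relsT_sup ring.genideal_self[OF RTr GRc] unfolding I_def GR_def by blast
  have relsS_J: "relsS lam \<subseteq> J"
    using relsS_sup ring.genideal_self[OF RSr GSc] unfolding J_def GS_def by blast
  have PhiG: "\<Phi> g \<in> J" if g: "g \<in> GR" for g
  proof -
    have "g \<in> relsT (inverse (lam ^ 2))" using g relsT_sub unfolding GR_def by blast
    then show ?thesis unfolding relsT_def \<Phi>_def
      apply (elim insertE)
      apply (hypsubst, rule cert_phi_TA[OF lam JS relsS_J] cert_phi_TC[OF lam JS relsS_J]
         cert_phi_TE[OF lam JS relsS_J] cert_phi_TB[OF lam JS relsS_J] cert_phi_TF[OF lam JS relsS_J]
         cert_phi_TD[OF lam JS relsS_J] cert_phi_Z2C[OF lam JS relsS_J] cert_phi_Z2E[OF lam JS relsS_J]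
         cert_phi_Z2B[OF lam JS relsS_J] cert_phi_Z2F[OF lam JS relsS_J] cert_phi_Z3A[OF lam JS relsS_J]
         cert_phi_Z3E[OF lam JS relsS_J] cert_phi_Z3D[OF lam JS relsS_J] cert_phi_Z3F[OF lam JS relsS_J])+
      apply simp
      done
  qed
  have PsiG: "\<Psi> g \<in> I" if g: "g \<in> GS" for g
  proof -
    have "g \<in> relsS lam" using g relsS_sub unfolding GS_def by blast
    then show ?thesis unfolding relsS_def \<Psi>_def
      apply (elim insertE)
      apply (hypsubst, rule cert_psi_Sa[OF lam IR relsT_I] cert_psi_Sb[OF lam IR relsT_I]
         cert_psi_Sg[OF lam IR relsT_I] cert_psi_Se[OF lam IR relsT_I] cert_psi_Sd[OF lam IR relsT_I]
         cert_psi_Ss[OF lam IR relsT_I] cert_psi_Z2a[OF lam IR relsT_I] cert_psi_Z2g[OF lam IR relsT_I]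
         cert_psi_Z2e[OF lam IR relsT_I] cert_psi_Z2s[OF lam IR relsT_I] cert_psi_Z3a[OF lam IR relsT_I]
         cert_psi_Z3b[OF lam IR relsT_I] cert_psi_Z3e[OF lam IR relsT_I] cert_psi_Z3d[OF lam IR relsT_I])+
      apply simp
      done
  qed
  have h1: "(\<lambda>x. I +>\<^bsub>?RT\<^esub> \<Psi> (\<Phi> x)) \<in> ring_hom ?RT (?RT Quot I)"
    using ring_hom_trans[OF ring_hom_trans[OF Phih Psih] ideal.rcos_ring_hom[OF IR]] by (simp add: comp_def)
  have h2: "(\<lambda>x. I +>\<^bsub>?RT\<^esub> x) \<in> ring_hom ?RT (?RT Quot I)"
    using ideal.rcos_ring_hom[OF IR] .
  have k1: "(\<lambda>x. J +>\<^bsub>?RS\<^esub> \<Phi> (\<Psi> x)) \<in> ring_hom ?RS (?RS Quot J)"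
    using ring_hom_trans[OF ring_hom_trans[OF Psih Phih] ideal.rcos_ring_hom[OF JS]] by (simp add: comp_def)
  have k2: "(\<lambda>x. J +>\<^bsub>?RS\<^esub> x) \<in> ring_hom ?RS (?RS Quot J)"
    using ideal.rcos_ring_hom[OF JS] .
  have PP: "I +>\<^bsub>?RT\<^esub> \<Psi> (\<Phi> x) = I +>\<^bsub>?RT\<^esub> x" if x: "x \<in> carrier ?RT" for x
  proof (rule gen_induct[OF tsT fin_arrT, where P="\<lambda>x. I +>\<^bsub>?RT\<^esub> \<Psi> (\<Phi> x) = I +>\<^bsub>?RT\<^esub> x", OF _ _ _ _ _ x])
    fix y z assume y: "y \<in> carrier ?RT" and z: "z \<in> carrier ?RT"
      and Py: "I +>\<^bsub>?RT\<^esub> \<Psi> (\<Phi> y) = I +>\<^bsub>?RT\<^esub> y" and Pz: "I +>\<^bsub>?RT\<^esub> \<Psi> (\<Phi> z) = I +>\<^bsub>?RT\<^esub> z"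
    have eq: "(\<lambda>p. y p + z p) = y \<oplus>\<^bsub>?RT\<^esub> z" by (simp add: pr_add)
    show "I +>\<^bsub>?RT\<^esub> \<Psi> (\<Phi> (\<lambda>p. y p + z p)) = I +>\<^bsub>?RT\<^esub> (\<lambda>p. y p + z p)"
      unfolding eq using ring_hom_add[OF h1 y z] ring_hom_add[OF h2 y z] Py Pz by simp
  next
    fix y z assume y: "y \<in> carrier ?RT" and z: "z \<in> carrier ?RT"
      and Py: "I +>\<^bsub>?RT\<^esub> \<Psi> (\<Phi> y) = I +>\<^bsub>?RT\<^esub> y" and Pz: "I +>\<^bsub>?RT\<^esub> \<Psi> (\<Phi> z) = I +>\<^bsub>?RT\<^esub> z"
    have eq: "pmul tT y z = y \<otimes>\<^bsub>?RT\<^esub> z" by (simp add: pr_mult)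
    show "I +>\<^bsub>?RT\<^esub> \<Psi> (\<Phi> (pmul tT y z)) = I +>\<^bsub>?RT\<^esub> pmul tT y z"
      unfolding eq using ring_hom_mult[OF h1 y z] ring_hom_mult[OF h2 y z] Py Pz by simp
  next
    fix c :: 'k
    show "I +>\<^bsub>?RT\<^esub> \<Psi> (\<Phi> (\<lambda>p. c * (if snd p = [] \<and> fst p \<in> qverts UNIV sT then 1 else 0))) =
          I +>\<^bsub>?RT\<^esub> (\<lambda>p. c * (if snd p = [] \<and> fst p \<in> qverts UNIV sT then 1 else 0))"
      unfolding \<Phi>_def \<Psi>_def qhom.E_one_scal[OF qhomT] qhom.E_one_scal[OF qhomS] ..
  next
    fix v assume "v \<in> qverts UNIV sT"
    show "I +>\<^bsub>?RT\<^esub> \<Psi> (\<Phi> (pe (v, []))) = I +>\<^bsub>?RT\<^esub> pe (v, [])"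
      unfolding \<Phi>_def \<Psi>_def by (simp add: qhom.E_pe[OF qhomT] qhom.E_pe[OF qhomS])
  next
    fix a :: arrT
    show "I +>\<^bsub>?RT\<^esub> \<Psi> (\<Phi> (pe (sT a, [a]))) = I +>\<^bsub>?RT\<^esub> pe (sT a, [a])"
      unfolding \<Phi>_def \<Psi>_def by (rule pp_arrow[OF lam IR relsT_I])
  qed
  have QQ: "J +>\<^bsub>?RS\<^esub> \<Phi> (\<Psi> x) = J +>\<^bsub>?RS\<^esub> x" if x: "x \<in> carrier ?RS" for x
  proof (rule gen_induct[OF tsS fin_arrS, where P="\<lambda>x. J +>\<^bsub>?RS\<^esub> \<Phi> (\<Psi> x) = J +>\<^bsub>?RS\<^esub> x", OF _ _ _ _ _ x])
    fix y z assume y: "y \<in> carrier ?RS" and z: "z \<in> carrier ?RS"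
      and Py: "J +>\<^bsub>?RS\<^esub> \<Phi> (\<Psi> y) = J +>\<^bsub>?RS\<^esub> y" and Pz: "J +>\<^bsub>?RS\<^esub> \<Phi> (\<Psi> z) = J +>\<^bsub>?RS\<^esub> z"
    have eq: "(\<lambda>p. y p + z p) = y \<oplus>\<^bsub>?RS\<^esub> z" by (simp add: pr_add)
    show "J +>\<^bsub>?RS\<^esub> \<Phi> (\<Psi> (\<lambda>p. y p + z p)) = J +>\<^bsub>?RS\<^esub> (\<lambda>p. y p + z p)"
      unfolding eq using ring_hom_add[OF k1 y z] ring_hom_add[OF k2 y z] Py Pz by simp
  next
    fix y z assume y: "y \<in> carrier ?RS" and z: "z \<in> carrier ?RS"
      and Py: "J +>\<^bsub>?RS\<^esub> \<Phi> (\<Psi> y) = J +>\<^bsub>?RS\<^esub> y" and Pz: "J +>\<^bsub>?RS\<^esub> \<Phi> (\<Psi> z) = J +>\<^bsub>?RS\<^esub> z"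
    have eq: "pmul tS y z = y \<otimes>\<^bsub>?RS\<^esub> z" by (simp add: pr_mult)
    show "J +>\<^bsub>?RS\<^esub> \<Phi> (\<Psi> (pmul tS y z)) = J +>\<^bsub>?RS\<^esub> pmul tS y z"
      unfolding eq using ring_hom_mult[OF k1 y z] ring_hom_mult[OF k2 y z] Py Pz by simp
  next
    fix c :: 'k
    show "J +>\<^bsub>?RS\<^esub> \<Phi> (\<Psi> (\<lambda>p. c * (if snd p = [] \<and> fst p \<in> qverts UNIV sS then 1 else 0))) =
          J +>\<^bsub>?RS\<^esub> (\<lambda>p. c * (if snd p = [] \<and> fst p \<in> qverts UNIV sS then 1 else 0))"
      unfolding \<Phi>_def \<Psi>_def qhom.E_one_scal[OF qhomS] qhom.E_one_scal[OF qhomT] ..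
  next
    fix v assume "v \<in> qverts UNIV sS"
    show "J +>\<^bsub>?RS\<^esub> \<Phi> (\<Psi> (pe (v, []))) = J +>\<^bsub>?RS\<^esub> pe (v, [])"
      unfolding \<Phi>_def \<Psi>_def by (simp add: qhom.E_pe[OF qhomT] qhom.E_pe[OF qhomS])
  next
    fix a :: arrS
    show "J +>\<^bsub>?RS\<^esub> \<Phi> (\<Psi> (pe (sS a, [a]))) = J +>\<^bsub>?RS\<^esub> pe (sS a, [a])"
      unfolding \<Phi>_def \<Psi>_def by (rule qq_arrow[OF lam JS relsS_J])
  qed
  have ex: "\<exists>h\<in>ring_iso (?RT Quot I) (?RS Quot J). \<forall>x\<in>carrier ?RT. h (I +>\<^bsub>?RT\<^esub> x) = J +>\<^bsub>?RS\<^esub> \<Phi> x"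
    unfolding I_def J_def
  proof (rule quot_iso_abstract[OF RTr RSr GRc GSc Phih Psih])
    fix g assume "g \<in> GR" then show "\<Phi> g \<in> genideal ?RS GS" using PhiG unfolding J_def by blast
  next
    fix g assume "g \<in> GS" then show "\<Psi> g \<in> genideal ?RT GR" using PsiG unfolding I_def by blast
  next
    fix x assume "x \<in> carrier ?RT" then show "genideal ?RT GR +>\<^bsub>?RT\<^esub> \<Psi> (\<Phi> x) = genideal ?RT GR +>\<^bsub>?RT\<^esub> x"
      using PP unfolding I_def by blast
  next
    fix y assume "y \<in> carrier ?RS" then show "genideal ?RS GS +>\<^bsub>?RS\<^esub> \<Phi> (\<Psi> y) = genideal ?RS GS +>\<^bsub>?RS\<^esub> y"
      using QQ unfolding J_def by blast
  qed
  then obtain h where h: "h \<in> ring_iso (?RT Quot I) (?RS Quot J)"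
      and hv: "\<And>x. x \<in> carrier ?RT \<Longrightarrow> h (I +>\<^bsub>?RT\<^esub> x) = J +>\<^bsub>?RS\<^esub> \<Phi> x"
    by blast
  have sc: "h (I +>\<^bsub>?RT\<^esub> (\<lambda>p. c * one ?RT p)) = J +>\<^bsub>?RS\<^esub> (\<lambda>q. c * one ?RS q)" for c :: 'k
  proof -
    have "(\<lambda>p. c * one ?RT p) \<in> carrier ?RT"
      unfolding pr_one by (rule scal_one_carrier[OF fin_arrT])
    then have "h (I +>\<^bsub>?RT\<^esub> (\<lambda>p. c * one ?RT p)) = J +>\<^bsub>?RS\<^esub> \<Phi> (\<lambda>p. c * one ?RT p)" by (rule hv)
    also have "\<Phi> (\<lambda>p. c * one ?RT p) = (\<lambda>q. c * one ?RS q)"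
      unfolding \<Phi>_def pr_one by (rule qhom.E_one_scal[OF qhomT])
    finally show ?thesis .
  qed
  show ?thesis
    unfolding kalg_quot_iso_def WSA_ideal_def
    using h sc unfolding I_def J_def GR_def GS_def by blast
qed

end
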